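(* Assume in addition $\rho_0\in L^1([0,\infty))$. Then for all $t>0$ the total mass is conserved: $$\int_{[0,\infty)}\rho(dx,t)=\int_0^\infty\rho_0(x)\,dx+\int_0^t\rho_b(\eta)u_b(\eta)\,d\eta,$$ and for the total momentum $$\int_{[0,\infty)}u(x,t)\,\rho(dx,t)\ \begin{cases}=\int_0^\infty\rho_0u_0\,dx+\int_0^t\rho_b u_b^2\,d\eta,& \text{if } F(0,t)\ge G(0,t),\\ \ge\int_0^\infty\rho_0u_0\,dx-\int_0^t\rho_bu_b^2\,d\eta,&\text{if } F(0,t)<G(0,t).\end{cases}$$
   Context: Standing assumptions: $u_0,u_b:[0,\infty)\to\mathbb{R}$ bounded measurable with $u_b>0$; $\rho_0,\rho_b:[0,\infty)\to(0,\infty)$ positive locally bounded measurable. For $x,t,y,\tau\ge0$: $F(y,x,t)=\int_0^y[tu_0(\eta)+\eta-x]\rho_0(\eta)\,d\eta$, $G(\tau,x,t)=\int_0^\tau[x-u_b(\eta)(t-\eta)]\rho_b(\eta)u_b(\eta)\,d\eta$, $F(x,t)=\min_{y\ge0}F(y,x,t)$, $G(x,t)=\min_{\tau\ge0}G(\tau,x,t)$ (minima attained); $y_*\le y^*$ the smallest/largest minimizers of $F(\cdot,x,t)$, $\tau_*\le\tau^*$ those of $G(\cdot,x,t)$. Definition of $u$: for $x,t>0$: (a) if $F(x,t)<G(x,t)$, $y_*=y^*$: $u=\frac{x-y_*}{t}$; (b) if $F<G$, $y_*<y^*$: $u=\frac{\int_{y_*}^{y^*}\rho_0u_0}{\int_{y_*}^{y^*}\rho_0}$;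 (c) if $F>G$, $\tau_*=\tau^*$: $u=\frac{x}{t-\tau_*}$; (d) if $F>G$, $\tau_*<\tau^*$: $u=\frac{\int_{\tau_*}^{\tau^*}\rho_bu_b^2}{\int_{\tau_*}^{\tau^*}\rho_bu_b}$; (e) if $F=G$ and ($y^*\ne0$ or $\tau^*\ne0$): $u=\frac{\int_0^{\tau^*}\rho_bu_b^2+\int_0^{y^*}\rho_0u_0}{\int_0^{\tau^*}\rho_bu_b+\int_0^{y^*}\rho_0}$; (f) if $F=G$, $y^*=\tau^*=0$: $u=x/t$. For $x=0$: $u(0,t)=u_b(t)$ if $F(0,t)>G(0,t)$, $0$ if $F(0,t)<G(0,t)$, formula (e) with $x=0$ if $F(0,t)=G(0,t)$. Definition of $m$ ($t>0,x\ge0$): $m=\int_0^{y_*(x,t)}\rho_0$ if $x>0$ and $F(x,t)\le G(x,t)$; $m=-\int_0^{\tau_*(x,t)}\rho_bu_b$ if $F(x,t)>G(x,t)$ or $x=0$. The measure $\rho(\cdot,t)$ on $[0,\infty)$: on $(0,\infty)$ it is the Lebesgue–Stieltjes measure $m(dx,t)$ of $x\mapsto m(x,t)$ (i.e. $\partial_xm$); at $x=0$ it has an atom $\big(\lim_{x\searrow0}m(x,t)-m(0,t)\big)\delta_0$ if $F(0,t)\le G(0,t)$, and no atom if $F(0,t)>G(0,t)$. Thus $\int_{[0,\infty)}u\,\rho(dx,t)=\int_{(0,\infty)}u\,m(dx,t)$ plus $u(0,t)\big(m(0+,t)-m(0,t)\big)$ when $F(0,t)\le G(0,t)$. *)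

theory Defs
  imports "HOL-Analysis.Analysis"
begin

text \<open>Parameters: u0, ub (velocities), r0, rb (densities), all real => real,
  only their values on [0,inf) matter.\<close>

definition Fy :: "(real \<Rightarrow> real) \<Rightarrow> (real \<Rightarrow> real) \<Rightarrow> real \<Rightarrow> real \<Rightarrow> real \<Rightarrow> real" where
  "Fy u0 r0 y x t = (LINT \<eta>:{0..y}|lborel. (t * u0 \<eta> + \<eta> - x) * r0 \<eta>)"

definition Gy :: "(real \<Rightarrow> real) \<Rightarrow> (real \<Rightarrow> real) \<Rightarrow> real \<Rightarrow> real \<Rightarrow> real \<Rightarrow> real" where
  "Gy ub rb \<tau> x t = (LINT \<eta>:{0..\<tau>}|lborel. (x - ub \<eta> * (t - \<eta>)) * rb \<eta> * ub \<eta>)"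

text \<open>F(x,t) = min over y >= 0, G(x,t) = min over tau >= 0 (the minima are attained).\<close>
definition Fm :: "(real \<Rightarrow> real) \<Rightarrow> (real \<Rightarrow> real) \<Rightarrow> real \<Rightarrow> real \<Rightarrow> real" where
  "Fm u0 r0 x t = Inf ((\<lambda>y. Fy u0 r0 y x t) ` {0..})"

definition Gm :: "(real \<Rightarrow> real) \<Rightarrow> (real \<Rightarrow> real) \<Rightarrow> real \<Rightarrow> real \<Rightarrow> real" where
  "Gm ub rb x t = Inf ((\<lambda>\<tau>. Gy ub rb \<tau> x t) ` {0..})"

definition ylo :: "(real \<Rightarrow> real) \<Rightarrow> (real \<Rightarrow> real) \<Rightarrow> real \<Rightarrow> real \<Rightarrow> real" where
  "ylo u0 r0 x t = Inf {y. 0 \<le> y \<and> Fy u0 r0 y x t = Fm u0 r0 x t}"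

definition yhi :: "(real \<Rightarrow> real) \<Rightarrow> (real \<Rightarrow> real) \<Rightarrow> real \<Rightarrow> real \<Rightarrow> real" where
  "yhi u0 r0 x t = Sup {y. 0 \<le> y \<and> Fy u0 r0 y x t = Fm u0 r0 x t}"

definition tlo :: "(real \<Rightarrow> real) \<Rightarrow> (real \<Rightarrow> real) \<Rightarrow> real \<Rightarrow> real \<Rightarrow> real" where
  "tlo ub rb x t = Inf {\<tau>. 0 \<le> \<tau> \<and> Gy ub rb \<tau> x t = Gm ub rb x t}"

definition thi :: "(real \<Rightarrow> real) \<Rightarrow> (real \<Rightarrow> real) \<Rightarrow> real \<Rightarrow> real \<Rightarrow> real" where
  "thi ub rb x t = Sup {\<tau>. 0 \<le> \<tau> \<and> Gy ub rb \<tau> x t = Gm ub rb x t}"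

definition ue :: "(real \<Rightarrow> real) \<Rightarrow> (real \<Rightarrow> real) \<Rightarrow> (real \<Rightarrow> real) \<Rightarrow> (real \<Rightarrow> real)
    \<Rightarrow> real \<Rightarrow> real \<Rightarrow> real" where
  "ue u0 ub r0 rb x t =
     ((LINT \<eta>:{0..thi ub rb x t}|lborel. rb \<eta> * (ub \<eta>)\<^sup>2) + (LINT \<eta>:{0..yhi u0 r0 x t}|lborel. r0 \<eta> * u0 \<eta>))
     / ((LINT \<eta>:{0..thi ub rb x t}|lborel. rb \<eta> * ub \<eta>) + (LINT \<eta>:{0..yhi u0 r0 x t}|lborel. r0 \<eta>))"

definition vel :: "(real \<Rightarrow> real) \<Rightarrow> (real \<Rightarrow> real) \<Rightarrow> (real \<Rightarrow> real) \<Rightarrow> (real \<Rightarrow> real)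
    \<Rightarrow> real \<Rightarrow> real \<Rightarrow> real" where
  "vel u0 ub r0 rb x t =
    (let F = Fm u0 r0 x t; G = Gm ub rb x t;
         y1 = ylo u0 r0 x t; y2 = yhi u0 r0 x t; t1 = tlo ub rb x t; t2 = thi ub rb x t in
     if x > 0 then
       (if F < G then
          (if y1 = y2 then (x - y1) / t
           else (LINT \<eta>:{y1..y2}|lborel. r0 \<eta> * u0 \<eta>) / (LINT \<eta>:{y1..y2}|lborel. r0 \<eta>))
        else if F > G then
          (if t1 = t2 then x / (t - t1)
           else (LINT \<eta>:{t1..t2}|lborel. rb \<eta> * (ub \<eta>)\<^sup>2) / (LINT \<eta>:{t1..t2}|lborel. rb \<eta> * ub \<eta>))
        else if y2 \<noteq> 0 \<or> t2 \<noteq> 0 then ue u0 ub r0 rb x t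
        else x / t)
     else
       (if F > G then ub t else if F < G then 0 else ue u0 ub r0 rb 0 t))"

definition mass :: "(real \<Rightarrow> real) \<Rightarrow> (real \<Rightarrow> real) \<Rightarrow> (real \<Rightarrow> real) \<Rightarrow> (real \<Rightarrow> real)
    \<Rightarrow> real \<Rightarrow> real \<Rightarrow> real" where
  "mass u0 ub r0 rb x t =
    (if x > 0 \<and> Fm u0 r0 x t \<le> Gm ub rb x t
     then (LINT \<eta>:{0..ylo u0 r0 x t}|lborel. r0 \<eta>)
     else - (LINT \<eta>:{0..tlo ub rb x t}|lborel. rb \<eta> * ub \<eta>))"

definition massR :: "(real \<Rightarrow> real) \<Rightarrow> (real \<Rightarrow> real) \<Rightarrow> (real \<Rightarrow> real) \<Rightarrow> (real \<Rightarrow> real)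
    \<Rightarrow> real \<Rightarrow> real \<Rightarrow> real" where
  "massR u0 ub r0 rb x t = Lim (at_right x) (\<lambda>z. mass u0 ub r0 rb z t)"

text \<open>The Lebesgue--Stieltjes measure m(dx,t) of x \<mapsto> m(x,t) on (0,inf): it is the
  interval measure of the right-continuous version x \<mapsto> m(x+,t), extended by the
  constant m(0+,t) to x \<le> 0 (so it charges nothing on (-inf,0]).\<close>
definition rhoLS :: "(real \<Rightarrow> real) \<Rightarrow> (real \<Rightarrow> real) \<Rightarrow> (real \<Rightarrow> real) \<Rightarrow> (real \<Rightarrow> real)
    \<Rightarrow> real \<Rightarrow> real measure" where
  "rhoLS u0 ub r0 rb t = interval_measure (\<lambda>x. massR u0 ub r0 rb (max x 0) t)"

text \<open>Weight of the atom of rho(.,t) at x = 0.\<close>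
definition atom0 :: "(real \<Rightarrow> real) \<Rightarrow> (real \<Rightarrow> real) \<Rightarrow> (real \<Rightarrow> real) \<Rightarrow> (real \<Rightarrow> real)
    \<Rightarrow> real \<Rightarrow> real" where
  "atom0 u0 ub r0 rb t =
    (if Fm u0 r0 0 t \<le> Gm ub rb 0 t then massR u0 ub r0 rb 0 t - mass u0 ub r0 rb 0 t else 0)"

end

theory Submission
  imports Defs "HOL-Analysis.Analysis" "HOL-Real_Asymp.Real_Asymp"
begin

locale pot =
  fixes A M :: "real \<Rightarrow> real" and D :: "real set" and R :: "real \<Rightarrow> real"
  assumes A0: "A 0 = 0" and M0: "M 0 = 0"
  and Mstrict: "\<And>y1 y2. 0 \<le> y1 \<Longrightarrow> y1 < y2 \<Longrightarrow> M y1 < M y2"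
  and lipA: "\<And>b. \<exists>L. \<forall>y1\<in>{0..b}. \<forall>y2\<in>{0..b}. \<bar>A y1 - A y2\<bar> \<le> L * \<bar>y1 - y2\<bar>"
  and lipM: "\<And>b. \<exists>L. \<forall>y1\<in>{0..b}. \<forall>y2\<in>{0..b}. \<bar>M y1 - M y2\<bar> \<le> L * \<bar>y1 - y2\<bar>"
  and Dint: "\<And>a b c. a \<in> D \<Longrightarrow> c \<in> D \<Longrightarrow> a \<le> b \<Longrightarrow> b \<le> c \<Longrightarrow> b \<in> D"
  and Rnn: "\<And>x. x \<in> D \<Longrightarrow> 0 \<le> R x"
  and Rmono: "\<And>x1 x2. x1 \<in> D \<Longrightarrow> x2 \<in> D \<Longrightarrow> x1 \<le> x2 \<Longrightarrow> R x1 \<le> R x2"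
  and beyond: "\<And>x y1 y2. x \<in> D \<Longrightarrow> R x \<le> y1 \<Longrightarrow> y1 < y2 \<Longrightarrow> A y1 - x * M y1 < A y2 - x * M y2"
begin

definition Phi :: "real \<Rightarrow> real \<Rightarrow> real" where "Phi y x = A y - x * M y"
definition Pm :: "real \<Rightarrow> real" where "Pm x = Inf ((\<lambda>y. Phi y x) ` {0..})"
definition S :: "real \<Rightarrow> real set" where "S x = {y. 0 \<le> y \<and> Phi y x = Pm x}"
definition lo :: "real \<Rightarrow> real" where "lo x = Inf (S x)"
definition hi :: "real \<Rightarrow> real" where "hi x = Sup (S x)"

lemma M_nonneg: "0 \<le> y \<Longrightarrow> 0 \<le> M y"
  using Mstrict[of 0 y] M0 by (cases "y = 0") auto

lemma M_mono: "0 \<le> y1 \<Longrightarrow> y1 \<le> y2 \<Longrightarrow> M y1 \<le> M y2"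
  using Mstrict[of y1 y2] by (cases "y1 = y2") auto

lemma contA: "continuous_on {0..b} A"
proof -
  obtain L where L: "\<forall>y1\<in>{0..b}. \<forall>y2\<in>{0..b}. \<bar>A y1 - A y2\<bar> \<le> L * \<bar>y1 - y2\<bar>" using lipA by blast
  show ?thesis unfolding continuous_on_iff
  proof (intro ballI allI impI)
    fix x e :: real assume x: "x \<in> {0..b}" and e: "0 < e"
    show "\<exists>d>0. \<forall>x'\<in>{0..b}. dist x' x < d \<longrightarrow> dist (A x') (A x) < e"
    proof (rule exI[of _ "e / (\<bar>L\<bar> + 1)"], safe)
      show "0 < e / (\<bar>L\<bar> + 1)" using e by simp
      fix x' assume x': "x' \<in> {0..b}" "dist x' x < e / (\<bar>L\<bar> + 1)"
      have "\<bar>A x' - A x\<bar> \<le> L * \<bar>x' - x\<bar>" using L x x' by blast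
      also have "\<dots> \<le> (\<bar>L\<bar> + 1) * \<bar>x' - x\<bar>" by (intro mult_right_mono) auto
      also have "\<dots> < (\<bar>L\<bar> + 1) * (e / (\<bar>L\<bar> + 1))"
        using x' by (intro mult_strict_left_mono) (auto simp: dist_real_def)
      also have "\<dots> = e" by simp
      finally show "dist (A x') (A x) < e" by (simp add: dist_real_def)
    qed
  qed
qed

lemma contM: "continuous_on {0..b} M"
proof -
  obtain L where L: "\<forall>y1\<in>{0..b}. \<forall>y2\<in>{0..b}. \<bar>M y1 - M y2\<bar> \<le> L * \<bar>y1 - y2\<bar>" using lipM by blast
  show ?thesis unfolding continuous_on_iff
  proof (intro ballI allI impI)
    fix x e :: real assume x: "x \<in> {0..b}" and e: "0 < e"
    show "\<exists>d>0. \<forall>x'\<in>{0..b}. dist x' x < d \<longrightarrow> dist (M x') (M x) < e"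
    proof (rule exI[of _ "e / (\<bar>L\<bar> + 1)"], safe)
      show "0 < e / (\<bar>L\<bar> + 1)" using e by simp
      fix x' assume x': "x' \<in> {0..b}" "dist x' x < e / (\<bar>L\<bar> + 1)"
      have "\<bar>M x' - M x\<bar> \<le> L * \<bar>x' - x\<bar>" using L x x' by blast
      also have "\<dots> \<le> (\<bar>L\<bar> + 1) * \<bar>x' - x\<bar>" by (intro mult_right_mono) auto
      also have "\<dots> < (\<bar>L\<bar> + 1) * (e / (\<bar>L\<bar> + 1))"
        using x' by (intro mult_strict_left_mono) (auto simp: dist_real_def)
      also have "\<dots> = e" by simp
      finally show "dist (M x') (M x) < e" by (simp add: dist_real_def)
    qed
  qed
qed

lemma contPhi: "continuous_on {0..b} (\<lambda>y. Phi y x)"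
  unfolding Phi_def by (intro continuous_intros contA contM)

lemma ex_min: assumes "x \<in> D" shows "\<exists>y\<in>{0..R x}. \<forall>y'\<ge>0. Phi y x \<le> Phi y' x"
proof -
  have "0 \<le> R x" using Rnn assms .
  then obtain y where y: "y \<in> {0..R x}" "\<forall>y'\<in>{0..R x}. Phi y x \<le> Phi y' x"
    using continuous_attains_inf[OF compact_Icc _ contPhi[of "R x" x]] by auto
  have "Phi y x \<le> Phi y' x" if "y' \<ge> 0" for y'
  proof (cases "y' \<le> R x")
    case True then show ?thesis using y that by auto
  next
    case False
    then have "Phi (R x) x < Phi y' x" using beyond[OF assms, of "R x" y'] by (auto simp: Phi_def)
    moreover have "Phi y x \<le> Phi (R x) x" using y \<open>0 \<le> R x\<close> by auto
    ultimately show ?thesis by simp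
  qed
  then show ?thesis using y by blast
qed

lemma Pm_le: assumes "x \<in> D" "0 \<le> y" shows "Pm x \<le> Phi y x"
proof -
  obtain y0 where "y0 \<in> {0..R x}" "\<forall>y'\<ge>0. Phi y0 x \<le> Phi y' x" using ex_min assms by blast
  then have "bdd_below ((\<lambda>y. Phi y x) ` {0..})" by (auto intro!: bdd_belowI2)
  then show ?thesis unfolding Pm_def using assms by (auto intro!: cInf_lower)
qed

lemma Pm_eq: assumes "x \<in> D" "0 \<le> y0" "\<And>y'. 0 \<le> y' \<Longrightarrow> Phi y0 x \<le> Phi y' x" shows "Pm x = Phi y0 x"
  unfolding Pm_def using assms by (intro cInf_eq_minimum) auto

lemma S_iff: assumes "x \<in> D" shows "y \<in> S x \<longleftrightarrow> 0 \<le> y \<and> (\<forall>y'\<ge>0. Phi y x \<le> Phi y' x)"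
proof
  assume "y \<in> S x" then show "0 \<le> y \<and> (\<forall>y'\<ge>0. Phi y x \<le> Phi y' x)"
    using Pm_le[OF assms] by (auto simp: S_def)
next
  assume "0 \<le> y \<and> (\<forall>y'\<ge>0. Phi y x \<le> Phi y' x)"
  then show "y \<in> S x" using Pm_eq[OF assms, of y] by (auto simp: S_def)
qed

lemma S_ne: "x \<in> D \<Longrightarrow> S x \<noteq> {}"
  using ex_min S_iff by fastforce

lemma S_le_R: assumes "x \<in> D" "y \<in> S x" shows "y \<le> R x"
proof (rule ccontr)
  assume "\<not> y \<le> R x"
  then have "Phi (R x) x < Phi y x" using beyond[OF assms(1), of "R x" y] by (auto simp: Phi_def)
  moreover have "Phi y x \<le> Phi (R x) x" using S_iff[OF assms(1)] assms(2) Rnn[OF assms(1)] by auto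
  ultimately show False by simp
qed

lemma S_closed: assumes "x \<in> D" shows "closed (S x)"
proof -
  have "S x = {y \<in> {0..R x}. Phi y x = Pm x}" using S_le_R[OF assms] by (auto simp: S_def)
  then show ?thesis using continuous_closed_preimage_constant[OF contPhi[of "R x" x]] by simp
qed

lemma S_bdd_above: "x \<in> D \<Longrightarrow> bdd_above (S x)"
  by (rule bdd_aboveI[of _ "R x"]) (rule S_le_R)

lemma S_bdd_below: "bdd_below (S x)"
  by (rule bdd_belowI[of _ 0]) (simp add: S_def)

lemma lo_in: assumes "x \<in> D" shows "lo x \<in> S x"
  unfolding lo_def by (rule closed_contains_Inf[OF S_ne[OF assms] S_bdd_below S_closed[OF assms]])

lemma hi_in: assumes "x \<in> D" shows "hi x \<in> S x"
  unfolding hi_def by (rule closed_contains_Sup[OF S_ne[OF assms] S_bdd_above[OF assms] S_closed[OF assms]])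

lemma lo_le: "x \<in> D \<Longrightarrow> y \<in> S x \<Longrightarrow> lo x \<le> y"
  unfolding lo_def by (rule cInf_lower[OF _ S_bdd_below])

lemma hi_ge: "x \<in> D \<Longrightarrow> y \<in> S x \<Longrightarrow> y \<le> hi x"
  unfolding hi_def by (rule cSup_upper[OF _ S_bdd_above])

lemma lo_le_hi: "x \<in> D \<Longrightarrow> lo x \<le> hi x"
  using lo_le[OF _ hi_in] by blast

lemma lo_nn: "x \<in> D \<Longrightarrow> 0 \<le> lo x"
  using lo_in by (auto simp: S_def)

lemma hi_le_R: "x \<in> D \<Longrightarrow> hi x \<le> R x"
  using hi_in S_le_R by simp

lemma S_min: "x \<in> D \<Longrightarrow> y \<in> S x \<Longrightarrow> 0 \<le> y' \<Longrightarrow> Phi y x \<le> Phi y' x"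
  using S_iff by blast

lemma S_Pm: "x \<in> D \<Longrightarrow> y \<in> S x \<Longrightarrow> Pm x = Phi y x"
  by (auto simp: S_def)

lemma ineq: assumes "x1 \<in> D" "x2 \<in> D" "y1 \<in> S x1" "y2 \<in> S x2"
  shows "x1 * (M y2 - M y1) \<le> A y2 - A y1" "A y2 - A y1 \<le> x2 * (M y2 - M y1)"
proof -
  have "Phi y1 x1 \<le> Phi y2 x1" using S_min[OF assms(1,3)] assms(4) by (auto simp: S_def)
  then show "x1 * (M y2 - M y1) \<le> A y2 - A y1" by (simp add: Phi_def algebra_simps)
  have "Phi y2 x2 \<le> Phi y1 x2" using S_min[OF assms(2,4)] assms(3) by (auto simp: S_def)
  then show "A y2 - A y1 \<le> x2 * (M y2 - M y1)" by (simp add: Phi_def algebra_simps)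
qed

lemma sep: assumes "x1 \<in> D" "x2 \<in> D" "x1 < x2" "y1 \<in> S x1" "y2 \<in> S x2" shows "y1 \<le> y2"
proof (rule ccontr)
  assume "\<not> y1 \<le> y2"
  then have "M y2 < M y1" using Mstrict[of y2 y1] assms(5) by (auto simp: S_def)
  moreover have "x1 * (M y2 - M y1) \<le> x2 * (M y2 - M y1)"
    using ineq[OF assms(1,2,4,5)] by linarith
  ultimately show False using assms(3) by (smt (verit) mult_less_cancel_right)
qed

lemma hi_le_lo: "x1 \<in> D \<Longrightarrow> x2 \<in> D \<Longrightarrow> x1 < x2 \<Longrightarrow> hi x1 \<le> lo x2"
  by (rule sep[OF _ _ _ hi_in lo_in])

lemma Pm_step: assumes "x1 \<in> D" "x2 \<in> D" "y1 \<in> S x1"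
  shows "Pm x2 \<le> Pm x1 - (x2 - x1) * M y1"
proof -
  have "Pm x2 \<le> Phi y1 x2" using Pm_le[OF assms(2)] assms(3) by (auto simp: S_def)
  also have "\<dots> = Phi y1 x1 - (x2 - x1) * M y1" by (simp add: Phi_def algebra_simps)
  also have "Phi y1 x1 = Pm x1" using S_Pm[OF assms(1,3)] by simp
  finally show ?thesis .
qed

lemma Pm_antimono: assumes "x1 \<in> D" "x2 \<in> D" "x1 \<le> x2" shows "Pm x2 \<le> Pm x1"
proof -
  have "0 \<le> (x2 - x1) * M (lo x1)" using assms lo_nn M_nonneg by auto
  then show ?thesis using Pm_step[OF assms(1,2) lo_in[OF assms(1)]] by linarith
qed

lemma Pm_lip: assumes "x1 \<in> D" "x2 \<in> D" "x1 \<le> x2"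
  shows "\<bar>Pm x1 - Pm x2\<bar> \<le> (x2 - x1) * M (R x2)"
proof -
  have a: "Pm x1 \<le> Pm x2 + (x2 - x1) * M (lo x2)"
    using Pm_step[OF assms(2,1) lo_in[OF assms(2)]] by (simp add: algebra_simps)
  have "M (lo x2) \<le> M (R x2)" using M_mono lo_nn lo_le_hi hi_le_R assms by (meson order.trans)
  then have "(x2 - x1) * M (lo x2) \<le> (x2 - x1) * M (R x2)" using assms by (intro mult_left_mono) auto
  then show ?thesis using a Pm_antimono[OF assms] by linarith
qed


lemma lo_mono: "x1 \<in> D \<Longrightarrow> x2 \<in> D \<Longrightarrow> x1 \<le> x2 \<Longrightarrow> lo x1 \<le> lo x2"
  using hi_le_lo[of x1 x2] lo_le_hi[of x1] by (cases "x1 = x2") auto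

lemma hi_mono: "x1 \<in> D \<Longrightarrow> x2 \<in> D \<Longrightarrow> x1 \<le> x2 \<Longrightarrow> hi x1 \<le> hi x2"
  using hi_le_lo[of x1 x2] lo_le_hi[of x2] by (cases "x1 = x2") auto

lemma Lclose:
  assumes x: "x \<in> D" and L: "0 \<le> L" "L \<le> b"
    and cl: "\<And>z. 0 < z \<Longrightarrow> \<exists>x'\<in>D. \<exists>h\<in>S x'. \<bar>L - h\<bar> \<le> z \<and> \<bar>x' - x\<bar> \<le> z \<and> h \<le> b"
  shows "L \<in> S x"
proof -
  obtain LA where LA: "\<forall>y1\<in>{0..b}. \<forall>y2\<in>{0..b}. \<bar>A y1 - A y2\<bar> \<le> LA * \<bar>y1 - y2\<bar>" using lipA by blast
  obtain LM where LM: "\<forall>y1\<in>{0..b}. \<forall>y2\<in>{0..b}. \<bar>M y1 - M y2\<bar> \<le> LM * \<bar>y1 - y2\<bar>" using lipM by blast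
  have "Phi L x \<le> Phi y x" if y: "0 \<le> y" for y
  proof (rule field_le_epsilon)
    fix k :: real assume k: "0 < k"
    define C where "C = \<bar>LA\<bar> + \<bar>x\<bar> * \<bar>LM\<bar> + \<bar>M b\<bar> + \<bar>M y\<bar> + 1"
    have C: "0 < C" unfolding C_def by (smt (verit) abs_ge_zero zero_le_mult_iff)
    define z where "z = k / C"
    have z: "0 < z" using k C by (simp add: z_def)
    obtain x' h where x': "x' \<in> D" and h: "h \<in> S x'" and hL: "\<bar>L - h\<bar> \<le> z" and xx: "\<bar>x' - x\<bar> \<le> z" and hb: "h \<le> b"
      using cl[OF z] by blast
    have h0: "0 \<le> h" using h by (simp add: S_def)
    have "Phi h x' \<le> Phi y x'" using S_min[OF x' h y] .
    have e1: "\<bar>A L - A h\<bar> \<le> \<bar>LA\<bar> * z"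
    proof -
      have "\<bar>A L - A h\<bar> \<le> LA * \<bar>L - h\<bar>" using LA L h0 hb by auto
      also have "\<dots> \<le> \<bar>LA\<bar> * \<bar>L - h\<bar>" by (intro mult_right_mono) auto
      also have "\<dots> \<le> \<bar>LA\<bar> * z" using hL by (intro mult_left_mono) auto
      finally show ?thesis .
    qed
    have e2: "\<bar>M L - M h\<bar> \<le> \<bar>LM\<bar> * z"
    proof -
      have "\<bar>M L - M h\<bar> \<le> LM * \<bar>L - h\<bar>" using LM L h0 hb by auto
      also have "\<dots> \<le> \<bar>LM\<bar> * \<bar>L - h\<bar>" by (intro mult_right_mono) auto
      also have "\<dots> \<le> \<bar>LM\<bar> * z" using hL by (intro mult_left_mono) auto
      finally show ?thesis .
    qed
    have e3: "\<bar>x * (M L - M h)\<bar> \<le> \<bar>x\<bar> * (\<bar>LM\<bar> * z)"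
      unfolding abs_mult using e2 by (intro mult_left_mono) auto
    have Mh: "\<bar>M h\<bar> \<le> \<bar>M b\<bar>" using M_nonneg[OF h0] M_mono[OF h0 hb] by auto
    have e4: "\<bar>(x' - x) * M h\<bar> \<le> z * \<bar>M b\<bar>"
      unfolding abs_mult using xx Mh by (intro mult_mono) auto
    have e5: "\<bar>(x' - x) * M y\<bar> \<le> z * \<bar>M y\<bar>"
      unfolding abs_mult using xx by (intro mult_mono) auto
    have "Phi L x - Phi y x = (A L - A h) - x * (M L - M h) + (x' - x) * M h + (Phi h x' - Phi y x') - (x' - x) * M y"
      by (simp add: Phi_def algebra_simps)
    also have "\<dots> \<le> \<bar>LA\<bar> * z + \<bar>x\<bar> * (\<bar>LM\<bar> * z) + z * \<bar>M b\<bar> + 0 + z * \<bar>M y\<bar>"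
      using e1 e3 e4 e5 \<open>Phi h x' \<le> Phi y x'\<close> by linarith
    also have "\<dots> = z * (C - 1)" by (simp add: C_def algebra_simps)
    also have "\<dots> \<le> k" using z C by (simp add: z_def field_simps)
    finally show "Phi L x \<le> Phi y x + k" by simp
  qed
  then show ?thesis using S_iff[OF x] L by blast
qed

lemma right_lim:
  assumes x: "x \<in> D" and eta: "0 < eta"
  shows "\<exists>d>0. \<forall>x2\<in>D. x < x2 \<and> x2 < x + d \<longrightarrow> hi x2 < hi x + eta"
proof (rule ccontr)
  assume H0: "\<not> ?thesis"
  have H: "\<exists>x2\<in>D. x < x2 \<and> x2 < x + d \<and> hi x + eta \<le> hi x2" if "0 < d" for d
    using H0 that by (meson not_less)
  obtain xr where xr: "xr \<in> D" "x < xr" using H[of 1] by auto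
  define T where "T = {x2 \<in> D. x < x2 \<and> x2 \<le> xr}"
  have T1: "hi x + eta \<le> hi x2" if "x2 \<in> T" for x2
  proof -
    from that have x2: "x2 \<in> D" "x < x2" "x2 \<le> xr" by (auto simp: T_def)
    obtain x3 where x3: "x3 \<in> D" "x < x3" "x3 < x2" "hi x + eta \<le> hi x3" using H[of "x2 - x"] x2 by auto
    show ?thesis using hi_mono[of x3 x2] x2 x3 by linarith
  qed
  have Tne: "T \<noteq> {}" using xr by (auto simp: T_def)
  define L where "L = Inf (hi ` T)"
  have bb: "bdd_below (hi ` T)" using T1 by (auto intro!: bdd_belowI)
  have L1: "hi x + eta \<le> L" unfolding L_def using Tne T1 by (auto intro!: cInf_greatest)
  have L0: "0 \<le> L" using L1 lo_nn[OF x] lo_le_hi[OF x] eta by linarith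
  have Lb: "L \<le> R xr"
  proof -
    have "L \<le> hi xr" unfolding L_def using xr by (intro cInf_lower[OF _ bb]) (auto simp: T_def)
    then show ?thesis using hi_le_R[OF xr(1)] by linarith
  qed
  have "L \<in> S x"
  proof (rule Lclose[OF x L0 Lb])
    fix z :: real assume z: "0 < z"
    obtain x3 where x3: "x3 \<in> T" "hi x3 < L + z"
      using cInf_less_iff[OF _ bb, of "L + z"] Tne z unfolding L_def by auto
    define x4 where "x4 = min x3 (x + z / 2)"
    have x3': "x3 \<in> D" "x < x3" "x3 \<le> xr" using x3 by (auto simp: T_def)
    have x4: "x < x4" "x4 \<le> x3" "x4 - x \<le> z" using x3' z by (auto simp: x4_def)
    have x4D: "x4 \<in> D" using Dint[OF x x3'(1)] x4 by auto
    have x4T: "x4 \<in> T" using x4D x4 x3' by (auto simp: T_def)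
    have "L \<le> hi x4" unfolding L_def by (rule cInf_lower[OF _ bb]) (use x4T in auto)
    moreover have "hi x4 \<le> hi x3" using hi_mono[OF x4D x3'(1) x4(2)] .
    moreover have "hi x4 \<le> R xr" using hi_le_R[OF x4D] Rmono[OF x4D xr(1)] x4 x3' by linarith
    ultimately show "\<exists>x'\<in>D. \<exists>h\<in>S x'. \<bar>L - h\<bar> \<le> z \<and> \<bar>x' - x\<bar> \<le> z \<and> h \<le> R xr"
      using x4D hi_in[OF x4D] x3 x4 by (intro bexI[of _ x4] bexI[of _ "hi x4"]) auto
  qed
  then have "L \<le> hi x" using hi_ge[OF x] by blast
  then show False using L1 eta by linarith
qed

lemma left_lim:
  assumes x: "x \<in> D" and eta: "0 < eta"
  shows "\<exists>d>0. \<forall>x1\<in>D. x - d < x1 \<and> x1 < x \<longrightarrow> lo x - eta < lo x1"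
proof (rule ccontr)
  assume H0: "\<not> ?thesis"
  have H: "\<exists>x1\<in>D. x - d < x1 \<and> x1 < x \<and> lo x1 \<le> lo x - eta" if "0 < d" for d
    using H0 that by (meson not_less)
  obtain xl where xl: "xl \<in> D" "xl < x" using H[of 1] by auto
  define T where "T = {x1 \<in> D. xl \<le> x1 \<and> x1 < x}"
  have T1: "lo x1 \<le> lo x - eta" if "x1 \<in> T" for x1
  proof -
    from that have x1: "x1 \<in> D" "x1 < x" "xl \<le> x1" by (auto simp: T_def)
    obtain x3 where x3: "x3 \<in> D" "x3 < x" "x1 < x3" "lo x3 \<le> lo x - eta" using H[of "x - x1"] x1 by auto
    show ?thesis using lo_mono[of x1 x3] x1 x3 by linarith
  qed
  have Tne: "T \<noteq> {}" using xl by (auto simp: T_def)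
  define L where "L = Sup (lo ` T)"
  have ba: "bdd_above (lo ` T)" using T1 by (auto intro!: bdd_aboveI)
  have L1: "L \<le> lo x - eta" unfolding L_def using Tne T1 by (auto intro!: cSup_least)
  have Lxl: "lo xl \<le> L" unfolding L_def using xl by (intro cSup_upper[OF _ ba]) (auto simp: T_def)
  have L0: "0 \<le> L" using Lxl lo_nn[OF xl(1)] by linarith
  have Lb: "L \<le> R x" using L1 lo_le_hi[OF x] hi_le_R[OF x] eta by linarith
  have "L \<in> S x"
  proof (rule Lclose[OF x L0 Lb])
    fix z :: real assume z: "0 < z"
    obtain x3 where x3: "x3 \<in> T" "L - z < lo x3"
      using less_cSup_iff[OF _ ba, of "L - z"] Tne z unfolding L_def by auto
    define x4 where "x4 = max x3 (x - z / 2)"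
    have x3': "x3 \<in> D" "x3 < x" "xl \<le> x3" using x3 by (auto simp: T_def)
    have x4: "x4 < x" "x3 \<le> x4" "x - x4 \<le> z" using x3' z by (auto simp: x4_def)
    have x4D: "x4 \<in> D" using Dint[OF x3'(1) x] x4 by auto
    have x4T: "x4 \<in> T" using x4D x4 x3' by (auto simp: T_def)
    have "lo x4 \<le> L" unfolding L_def by (rule cSup_upper[OF _ ba]) (use x4T in auto)
    moreover have "lo x3 \<le> lo x4" using lo_mono[OF x3'(1) x4D x4(2)] .
    moreover have "lo x4 \<le> R x" using lo_le_hi[OF x4D] hi_le_R[OF x4D] Rmono[OF x4D x] x4 by linarith
    ultimately show "\<exists>x'\<in>D. \<exists>h\<in>S x'. \<bar>L - h\<bar> \<le> z \<and> \<bar>x' - x\<bar> \<le> z \<and> h \<le> R x"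
      using x4D lo_in[OF x4D] x3 x4 by (intro bexI[of _ x4] bexI[of _ "lo x4"]) auto
  qed
  then have "lo x \<le> L" using lo_le[OF x] by blast
  then show False using L1 eta by linarith
qed

end


definition gd :: "(real \<Rightarrow> real) \<Rightarrow> bool" where
  "gd f \<longleftrightarrow> (\<lambda>x. if 0 \<le> x then f x else 0) \<in> borel_measurable borel \<and> (\<forall>b. \<exists>B. \<forall>x\<in>{0..b}. \<bar>f x\<bar> \<le> B)"

lemma sbm_iff: "set_borel_measurable borel {0..} f \<longleftrightarrow> (\<lambda>x. if 0 \<le> x then f x else (0::real)) \<in> borel_measurable borel"
  unfolding set_borel_measurable_def
  by (intro measurable_cong) (auto simp: indicator_def)

lemma gd_intro: "set_borel_measurable borel {0..} f \<Longrightarrow> (\<And>b. \<exists>B. \<forall>x\<in>{0..b}. \<bar>f x\<bar> \<le> B) \<Longrightarrow> gd f"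
  unfolding gd_def sbm_iff by auto

lemma gd_const: "gd (\<lambda>x. c)"
  unfolding gd_def by auto

lemma gd_id: "gd (\<lambda>x. x)"
  unfolding gd_def
proof (intro conjI allI)
  fix b :: real show "\<exists>B. \<forall>x\<in>{0..b}. \<bar>x\<bar> \<le> B" by (rule exI[of _ "\<bar>b\<bar>"]) auto
qed measurable

lemma gd_mult: assumes "gd f" "gd g" shows "gd (\<lambda>x. f x * g x)"
proof -
  have m: "(\<lambda>x. (if 0 \<le> x then f x else 0) * (if 0 \<le> x then g x else 0)) \<in> borel_measurable borel"
    using assms unfolding gd_def by (intro borel_measurable_times) auto
  have "(\<lambda>x. if 0 \<le> x then f x * g x else 0) = (\<lambda>x. (if 0 \<le> x then f x else 0) * (if 0 \<le> x then g x else 0))"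
    by auto
  moreover have "\<exists>B. \<forall>x\<in>{0..b}. \<bar>f x * g x\<bar> \<le> B" for b
  proof -
    obtain B1 where B1: "\<forall>x\<in>{0..b}. \<bar>f x\<bar> \<le> B1" using assms unfolding gd_def by blast
    obtain B2 where B2: "\<forall>x\<in>{0..b}. \<bar>g x\<bar> \<le> B2" using assms unfolding gd_def by blast
    have "\<bar>f x * g x\<bar> \<le> B1 * B2" if "x \<in> {0..b}" for x
      unfolding abs_mult using B1 B2 that by (intro mult_mono) auto
    then show ?thesis by blast
  qed
  ultimately show ?thesis using m unfolding gd_def by simp
qed

lemma gd_add: assumes "gd f" "gd g" shows "gd (\<lambda>x. f x + g x)"
proof -
  have m: "(\<lambda>x. (if 0 \<le> x then f x else 0) + (if 0 \<le> x then g x else 0)) \<in> borel_measurable borel"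
    using assms unfolding gd_def by (intro borel_measurable_add) auto
  have "(\<lambda>x. if 0 \<le> x then f x + g x else 0) = (\<lambda>x. (if 0 \<le> x then f x else 0) + (if 0 \<le> x then g x else 0))"
    by auto
  moreover have "\<exists>B. \<forall>x\<in>{0..b}. \<bar>f x + g x\<bar> \<le> B" for b
  proof -
    obtain B1 where B1: "\<forall>x\<in>{0..b}. \<bar>f x\<bar> \<le> B1" using assms unfolding gd_def by blast
    obtain B2 where B2: "\<forall>x\<in>{0..b}. \<bar>g x\<bar> \<le> B2" using assms unfolding gd_def by blast
    have "\<bar>f x + g x\<bar> \<le> B1 + B2" if "x \<in> {0..b}" for x
      using B1 B2 that by (smt (verit))
    then show ?thesis by blast
  qed
  ultimately show ?thesis using m unfolding gd_def by simp
qed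

lemma gd_diff: assumes "gd f" "gd g" shows "gd (\<lambda>x. f x - g x)"
proof -
  have "gd (\<lambda>x. f x + (-1) * g x)" using assms by (intro gd_add gd_mult gd_const)
  then show ?thesis by simp
qed

lemma gd_sbm: assumes "gd f" "0 \<le> a" shows "set_borel_measurable borel {a..b} f"
proof -
  have "(\<lambda>x. indicator {a..b} x *\<^sub>R f x) = (\<lambda>x. indicator {a..b} x * (if 0 \<le> x then f x else 0))"
    using assms(2) by (auto simp: indicator_def)
  moreover have "(\<lambda>x. indicator {a..b} x * (if 0 \<le> x then f x else 0)) \<in> borel_measurable borel"
    using assms(1) unfolding gd_def by (intro borel_measurable_times) auto
  ultimately show ?thesis unfolding set_borel_measurable_def by simp
qed

lemma gd_sint: assumes "gd f" "0 \<le> a" shows "set_integrable lborel {a..b} f"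
proof -
  obtain B where B: "\<forall>x\<in>{0..b}. \<bar>f x\<bar> \<le> B" using assms unfolding gd_def by blast
  have "integrable lborel (\<lambda>x. indicator {a..b} x * B)"
    by (intro integrable_mult_left integrable_real_indicator) (auto simp: emeasure_lborel_Icc_eq)
  then have "set_integrable lborel {a..b} (\<lambda>x. B)"
    unfolding set_integrable_def by simp
  then show ?thesis
  proof (rule set_integrable_bound)
    show "set_borel_measurable lborel {a..b} f" using gd_sbm[OF assms] by (simp add: set_borel_measurable_def)
    show "AE x\<in>{a..b} in lborel. norm (f x) \<le> norm B"
    proof (intro AE_I2 impI)
      fix x assume "x \<in> {a..b}"
      then have "\<bar>f x\<bar> \<le> B" using B assms(2) by auto
      then show "norm (f x) \<le> norm B" by simp
    qed
  qed
qed

lemma gd_integrable: "gd f \<Longrightarrow> 0 \<le> a \<Longrightarrow> f integrable_on {a..b}"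
  using gd_sint set_borel_integral_eq_integral(1) by blast

lemma gd_LINT: "gd f \<Longrightarrow> 0 \<le> a \<Longrightarrow> (LINT x:{a..b}|lborel. f x) = integral {a..b} f"
  using gd_sint set_borel_integral_eq_integral(2) by blast

lemma gd_combine: "gd f \<Longrightarrow> 0 \<le> a \<Longrightarrow> a \<le> b \<Longrightarrow> b \<le> c \<Longrightarrow> integral {a..b} f + integral {b..c} f = integral {a..c} f"
  using Henstock_Kurzweil_Integration.integral_combine[where a=a and c=b and b=c and f=f] gd_integrable[of f a c] by blast

lemma gd_pos:
  assumes "gd f" "0 \<le> a" "a < b" "\<And>x. x \<in> {a..b} \<Longrightarrow> 0 \<le> f x" "\<And>x. x \<in> {a<..<b} \<Longrightarrow> 0 < f x"
  shows "0 < integral {a..b} f"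
proof -
  have si: "set_integrable lborel {a..b} f" using gd_sint assms(1,2) by blast
  have ge: "0 \<le> integral {a..b} f"
    using integral_nonneg[OF gd_integrable[OF assms(1,2)]] assms(4) by auto
  have "integral {a..b} f \<noteq> 0"
  proof
    assume "integral {a..b} f = 0"
    then have "(LINT x:{a..b}|lborel. f x) = 0" using gd_LINT assms(1,2) by simp
    then have "integral\<^sup>L lborel (\<lambda>x. indicator {a..b} x *\<^sub>R f x) = 0" unfolding set_lebesgue_integral_def .
    then have "AE x in lborel. indicator {a..b} x *\<^sub>R f x = 0"
      using integral_nonneg_eq_0_iff_AE[of lborel "\<lambda>x. indicator {a..b} x *\<^sub>R f x"] si assms(4)
      unfolding set_integrable_def by (auto simp: indicator_def)
    then have "AE x in lborel. x \<notin> {a<..<b}"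
      by eventually_elim (use assms(5) in \<open>fastforce simp: indicator_def\<close>)
    then have "emeasure lborel {a<..<b} = 0"
      by (subst (asm) AE_iff_measurable[of "{a<..<b}"]) auto
    then show False using assms(3) by simp
  qed
  then show ?thesis using ge by simp
qed

lemma gd_bound:
  assumes "gd f" "0 \<le> a" "a \<le> b" "\<And>x. x \<in> {a..b} \<Longrightarrow> f x \<le> C"
  shows "integral {a..b} f \<le> (b - a) * C"
proof -
  have "integral {a..b} f \<le> integral {a..b} (\<lambda>x. C)"
    by (rule integral_le) (use assms gd_integrable in auto)
  then show ?thesis using assms(3) by simp
qed

lemma gd_lbound:
  assumes "gd f" "0 \<le> a" "a \<le> b" "\<And>x. x \<in> {a..b} \<Longrightarrow> C \<le> f x"
  shows "(b - a) * C \<le> integral {a..b} f"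
proof -
  have "integral {a..b} (\<lambda>x. C) \<le> integral {a..b} f"
    by (rule integral_le) (use assms gd_integrable in auto)
  then show ?thesis using assms(3) by simp
qed

lemma gd_mono:
  assumes "gd f" "gd g" "0 \<le> a" "\<And>x. x \<in> {a..b} \<Longrightarrow> f x \<le> g x"
  shows "integral {a..b} f \<le> integral {a..b} g"
  by (rule integral_le) (use assms gd_integrable in auto)

lemma gd_lip:
  assumes "gd f" shows "\<exists>L. \<forall>y1\<in>{0..b}. \<forall>y2\<in>{0..b}. \<bar>integral {0..y1} f - integral {0..y2} f\<bar> \<le> L * \<bar>y1 - y2\<bar>"
proof -
  obtain B where B: "\<forall>x\<in>{0..b}. \<bar>f x\<bar> \<le> B" using assms unfolding gd_def by blast
  have *: "\<bar>integral {0..y1} f - integral {0..y2} f\<bar> \<le> B * \<bar>y1 - y2\<bar>"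
    if "y1 \<in> {0..b}" "y2 \<in> {0..b}" "y1 \<le> y2" for y1 y2
  proof -
    have eq: "integral {0..y2} f - integral {0..y1} f = integral {y1..y2} f"
      using gd_combine[OF assms, of 0 y1 y2] that by auto
    have fb: "-B \<le> f x \<and> f x \<le> B" if "x \<in> {y1..y2}" for x
    proof -
      have "x \<in> {0..b}" using that \<open>y1 \<in> {0..b}\<close> \<open>y2 \<in> {0..b}\<close> by auto
      then have "\<bar>f x\<bar> \<le> B" using B by blast
      then show ?thesis by linarith
    qed
    moreover have "integral {y1..y2} f \<le> (y2 - y1) * B"
      using fb that by (intro gd_bound[OF assms]) auto
    moreover have "(y2 - y1) * (-B) \<le> integral {y1..y2} f"
      using fb that by (intro gd_lbound[OF assms]) auto
    ultimately show ?thesis using that eq by (auto simp: abs_le_iff algebra_simps)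
  qed
  show ?thesis
  proof (intro exI[of _ B] ballI)
    fix y1 y2 assume "y1 \<in> {0..b}" "y2 \<in> {0..b}"
    then show "\<bar>integral {0..y1} f - integral {0..y2} f\<bar> \<le> B * \<bar>y1 - y2\<bar>"
      using *[of y1 y2] *[of y2 y1] by (cases "y1 \<le> y2") (auto simp: abs_minus_commute)
  qed
qed



locale setting =
  fixes u0 ub r0 rb :: "real \<Rightarrow> real" and t B0 Bb :: real
  assumes u0m: "set_borel_measurable borel {0..} u0" and u0b: "\<And>x. 0 \<le> x \<Longrightarrow> \<bar>u0 x\<bar> \<le> B0"
  and ubm: "set_borel_measurable borel {0..} ub" and ubb: "\<And>x. 0 \<le> x \<Longrightarrow> \<bar>ub x\<bar> \<le> Bb"
  and ubp: "\<And>x. 0 \<le> x \<Longrightarrow> 0 < ub x"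
  and r0m: "set_borel_measurable borel {0..} r0" and r0p: "\<And>x. 0 \<le> x \<Longrightarrow> 0 < r0 x"
  and r0lb: "\<And>b. \<exists>B. \<forall>x\<in>{0..b}. \<bar>r0 x\<bar> \<le> B"
  and rbm: "set_borel_measurable borel {0..} rb" and rbp: "\<And>x. 0 \<le> x \<Longrightarrow> 0 < rb x"
  and rblb: "\<And>b. \<exists>B. \<forall>x\<in>{0..b}. \<bar>rb x\<bar> \<le> B"
  and r0L1: "set_integrable lborel {0..} r0"
  and tp: "0 < t" and B0nn: "0 \<le> B0" and Bbp: "0 < Bb"
begin

lemma gd_u0: "gd u0" using u0m u0b by (intro gd_intro) (auto intro!: exI[of _ B0])
lemma gd_ub: "gd ub" using ubm ubb by (intro gd_intro) (auto intro!: exI[of _ Bb])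
lemma gd_r0: "gd r0" using r0m r0lb by (intro gd_intro) auto
lemma gd_rb: "gd rb" using rbm rblb by (intro gd_intro) auto

lemmas gd_basic = gd_u0 gd_ub gd_r0 gd_rb gd_const gd_id

lemma gdF: "gd (\<lambda>e. (t * u0 e + e - x) * r0 e)" by (intro gd_mult gd_add gd_diff gd_basic)
lemma gdG: "gd (\<lambda>e. (x - ub e * (t - e)) * rb e * ub e)" by (intro gd_mult gd_add gd_diff gd_basic)


definition "M y = integral {0..y} r0"
definition "N y = integral {0..y} (\<lambda>e. e * r0 e)"
definition "P y = integral {0..y} (\<lambda>e. r0 e * u0 e)"
definition "AF y = integral {0..y} (\<lambda>e. (t * u0 e + e) * r0 e)"
definition "Mb y = integral {0..y} (\<lambda>e. rb e * ub e)"
definition "Pb y = integral {0..y} (\<lambda>e. rb e * (ub e)\<^sup>2)"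
definition "Bq y = integral {0..y} (\<lambda>e. ub e * (t - e) * rb e * ub e)"
definition "AG y = - Bq y"

lemma gd_diff_int: "gd f \<Longrightarrow> 0 \<le> y1 \<Longrightarrow> y1 \<le> y2 \<Longrightarrow> integral {0..y2} f - integral {0..y1} f = integral {y1..y2} f"
  using gd_combine[of f 0 y1 y2] by simp

lemma Fy_eq: assumes "0 \<le> y" shows "Fy u0 r0 y x t = AF y - x * M y"
proof -
  have "Fy u0 r0 y x t = integral {0..y} (\<lambda>e. (t * u0 e + e - x) * r0 e)"
    unfolding Fy_def by (rule gd_LINT, rule gdF, simp add: assms)
  also have "(\<lambda>e. (t * u0 e + e - x) * r0 e) = (\<lambda>e. (t * u0 e + e) * r0 e - x * r0 e)"
    by (auto simp: algebra_simps)
  also have "integral {0..y} \<dots> = AF y - x * M y"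
    unfolding AF_def M_def
    by (subst integral_diff) (auto intro!: gd_integrable gd_mult gd_add gd_basic)
  finally show ?thesis .
qed

lemma Gy_eq: assumes "0 \<le> y" shows "Gy ub rb y x t = x * Mb y - Bq y"
proof -
  have "Gy ub rb y x t = integral {0..y} (\<lambda>e. (x - ub e * (t - e)) * rb e * ub e)"
    unfolding Gy_def by (rule gd_LINT, rule gdG, simp add: assms)
  also have "(\<lambda>e. (x - ub e * (t - e)) * rb e * ub e) = (\<lambda>e. x * (rb e * ub e) - ub e * (t - e) * rb e * ub e)"
    by (auto simp: algebra_simps)
  also have "integral {0..y} \<dots> = x * Mb y - Bq y"
    unfolding Mb_def Bq_def
    by (subst integral_diff) (auto intro!: gd_integrable gd_mult gd_add gd_diff gd_basic)
  finally show ?thesis .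
qed

lemma AF_eq: assumes "0 \<le> y" shows "AF y = t * P y + N y"
proof -
  have i1: "(\<lambda>e. r0 e * u0 e) integrable_on {0..y}" by (intro gd_integrable gd_mult gd_basic) simp
  have i2: "(\<lambda>e. e * r0 e) integrable_on {0..y}" by (intro gd_integrable gd_mult gd_basic) simp
  have "((\<lambda>e. t * (r0 e * u0 e) + e * r0 e) has_integral (t * P y + N y)) {0..y}"
    unfolding P_def N_def by (intro has_integral_add has_integral_mult_right integrable_integral i1 i2)
  moreover have "(\<lambda>e. t * (r0 e * u0 e) + e * r0 e) = (\<lambda>e. (t * u0 e + e) * r0 e)"
    by (auto simp: algebra_simps)
  ultimately show ?thesis unfolding AF_def by (simp add: integral_unique)
qed

lemma Fint: assumes "0 \<le> y1" "y1 \<le> y2"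
  shows "(AF y2 - x * M y2) - (AF y1 - x * M y1) = integral {y1..y2} (\<lambda>e. (t * u0 e + e - x) * r0 e)"
proof -
  have "(AF y2 - x * M y2) - (AF y1 - x * M y1) = Fy u0 r0 y2 x t - Fy u0 r0 y1 x t"
    using assms by (simp add: Fy_eq)
  also have "\<dots> = integral {0..y2} (\<lambda>e. (t * u0 e + e - x) * r0 e) - integral {0..y1} (\<lambda>e. (t * u0 e + e - x) * r0 e)"
    unfolding Fy_def using assms gd_LINT[OF gdF] by simp
  also have "\<dots> = integral {y1..y2} (\<lambda>e. (t * u0 e + e - x) * r0 e)"
    using assms by (intro gd_diff_int[OF gdF])
  finally show ?thesis .
qed

lemma Gint: assumes "0 \<le> y1" "y1 \<le> y2"
  shows "(x * Mb y2 - Bq y2) - (x * Mb y1 - Bq y1) = integral {y1..y2} (\<lambda>e. (x - ub e * (t - e)) * rb e * ub e)"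
proof -
  have "(x * Mb y2 - Bq y2) - (x * Mb y1 - Bq y1) = Gy ub rb y2 x t - Gy ub rb y1 x t"
    using assms by (simp add: Gy_eq)
  also have "\<dots> = integral {0..y2} (\<lambda>e. (x - ub e * (t - e)) * rb e * ub e) - integral {0..y1} (\<lambda>e. (x - ub e * (t - e)) * rb e * ub e)"
    unfolding Gy_def using assms gd_LINT[OF gdG] by simp
  also have "\<dots> = integral {y1..y2} (\<lambda>e. (x - ub e * (t - e)) * rb e * ub e)"
    using assms by (intro gd_diff_int[OF gdG])
  finally show ?thesis .
qed

lemma M_strict: assumes a: "0 \<le> y1" "y1 < y2" shows "M y1 < M y2"
proof -
  have "0 < integral {y1..y2} r0"
  proof (rule gd_pos[OF gd_r0])
    show "0 \<le> y1" "y1 < y2" using a by auto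
    show "0 \<le> r0 x" if "x \<in> {y1..y2}" for x using r0p[of x] that a by auto
    show "0 < r0 x" if "x \<in> {y1<..<y2}" for x using r0p[of x] that a by auto
  qed
  moreover have "M y2 - M y1 = integral {y1..y2} r0"
    unfolding M_def using a by (intro gd_diff_int[OF gd_r0]) auto
  ultimately show ?thesis by simp
qed

lemma gd_Bqi: "gd (\<lambda>e. ub e * (t - e) * rb e * ub e)" by (intro gd_mult gd_diff gd_basic)

lemma gd_rbub: "gd (\<lambda>e. rb e * ub e)" by (intro gd_mult gd_basic)

lemma Mb_strict: assumes a: "0 \<le> y1" "y1 < y2" shows "Mb y1 < Mb y2"
proof -
  have "0 < integral {y1..y2} (\<lambda>e. rb e * ub e)"
  proof (rule gd_pos[OF gd_rbub])
    show "0 \<le> y1" "y1 < y2" using a by auto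
    show "0 \<le> rb x * ub x" if "x \<in> {y1..y2}" for x using rbp[of x] ubp[of x] that a by auto
    show "0 < rb x * ub x" if "x \<in> {y1<..<y2}" for x using rbp[of x] ubp[of x] that a by auto
  qed
  moreover have "Mb y2 - Mb y1 = integral {y1..y2} (\<lambda>e. rb e * ub e)"
    unfolding Mb_def using a by (intro gd_diff_int[OF gd_rbub]) auto
  ultimately show ?thesis by simp
qed

lemma M0: "M 0 = 0" and Mb0: "Mb 0 = 0" and P0: "P 0 = 0" and Pb0: "Pb 0 = 0" and AF0: "AF 0 = 0"
  and AG0: "AG 0 = 0" and N0: "N 0 = 0" and Bq0: "Bq 0 = 0"
  by (simp_all add: M_def Mb_def P_def Pb_def AF_def AG_def Bq_def N_def)

sublocale I: pot AF M "{0..}" "\<lambda>x. x + t * B0"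
proof
  show "AF 0 = 0" "M 0 = 0" by (simp_all add: AF0 M0)
  show "\<And>y1 y2. 0 \<le> y1 \<Longrightarrow> y1 < y2 \<Longrightarrow> M y1 < M y2" by (rule M_strict)
  show "\<exists>L. \<forall>y1\<in>{0..b}. \<forall>y2\<in>{0..b}. \<bar>AF y1 - AF y2\<bar> \<le> L * \<bar>y1 - y2\<bar>" for b
    unfolding AF_def by (intro gd_lip) (intro gd_mult gd_add gd_diff gd_basic)
  show "\<exists>L. \<forall>y1\<in>{0..b}. \<forall>y2\<in>{0..b}. \<bar>M y1 - M y2\<bar> \<le> L * \<bar>y1 - y2\<bar>" for b
    unfolding M_def by (intro gd_lip) (intro gd_mult gd_add gd_diff gd_basic)
  show "\<And>a b (c::real). a \<in> {0..} \<Longrightarrow> c \<in> {0..} \<Longrightarrow> a \<le> b \<Longrightarrow> b \<le> c \<Longrightarrow> b \<in> {0..}" by auto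
  show "\<And>x. x \<in> {0..} \<Longrightarrow> 0 \<le> x + t * B0" using tp B0nn by auto
  show "\<And>x1 x2. x1 \<in> {0..} \<Longrightarrow> x2 \<in> {0..} \<Longrightarrow> x1 \<le> x2 \<Longrightarrow> x1 + t * B0 \<le> x2 + t * B0" by auto
  fix x y1 y2 :: real assume x: "x \<in> {0..}" and y1: "x + t * B0 \<le> y1" and y12: "y1 < y2"
  have y10: "0 \<le> y1" using x y1 tp B0nn by (smt (verit) atLeast_iff mult_nonneg_nonneg)
  have lb: "- (t * B0) \<le> t * u0 e" if "0 \<le> e" for e
  proof -
    have "- B0 \<le> u0 e" using u0b[OF that] by linarith
    then show ?thesis using tp by (metis minus_mult_right mult_le_cancel_left_pos)
  qed
  have "0 < integral {y1..y2} (\<lambda>e. (t * u0 e + e - x) * r0 e)"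
  proof (rule gd_pos)
    show "gd (\<lambda>e. (t * u0 e + e - x) * r0 e)" by (intro gd_mult gd_add gd_diff gd_basic)
    show "0 \<le> y1" "y1 < y2" using y10 y12 by auto
    show "0 \<le> (t * u0 e + e - x) * r0 e" if "e \<in> {y1..y2}" for e
      using lb[of e] r0p[of e] that y1 y10 by (intro mult_nonneg_nonneg) auto
    show "0 < (t * u0 e + e - x) * r0 e" if "e \<in> {y1<..<y2}" for e
      using lb[of e] r0p[of e] that y1 y10 by (intro mult_pos_pos) auto
  qed
  then show "AF y1 - x * M y1 < AF y2 - x * M y2" using Fint[OF y10, of y2 x] y12 by simp
qed

sublocale B: pot AG Mb "{..0}" "\<lambda>x. t"
proof
  show "AG 0 = 0" "Mb 0 = 0" by (simp_all add: AG0 Mb0)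
  show "\<And>y1 y2. 0 \<le> y1 \<Longrightarrow> y1 < y2 \<Longrightarrow> Mb y1 < Mb y2" by (rule Mb_strict)
  show "\<exists>L. \<forall>y1\<in>{0..b}. \<forall>y2\<in>{0..b}. \<bar>AG y1 - AG y2\<bar> \<le> L * \<bar>y1 - y2\<bar>" for b
  proof -
    obtain L where "\<forall>y1\<in>{0..b}. \<forall>y2\<in>{0..b}. \<bar>Bq y1 - Bq y2\<bar> \<le> L * \<bar>y1 - y2\<bar>"
      unfolding Bq_def using gd_lip[OF gd_Bqi, of b] by blast
    then show ?thesis unfolding AG_def by (intro exI[of _ L]) (simp add: abs_minus_commute)
  qed
  show "\<exists>L. \<forall>y1\<in>{0..b}. \<forall>y2\<in>{0..b}. \<bar>Mb y1 - Mb y2\<bar> \<le> L * \<bar>y1 - y2\<bar>" for b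
    unfolding Mb_def by (intro gd_lip) (intro gd_mult gd_add gd_diff gd_basic)
  show "\<And>a b (c::real). a \<in> {..0} \<Longrightarrow> c \<in> {..0} \<Longrightarrow> a \<le> b \<Longrightarrow> b \<le> c \<Longrightarrow> b \<in> {..0}" by auto
  show "\<And>x. x \<in> {..0} \<Longrightarrow> 0 \<le> t" using tp by auto
  show "\<And>x1 x2. x1 \<in> {..0} \<Longrightarrow> x2 \<in> {..0} \<Longrightarrow> x1 \<le> x2 \<Longrightarrow> t \<le> t" by auto
  fix x y1 y2 :: real assume x: "x \<in> {..0}" and y1: "t \<le> y1" and y12: "y1 < y2"
  have y10: "0 \<le> y1" using y1 tp by auto
  have "0 < integral {y1..y2} (\<lambda>e. (- x - ub e * (t - e)) * rb e * ub e)"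
  proof (rule gd_pos)
    show "gd (\<lambda>e. (- x - ub e * (t - e)) * rb e * ub e)" by (intro gd_mult gd_add gd_diff gd_basic)
    show "0 \<le> y1" "y1 < y2" using y10 y12 by auto
    show "0 \<le> (- x - ub e * (t - e)) * rb e * ub e" if "e \<in> {y1..y2}" for e
    proof -
      have "ub e * (t - e) \<le> 0" using ubp[of e] that y1 y10 by (intro mult_nonneg_nonpos) auto
      then have "0 \<le> - x - ub e * (t - e)" using x by auto
      then show ?thesis using rbp[of e] ubp[of e] that y10 by (auto intro!: mult_nonneg_nonneg)
    qed
    show "0 < (- x - ub e * (t - e)) * rb e * ub e" if "e \<in> {y1<..<y2}" for e
    proof -
      have "ub e * (t - e) < 0" using ubp[of e] that y1 y10 by (auto intro!: mult_pos_neg)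
      then have "0 < - x - ub e * (t - e)" using x by auto
      then show ?thesis using rbp[of e] ubp[of e] that y10 by (auto intro!: mult_pos_pos)
    qed
  qed
  then show "AG y1 - x * Mb y1 < AG y2 - x * Mb y2" using Gint[OF y10, of y2 "-x"] y12 by (simp add: AG_def)
qed

lemma Fm_eq: "Fm u0 r0 x t = I.Pm x"
  unfolding Fm_def I.Pm_def I.Phi_def by (intro arg_cong[where f=Inf] image_cong) (auto simp: Fy_eq)

lemma Gm_eq: "Gm ub rb x t = B.Pm (-x)"
  unfolding Gm_def B.Pm_def B.Phi_def by (intro arg_cong[where f=Inf] image_cong) (auto simp: Gy_eq AG_def)

lemma ySet: "{y. 0 \<le> y \<and> Fy u0 r0 y x t = Fm u0 r0 x t} = I.S x"
  unfolding I.S_def Fm_eq I.Phi_def by (auto simp: Fy_eq)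

lemma tSet: "{y. 0 \<le> y \<and> Gy ub rb y x t = Gm ub rb x t} = B.S (-x)"
  unfolding B.S_def Gm_eq B.Phi_def by (auto simp: Gy_eq AG_def)

lemma ylo_eq: "ylo u0 r0 x t = I.lo x" unfolding ylo_def ySet I.lo_def ..
lemma yhi_eq: "yhi u0 r0 x t = I.hi x" unfolding yhi_def ySet I.hi_def ..
lemma tlo_eq: "tlo ub rb x t = B.lo (-x)" unfolding tlo_def tSet B.lo_def ..
lemma thi_eq: "thi ub rb x t = B.hi (-x)" unfolding thi_def tSet B.hi_def ..

end


context setting begin

lemma gd_Pbi: "gd (\<lambda>e. rb e * (ub e)\<^sup>2)"
proof -
  have "gd (\<lambda>e. rb e * (ub e * ub e))" by (intro gd_mult gd_basic)
  then show ?thesis by (simp add: power2_eq_square)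
qed
lemma gd_Pi: "gd (\<lambda>e. r0 e * u0 e)" by (intro gd_mult gd_basic)
lemma gd_Ni: "gd (\<lambda>e. e * r0 e)" by (intro gd_mult gd_basic)

lemma IPhi: "I.Phi y x = AF y - x * M y" by (simp add: I.Phi_def)
lemma BPhi: "B.Phi y (-x) = x * Mb y - Bq y" by (simp add: B.Phi_def AG_def)

lemma I_lb: assumes x: "0 \<le> x" and y: "y \<in> I.S x" shows "x - t * B0 \<le> y"
proof (rule ccontr)
  assume "\<not> ?thesis"
  then have yy: "y < x - t * B0" by simp
  have y0: "0 \<le> y" using y by (simp add: I.S_def)
  define y' where "y' = x - t * B0"
  have ub: "t * u0 e \<le> t * B0" if "0 \<le> e" for e
    using u0b[OF that] tp by (intro mult_left_mono) auto
  have "0 < integral {y..y'} (\<lambda>e. (x - t * u0 e - e) * r0 e)"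
  proof (rule gd_pos)
    show "gd (\<lambda>e. (x - t * u0 e - e) * r0 e)" by (intro gd_mult gd_diff gd_basic)
    show "0 \<le> y" "y < y'" using y0 yy by (auto simp: y'_def)
    show "0 \<le> (x - t * u0 e - e) * r0 e" if "e \<in> {y..y'}" for e
      using ub[of e] r0p[of e] that y0 by (intro mult_nonneg_nonneg) (auto simp: y'_def)
    show "0 < (x - t * u0 e - e) * r0 e" if "e \<in> {y<..<y'}" for e
      using ub[of e] r0p[of e] that y0 by (intro mult_pos_pos) (auto simp: y'_def)
  qed
  also have "integral {y..y'} (\<lambda>e. (x - t * u0 e - e) * r0 e) = - integral {y..y'} (\<lambda>e. (t * u0 e + e - x) * r0 e)"
    by (subst integral_neg[symmetric]) (auto simp: algebra_simps intro!: arg_cong[where f="integral _"])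
  also have "\<dots> = - ((AF y' - x * M y') - (AF y - x * M y))"
    using Fint[OF y0, of y' x] yy by (simp add: y'_def)
  finally have "I.Phi y' x < I.Phi y x" by (simp add: IPhi)
  moreover have "I.Phi y x \<le> I.Phi y' x" using I.S_min[of x y y'] x y y0 yy by (simp add: y'_def)
  ultimately show False by simp
qed

lemma I_ub: "0 \<le> x \<Longrightarrow> y \<in> I.S x \<Longrightarrow> y \<le> x + t * B0"
  using I.S_le_R by simp

lemma B_le_t: "0 \<le> x \<Longrightarrow> y \<in> B.S (-x) \<Longrightarrow> y \<le> t"
  using B.S_le_R[of "-x" y] by simp

lemma B_bound: assumes x: "0 \<le> x" and y: "y \<in> B.S (-x)" and ypos: "0 < y" shows "x \<le> Bb * (t - y)"
proof (rule ccontr)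
  assume "\<not> ?thesis"
  then have xb: "Bb * (t - y) < x" by simp
  have yt: "y \<le> t" using B_le_t[OF x y] .
  have xpos: "0 < x" using xb yt Bbp by (smt (verit) mult_nonneg_nonneg)
  define y' where "y' = max 0 (t - x / Bb)"
  have "t - y < x / Bb" using xb Bbp by (simp add: field_simps mult.commute)
  then have y'y: "y' < y" using ypos by (auto simp: y'_def)
  have y'0: "0 \<le> y'" by (simp add: y'_def)
  have tx: "t - x / Bb \<le> y'" by (simp add: y'_def)
  have key: "ub e * (t - e) < x" if "y' < e" for e
  proof (cases "e \<le> t")
    case True
    have e0: "0 \<le> e" using that y'0 by simp
    have "ub e * (t - e) \<le> Bb * (t - e)" using ubb[OF e0] True by (intro mult_right_mono) auto
    also have "Bb * (t - e) < Bb * (x / Bb)" using that tx Bbp by (intro mult_strict_left_mono) auto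
    finally show ?thesis using Bbp by simp
  next
    case False
    then have "ub e * (t - e) \<le> 0" using ubp[of e] tp by (intro mult_nonneg_nonpos) auto
    then show ?thesis using xpos by simp
  qed
  have key0: "ub e * (t - e) \<le> x" if "y' \<le> e" for e
  proof (cases "y' = e")
    case True
    show ?thesis
    proof (cases "e \<le> t")
      case True
      have e0: "0 \<le> e" using that y'0 by simp
      have "ub e * (t - e) \<le> Bb * (t - e)" using ubb[OF e0] True by (intro mult_right_mono) auto
      also have "Bb * (t - e) \<le> Bb * (x / Bb)" using that tx Bbp \<open>y' = e\<close> by (intro mult_left_mono) auto
      finally show ?thesis using Bbp by simp
    next
      case False
      then have "ub e * (t - e) \<le> 0" using ubp[of e] tp y'0 \<open>y' = e\<close> by (intro mult_nonneg_nonpos) auto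
      then show ?thesis using xpos by simp
    qed
  next
    case False then show ?thesis using key[of e] that by simp
  qed
  have "0 < integral {y'..y} (\<lambda>e. (x - ub e * (t - e)) * rb e * ub e)"
  proof (rule gd_pos[OF gdG])
    show "0 \<le> y'" "y' < y" using y'0 y'y by auto
    show "0 \<le> (x - ub e * (t - e)) * rb e * ub e" if "e \<in> {y'..y}" for e
      using key0[of e] rbp[of e] ubp[of e] that y'0 by (intro mult_nonneg_nonneg) auto
    show "0 < (x - ub e * (t - e)) * rb e * ub e" if "e \<in> {y'<..<y}" for e
      using key[of e] rbp[of e] ubp[of e] that y'0 by (intro mult_pos_pos) auto
  qed
  then have "B.Phi y' (-x) < B.Phi y (-x)"
    using Gint[OF y'0, of y x] y'y by (simp add: BPhi)
  moreover have "B.Phi y (-x) \<le> B.Phi y' (-x)" using B.S_min[of "-x" y y'] x y y'0 by simp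
  ultimately show False by simp
qed

lemma B_lt_t: assumes "0 < x" "y \<in> B.S (-x)" shows "y < t"
proof (cases "y = 0")
  case True then show ?thesis using tp by simp
next
  case False
  then have "0 < y" using assms(2) by (simp add: B.S_def)
  then have "x \<le> Bb * (t - y)" using B_bound assms by simp
  then show ?thesis using assms(1) Bbp by (smt (verit) mult_nonneg_nonpos)
qed

lemma BS0: "B.S 0 = {t}"
proof -
  have gt: "B.Phi t 0 < B.Phi y 0" if "0 \<le> y" "y \<noteq> t" for y
  proof (cases "y < t")
    case True
    have "0 < integral {y..t} (\<lambda>e. ub e * (t - e) * rb e * ub e)"
    proof (rule gd_pos[OF gd_Bqi])
      show "0 \<le> y" "y < t" using that True by auto
      show "0 \<le> ub e * (t - e) * rb e * ub e" if "e \<in> {y..t}" for e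
        using rbp[of e] ubp[of e] that \<open>0 \<le> y\<close> by (intro mult_nonneg_nonneg) auto
      show "0 < ub e * (t - e) * rb e * ub e" if "e \<in> {y<..<t}" for e
        using rbp[of e] ubp[of e] that \<open>0 \<le> y\<close> by (intro mult_pos_pos) auto
    qed
    moreover have "Bq t - Bq y = integral {y..t} (\<lambda>e. ub e * (t - e) * rb e * ub e)"
      unfolding Bq_def using that True by (intro gd_diff_int[OF gd_Bqi]) auto
    ultimately show ?thesis by (simp add: B.Phi_def AG_def)
  next
    case False
    then have ty: "t < y" using that by simp
    have "0 < integral {t..y} (\<lambda>e. ub e * (e - t) * rb e * ub e)"
    proof (rule gd_pos)
      show "gd (\<lambda>e. ub e * (e - t) * rb e * ub e)" by (intro gd_mult gd_diff gd_basic)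
      show "0 \<le> t" "t < y" using tp ty by auto
      show "0 \<le> ub e * (e - t) * rb e * ub e" if "e \<in> {t..y}" for e
        using rbp[of e] ubp[of e] that tp by (intro mult_nonneg_nonneg) auto
      show "0 < ub e * (e - t) * rb e * ub e" if "e \<in> {t<..<y}" for e
        using rbp[of e] ubp[of e] that tp by (intro mult_pos_pos) auto
    qed
    also have "integral {t..y} (\<lambda>e. ub e * (e - t) * rb e * ub e) = - integral {t..y} (\<lambda>e. ub e * (t - e) * rb e * ub e)"
      by (subst integral_neg[symmetric]) (auto simp: algebra_simps intro!: arg_cong[where f="integral _"])
    also have "integral {t..y} (\<lambda>e. ub e * (t - e) * rb e * ub e) = Bq y - Bq t"
      unfolding Bq_def using ty tp by (intro gd_diff_int[OF gd_Bqi, symmetric]) auto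
    finally show ?thesis by (simp add: B.Phi_def AG_def)
  qed
  have tS: "t \<in> B.S 0"
    using B.S_iff[of 0 t] tp gt by (auto simp: le_less)
  have "y = t" if "y \<in> B.S 0" for y
  proof (rule ccontr)
    assume "y \<noteq> t"
    then have "B.Phi t 0 < B.Phi y 0" using gt[of y] that by (simp add: B.S_def)
    moreover have "B.Phi y 0 \<le> B.Phi t 0" using B.S_min[of 0 y t] that tp by simp
    ultimately show False by simp
  qed
  then show ?thesis using tS by blast
qed

lemma Blo0: "B.lo 0 = t" using B.lo_in[of 0] BS0 by simp
lemma Bhi0: "B.hi 0 = t" using B.hi_in[of 0] BS0 by simp


definition "Dg x = I.Pm x - B.Pm (-x)"

lemma Dg_antimono: "0 \<le> x1 \<Longrightarrow> x1 \<le> x2 \<Longrightarrow> Dg x2 \<le> Dg x1"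
  unfolding Dg_def using I.Pm_antimono[of x1 x2] B.Pm_antimono[of "-x2" "-x1"] by simp

definition "Cb b = M (b + t * B0) + Mb t"

lemma Cb_nn: "0 \<le> b \<Longrightarrow> 0 \<le> Cb b"
  unfolding Cb_def using I.M_nonneg[of "b + t * B0"] B.M_nonneg[of t] tp B0nn by simp

lemma Dg_lip: assumes "0 \<le> x1" "x1 \<le> x2" "x2 \<le> b" shows "\<bar>Dg x1 - Dg x2\<bar> \<le> (x2 - x1) * Cb b"
proof -
  have a: "\<bar>I.Pm x1 - I.Pm x2\<bar> \<le> (x2 - x1) * M (x2 + t * B0)" using I.Pm_lip[of x1 x2] assms by simp
  have b: "\<bar>B.Pm (-x2) - B.Pm (-x1)\<bar> \<le> (x2 - x1) * Mb t" using B.Pm_lip[of "-x2" "-x1"] assms by simp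
  have "M (x2 + t * B0) \<le> M (b + t * B0)" using assms tp B0nn by (intro I.M_mono) auto
  then have "(x2 - x1) * M (x2 + t * B0) \<le> (x2 - x1) * M (b + t * B0)" using assms by (intro mult_left_mono) auto
  then show ?thesis using a b unfolding Dg_def Cb_def by (simp add: abs_le_iff algebra_simps)
qed

lemma BPm_zero: assumes "Bb * t \<le> x" shows "B.Pm (-x) = 0"
proof -
  have x0: "0 \<le> x" using assms Bbp tp by (smt (verit) mult_pos_pos)
  have "B.Pm (-x) = B.Phi 0 (-x)"
  proof (rule B.Pm_eq)
    show "-x \<in> {..0}" "0 \<le> (0::real)" using x0 by auto
    fix y :: real assume y: "0 \<le> y"
    have "0 \<le> integral {0..y} (\<lambda>e. (x - ub e * (t - e)) * rb e * ub e)"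
    proof (rule integral_nonneg)
      show "(\<lambda>e. (x - ub e * (t - e)) * rb e * ub e) integrable_on {0..y}" by (intro gd_integrable gdG) simp
      fix e assume e: "e \<in> {0..y}"
      have "ub e * (t - e) \<le> x"
      proof (cases "e \<le> t")
        case True
        have "ub e * (t - e) \<le> Bb * t" using ubb[of e] ubp[of e] e True tp
          by (intro mult_mono) auto
        then show ?thesis using assms by simp
      next
        case False
        then have "ub e * (t - e) \<le> 0" using ubp[of e] e by (intro mult_nonneg_nonpos) auto
        then show ?thesis using x0 by simp
      qed
      then show "0 \<le> (x - ub e * (t - e)) * rb e * ub e"
        using rbp[of e] ubp[of e] e by (intro mult_nonneg_nonneg) auto
    qed
    then show "B.Phi 0 (-x) \<le> B.Phi y (-x)" using Gint[of 0 y x] y by (simp add: BPhi Mb0 Bq0)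
  qed
  then show ?thesis by (simp add: BPhi Mb0 Bq0)
qed

lemma Dg_large: "\<exists>X\<ge>0. \<forall>x\<ge>X. Dg x < 0"
proof -
  have M1: "0 < M 1" using M_strict[of 0 1] M0 by simp
  define X where "X = max (Bb * t) (\<bar>AF 1\<bar> / M 1 + 1)"
  have "Dg x < 0" if "X \<le> x" for x
  proof -
    have x0: "0 \<le> x" using that M1 by (smt (verit) X_def divide_nonneg_pos abs_ge_zero)
    have "B.Pm (-x) = 0" using that by (intro BPm_zero) (simp add: X_def)
    moreover have "I.Pm x \<le> AF 1 - x * M 1" using I.Pm_le[of x 1] x0 by (simp add: IPhi)
    moreover have "\<bar>AF 1\<bar> < x * M 1"
    proof -
      have "\<bar>AF 1\<bar> / M 1 < x" using that by (simp add: X_def)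
      then show ?thesis using M1 by (simp add: field_simps)
    qed
    ultimately show ?thesis unfolding Dg_def by linarith
  qed
  moreover have "0 \<le> X" using Bbp tp by (simp add: X_def le_max_iff_disj)
  ultimately show ?thesis by blast
qed

definition "x0 = (if Dg 0 \<le> 0 then 0 else Sup {x. 0 \<le> x \<and> 0 < Dg x})"

lemma x0_props:
  shows x0_nn: "0 \<le> x0"
    and reg_lt: "\<And>x. 0 \<le> x \<Longrightarrow> x < x0 \<Longrightarrow> 0 < Dg x"
    and reg_ge: "\<And>x. x0 \<le> x \<Longrightarrow> Dg x \<le> 0"
    and x0_pos: "0 < x0 \<longleftrightarrow> 0 < Dg 0"
    and reg_x0: "0 < x0 \<Longrightarrow> Dg x0 = 0"
proof -
  define E where "E = {x. 0 \<le> x \<and> 0 < Dg x}"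
  obtain X where X: "0 \<le> X" "\<And>x. X \<le> x \<Longrightarrow> Dg x < 0" using Dg_large by blast
  have bdd: "bdd_above E"
  proof (rule bdd_aboveI[of _ X])
    fix x assume "x \<in> E"
    then have "0 < Dg x" by (simp add: E_def)
    then show "x \<le> X" using X(2)[of x] by force
  qed
  have "(0 \<le> x0) \<and> (\<forall>x. 0 \<le> x \<longrightarrow> x < x0 \<longrightarrow> 0 < Dg x) \<and> (\<forall>x. x0 \<le> x \<longrightarrow> Dg x \<le> 0)
      \<and> (0 < x0 \<longleftrightarrow> 0 < Dg 0) \<and> (0 < x0 \<longrightarrow> Dg x0 = 0)"
  proof (cases "Dg 0 \<le> 0")
    case True
    then have "x0 = 0" by (simp add: x0_def)
    moreover have "Dg x \<le> 0" if "0 \<le> x" for x using Dg_antimono[of 0 x] True that by simp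
    ultimately show ?thesis using True by (smt (verit))
  next
    case False
    then have x0E: "x0 = Sup E" by (simp add: x0_def E_def)
    have E0: "0 \<in> E" using False by (simp add: E_def)
    have Ene: "E \<noteq> {}" using E0 by blast
    have x0nn: "0 \<le> x0" using x0E cSup_upper[OF E0 bdd] by simp
    have lt: "0 < Dg x" if a: "0 \<le> x" "x < x0" for x
    proof -
      obtain e where e: "e \<in> E" "x < e" using less_cSup_iff[OF Ene bdd, of x] a x0E by auto
      then show ?thesis using Dg_antimono[of x e] a by (auto simp: E_def)
    qed
    have le: "Dg x0 \<le> 0"
    proof (rule ccontr)
      assume "\<not> Dg x0 \<le> 0"
      then have pos: "0 < Dg x0" by simp
      define C where "C = Cb (x0 + 1) + 1"
      have C: "0 < C" using Cb_nn[of "x0 + 1"] x0nn by (simp add: C_def)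
      define x where "x = x0 + min 1 (Dg x0 / (2 * C))"
      have xx: "x0 < x" "x \<le> x0 + 1" using pos C by (auto simp: x_def)
      have "\<bar>Dg x0 - Dg x\<bar> \<le> (x - x0) * Cb (x0 + 1)" using Dg_lip[of x0 x "x0 + 1"] x0nn xx by simp
      also have "\<dots> \<le> (x - x0) * C" using xx by (intro mult_left_mono) (auto simp: C_def)
      also have "\<dots> \<le> (Dg x0 / (2 * C)) * C" using C xx by (intro mult_right_mono) (auto simp: x_def)
      also have "\<dots> = Dg x0 / 2" using C by simp
      finally have "0 < Dg x" using pos unfolding abs_le_iff by linarith
      then have "x \<in> E" using xx x0nn by (simp add: E_def)
      then have "x \<le> x0" using cSup_upper[OF _ bdd] x0E by simp
      then show False using xx by simp
    qed
    have ge: "Dg x \<le> 0" if "x0 \<le> x" for x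
    proof (cases "x = x0")
      case True then show ?thesis using le by simp
    next
      case False
      then have "x0 < x" using that by simp
      then have "x \<notin> E" using cSup_upper[OF _ bdd, of x] x0E by auto
      then show ?thesis using \<open>x0 < x\<close> x0nn by (simp add: E_def)
    qed
    have x0p: "0 < x0"
    proof -
      define C where "C = Cb 1 + 1"
      have C: "0 < C" using Cb_nn[of 1] by (simp add: C_def)
      define x where "x = min 1 (Dg 0 / (2 * C))"
      have xx: "0 < x" "x \<le> 1" using False C by (auto simp: x_def)
      have "\<bar>Dg 0 - Dg x\<bar> \<le> (x - 0) * Cb 1" using Dg_lip[of 0 x 1] xx by simp
      also have "\<dots> \<le> x * C" using xx by (simp add: C_def)
      also have "\<dots> \<le> (Dg 0 / (2 * C)) * C" using C xx by (intro mult_right_mono) (auto simp: x_def)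
      also have "\<dots> = Dg 0 / 2" using C by simp
      finally have "0 < Dg x" using False unfolding abs_le_iff by linarith
      then have "x \<in> E" using xx by (simp add: E_def)
      then have "x \<le> x0" using cSup_upper[OF _ bdd] x0E by simp
      then show ?thesis using xx by simp
    qed
    have ge0: "0 \<le> Dg x0"
    proof (rule field_le_epsilon)
      fix k :: real assume k: "0 < k"
      define C where "C = Cb x0 + 1"
      have C: "0 < C" using Cb_nn[of x0] x0nn by (simp add: C_def)
      define x where "x = x0 - min x0 (k / C) / 2"
      have xx: "0 \<le> x" "x < x0" "x0 - x \<le> k / C" using x0p k C by (auto simp: x_def min_def field_simps)
      have "\<bar>Dg x - Dg x0\<bar> \<le> (x0 - x) * Cb x0" using Dg_lip[of x x0 x0] xx by simp
      also have "\<dots> \<le> (x0 - x) * C" using xx by (intro mult_left_mono) (auto simp: C_def)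
      also have "\<dots> \<le> (k / C) * C" using C xx by (intro mult_right_mono) auto
      also have "\<dots> = k" using C by simp
      finally show "0 \<le> Dg x0 + k" using lt[OF xx(1,2)] unfolding abs_le_iff by linarith
    qed
    have "Dg x0 = 0" using le ge0 by linarith
    then show ?thesis using x0nn lt ge x0p False by auto
  qed
  then show "0 \<le> x0" "\<And>x. 0 \<le> x \<Longrightarrow> x < x0 \<Longrightarrow> 0 < Dg x" "\<And>x. x0 \<le> x \<Longrightarrow> Dg x \<le> 0"
    "0 < x0 \<longleftrightarrow> 0 < Dg 0" "0 < x0 \<Longrightarrow> Dg x0 = 0" by auto
qed

lemma R1: assumes "x0 < x" "Dg x = 0" shows "B.hi (-x) = 0" "I.lo x = 0"
proof -
  define x' where "x' = (x0 + x) / 2"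
  have xx: "x0 < x'" "x' < x" "0 \<le> x'" using assms x0_nn by (auto simp: x'_def)
  have "Dg x' \<le> 0" using reg_ge xx by simp
  have f1: "I.Pm x \<le> I.Pm x'" using I.Pm_antimono[of x' x] xx by simp
  have g1: "B.Pm (-x') \<le> B.Pm (-x)" using B.Pm_antimono[of "-x" "-x'"] xx by simp
  have eqs: "I.Pm x' = I.Pm x" "B.Pm (-x') = B.Pm (-x)"
    using f1 g1 \<open>Dg x' \<le> 0\<close> assms(2) unfolding Dg_def by linarith+
  have hB: "B.hi (-x) \<in> B.S (-x)" using B.hi_in[of "-x"] xx by simp
  have "B.Pm (-x') \<le> B.Pm (-x) - (x - x') * Mb (B.hi (-x))"
    using B.Pm_step[of "-x" "-x'" "B.hi (-x)"] hB xx by simp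
  then have "Mb (B.hi (-x)) \<le> 0" using eqs xx by (smt (verit) mult_pos_pos)
  moreover have "0 \<le> B.hi (-x)" using hB by (simp add: B.S_def)
  ultimately show "B.hi (-x) = 0" using Mb_strict[of 0 "B.hi (-x)"] Mb0 by (cases "B.hi (-x) = 0") auto
  have hI: "I.hi x' \<in> I.S x'" using I.hi_in[of x'] xx by simp
  have "I.Pm x \<le> I.Pm x' - (x - x') * M (I.hi x')"
    using I.Pm_step[of x' x "I.hi x'"] hI xx by simp
  then have "M (I.hi x') \<le> 0" using eqs xx by (smt (verit) mult_pos_pos)
  moreover have "0 \<le> I.hi x'" using hI by (simp add: I.S_def)
  ultimately have "I.hi x' = 0" using M_strict[of 0 "I.hi x'"] M0 by (cases "I.hi x' = 0") auto
  then have "I.Pm x' = 0" using I.S_Pm[OF _ hI] xx by (simp add: IPhi AF0 M0)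
  then have "I.Pm x = I.Phi 0 x" using eqs by (simp add: IPhi AF0 M0)
  then have "0 \<in> I.S x" by (simp add: I.S_def)
  then show "I.lo x = 0" using I.lo_le[of x 0] I.lo_nn[of x] xx by simp
qed

lemma R2: assumes "0 < x" "x < x0" shows "0 < B.hi (-x)"
proof (rule ccontr)
  assume "\<not> ?thesis"
  then have "B.hi (-x) = 0" using B.hi_in[of "-x"] assms by (simp add: B.S_def)
  then have "B.Pm (-x) = 0" using B.S_Pm[of "-x" "B.hi (-x)"] B.hi_in[of "-x"] assms by (simp add: BPhi Mb0 Bq0)
  moreover have "I.Pm x \<le> 0" using I.Pm_le[of x 0] assms by (simp add: IPhi AF0 M0)
  moreover have "0 < Dg x" using reg_lt assms by simp
  ultimately show False by (simp add: Dg_def)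
qed

lemma LI1: "0 \<le> a \<Longrightarrow> a \<le> b \<Longrightarrow> (LINT e:{a..b}|lborel. r0 e * u0 e) = P b - P a"
  unfolding P_def by (simp add: gd_LINT[OF gd_Pi] gd_diff_int[OF gd_Pi])
lemma LI2: "0 \<le> a \<Longrightarrow> a \<le> b \<Longrightarrow> (LINT e:{a..b}|lborel. r0 e) = M b - M a"
  unfolding M_def by (simp add: gd_LINT[OF gd_r0] gd_diff_int[OF gd_r0])
lemma LI3: "0 \<le> a \<Longrightarrow> a \<le> b \<Longrightarrow> (LINT e:{a..b}|lborel. rb e * (ub e)\<^sup>2) = Pb b - Pb a"
  unfolding Pb_def by (simp add: gd_LINT[OF gd_Pbi] gd_diff_int[OF gd_Pbi])
lemma LI4: "0 \<le> a \<Longrightarrow> a \<le> b \<Longrightarrow> (LINT e:{a..b}|lborel. rb e * ub e) = Mb b - Mb a"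
  unfolding Mb_def by (simp add: gd_LINT[OF gd_rbub] gd_diff_int[OF gd_rbub])

lemma ue_eq: "ue u0 ub r0 rb x t = (Pb (B.hi (-x)) + P (I.hi x)) / (Mb (B.hi (-x)) + M (I.hi x))"
  unfolding ue_def thi_eq yhi_eq Pb_def P_def Mb_def M_def
  by (simp add: gd_LINT[OF gd_Pi] gd_LINT[OF gd_r0] gd_LINT[OF gd_Pbi] gd_LINT[OF gd_rbub])

definition "U0 x = (if I.lo x = I.hi x then (x - I.lo x) / t else (P (I.hi x) - P (I.lo x)) / (M (I.hi x) - M (I.lo x)))"
definition "Ub x = (if B.lo (-x) = B.hi (-x) then x / (t - B.lo (-x))
    else (Pb (B.hi (-x)) - Pb (B.lo (-x))) / (Mb (B.hi (-x)) - Mb (B.lo (-x))))"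

lemma vel_pos: assumes "0 < x"
  shows "vel u0 ub r0 rb x t = (if Dg x < 0 then U0 x else if 0 < Dg x then Ub x
     else if I.hi x \<noteq> 0 \<or> B.hi (-x) \<noteq> 0 then (Pb (B.hi (-x)) + P (I.hi x)) / (Mb (B.hi (-x)) + M (I.hi x)) else x / t)"
proof -
  have x: "0 \<le> x" "x \<in> {0..}" "-x \<in> {..0}" using assms by auto
  have l1: "(LINT e:{I.lo x..I.hi x}|lborel. r0 e * u0 e) = P (I.hi x) - P (I.lo x)"
    using I.lo_nn[OF x(2)] I.lo_le_hi[OF x(2)] by (rule LI1)
  have l2: "(LINT e:{I.lo x..I.hi x}|lborel. r0 e) = M (I.hi x) - M (I.lo x)"
    using I.lo_nn[OF x(2)] I.lo_le_hi[OF x(2)] by (rule LI2)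
  have l3: "(LINT e:{B.lo (-x)..B.hi (-x)}|lborel. rb e * (ub e)\<^sup>2) = Pb (B.hi (-x)) - Pb (B.lo (-x))"
    using B.lo_nn[OF x(3)] B.lo_le_hi[OF x(3)] by (rule LI3)
  have l4: "(LINT e:{B.lo (-x)..B.hi (-x)}|lborel. rb e * ub e) = Mb (B.hi (-x)) - Mb (B.lo (-x))"
    using B.lo_nn[OF x(3)] B.lo_le_hi[OF x(3)] by (rule LI4)
  show ?thesis
    unfolding vel_def Let_def Fm_eq Gm_eq ylo_eq yhi_eq tlo_eq thi_eq ue_eq l1 l2 l3 l4 U0_def Ub_def Dg_def
    using assms by auto
qed

lemma vel_init: assumes "0 < x" "x0 < x" shows "vel u0 ub r0 rb x t = U0 x"
proof -
  have "Dg x \<le> 0" using reg_ge assms by simp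
  show ?thesis
  proof (cases "Dg x < 0")
    case True then show ?thesis using vel_pos[OF assms(1)] by simp
  next
    case False
    then have D0: "Dg x = 0" using \<open>Dg x \<le> 0\<close> by simp
    have h: "B.hi (-x) = 0" "I.lo x = 0" using R1[OF assms(2) D0] by auto
    show ?thesis using vel_pos[OF assms(1)] D0 h by (auto simp: U0_def Mb0 Pb0 M0 P0)
  qed
qed

lemma vel_bdry: assumes "0 < x" "x < x0" shows "vel u0 ub r0 rb x t = Ub x"
  using vel_pos[OF assms(1)] reg_lt[of x] assms by simp

lemma vel_x0: assumes "0 < x0"
  shows "vel u0 ub r0 rb x0 t * (M (I.hi x0) + Mb (B.hi (-x0))) = P (I.hi x0) + Pb (B.hi (-x0))"
proof -
  have D0: "Dg x0 = 0" using reg_x0 assms by simp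
  have x: "x0 \<in> {0..}" "-x0 \<in> {..0}" using assms by auto
  have nn: "0 \<le> I.hi x0" "0 \<le> B.hi (-x0)" using I.lo_nn[OF x(1)] I.lo_le_hi[OF x(1)] B.lo_nn[OF x(2)] B.lo_le_hi[OF x(2)] by auto
  show ?thesis
  proof (cases "I.hi x0 \<noteq> 0 \<or> B.hi (-x0) \<noteq> 0")
    case True
    have "0 < M (I.hi x0) + Mb (B.hi (-x0))"
    proof (cases "I.hi x0 = 0")
      case True
      then have "0 < B.hi (-x0)" using \<open>I.hi x0 \<noteq> 0 \<or> B.hi (-x0) \<noteq> 0\<close> nn by simp
      then show ?thesis using Mb_strict[of 0 "B.hi (-x0)"] True by (simp add: M0 Mb0)
    next
      case False
      then have "0 < I.hi x0" using nn by simp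
      then show ?thesis using M_strict[of 0 "I.hi x0"] B.M_nonneg[OF nn(2)] by (simp add: M0)
    qed
    then show ?thesis using vel_pos[OF assms] D0 True by (simp add: add.commute)
  next
    case False
    then show ?thesis by (simp add: M0 Mb0 P0 Pb0)
  qed
qed

lemma vel0_lt: "Dg 0 < 0 \<Longrightarrow> vel u0 ub r0 rb 0 t = 0"
  unfolding vel_def Let_def Fm_eq Gm_eq Dg_def by auto

lemma vel0_eq: assumes "Dg 0 = 0"
  shows "vel u0 ub r0 rb 0 t * (M (I.hi 0) + Mb t) = P (I.hi 0) + Pb t"
proof -
  have "0 \<le> I.hi 0" using I.lo_nn[of 0] I.lo_le_hi[of 0] by simp
  then have "0 < M (I.hi 0) + Mb t" using Mb_strict[of 0 t] tp I.M_nonneg by (simp add: Mb0 add_nonneg_pos)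
  moreover have "vel u0 ub r0 rb 0 t = (Pb t + P (I.hi 0)) / (Mb t + M (I.hi 0))"
    unfolding vel_def Let_def Fm_eq Gm_eq using assms by (simp add: Dg_def ue_eq Bhi0)
  ultimately show ?thesis by (simp add: add.commute)
qed

lemma mass_pos: "0 < x \<Longrightarrow> mass u0 ub r0 rb x t = (if x < x0 then - Mb (B.lo (-x)) else M (I.lo x))"
  unfolding mass_def Fm_eq Gm_eq ylo_eq tlo_eq
  using reg_lt[of x] reg_ge[of x] I.lo_nn[of x] B.lo_nn[of "-x"]
  by (auto simp: Dg_def LI2 LI4 M0 Mb0)

lemma mass0: "mass u0 ub r0 rb 0 t = - Mb t"
  unfolding mass_def tlo_eq by (simp add: Blo0 LI4 Mb0 tp less_imp_le)
end


lemma lip_uc: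
  fixes f :: "real \<Rightarrow> real"
  assumes "\<exists>L. \<forall>y1\<in>{0..b}. \<forall>y2\<in>{0..b}. \<bar>f y1 - f y2\<bar> \<le> L * \<bar>y1 - y2\<bar>" "0 < e"
  shows "\<exists>d>0. \<forall>y1\<in>{0..b}. \<forall>y2\<in>{0..b}. \<bar>y1 - y2\<bar> < d \<longrightarrow> \<bar>f y1 - f y2\<bar> < e"
proof -
  obtain L where L: "\<forall>y1\<in>{0..b}. \<forall>y2\<in>{0..b}. \<bar>f y1 - f y2\<bar> \<le> L * \<bar>y1 - y2\<bar>" using assms by blast
  show ?thesis
  proof (intro exI[of _ "e / (\<bar>L\<bar> + 1)"] conjI ballI impI)
    show "0 < e / (\<bar>L\<bar> + 1)" using assms by simp
    fix y1 y2 assume y: "y1 \<in> {0..b}" "y2 \<in> {0..b}" "\<bar>y1 - y2\<bar> < e / (\<bar>L\<bar> + 1)"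
    have "\<bar>f y1 - f y2\<bar> \<le> L * \<bar>y1 - y2\<bar>" using L y by blast
    also have "\<dots> \<le> (\<bar>L\<bar> + 1) * \<bar>y1 - y2\<bar>" by (intro mult_right_mono) auto
    also have "\<dots> < (\<bar>L\<bar> + 1) * (e / (\<bar>L\<bar> + 1))" using y by (intro mult_strict_left_mono) auto
    also have "\<dots> = e" by simp
    finally show "\<bar>f y1 - f y2\<bar> < e" .
  qed
qed

context setting begin

lemma uc4: assumes "0 < e"
  shows "\<exists>d>0. \<forall>y1\<in>{0..b}. \<forall>y2\<in>{0..b}. \<bar>y1 - y2\<bar> < d \<longrightarrow>
     \<bar>M y1 - M y2\<bar> < e \<and> \<bar>Mb y1 - Mb y2\<bar> < e \<and> \<bar>P y1 - P y2\<bar> < e \<and> \<bar>Pb y1 - Pb y2\<bar> < e"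
proof -
  obtain d1 where d1: "d1 > 0" "\<forall>y1\<in>{0..b}. \<forall>y2\<in>{0..b}. \<bar>y1 - y2\<bar> < d1 \<longrightarrow> \<bar>M y1 - M y2\<bar> < e"
    using lip_uc[OF gd_lip[OF gd_r0] assms] unfolding M_def by blast
  obtain d2 where d2: "d2 > 0" "\<forall>y1\<in>{0..b}. \<forall>y2\<in>{0..b}. \<bar>y1 - y2\<bar> < d2 \<longrightarrow> \<bar>Mb y1 - Mb y2\<bar> < e"
    using lip_uc[OF gd_lip[OF gd_rbub] assms] unfolding Mb_def by blast
  obtain d3 where d3: "d3 > 0" "\<forall>y1\<in>{0..b}. \<forall>y2\<in>{0..b}. \<bar>y1 - y2\<bar> < d3 \<longrightarrow> \<bar>P y1 - P y2\<bar> < e"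
    using lip_uc[OF gd_lip[OF gd_Pi] assms] unfolding P_def by blast
  obtain d4 where d4: "d4 > 0" "\<forall>y1\<in>{0..b}. \<forall>y2\<in>{0..b}. \<bar>y1 - y2\<bar> < d4 \<longrightarrow> \<bar>Pb y1 - Pb y2\<bar> < e"
    using lip_uc[OF gd_lip[OF gd_Pbi] assms] unfolding Pb_def by blast
  show ?thesis
    using d1 d2 d3 d4 by (intro exI[of _ "min (min d1 d2) (min d3 d4)"]) auto
qed

definition "Fr0 x = (if x < x0 then - Mb (B.lo (-x)) else M (I.hi x))"
definition "FrL x = (if x \<le> x0 then - Mb (B.hi (-x)) else M (I.lo x))"
definition "Q x = (if x < x0 then - Pb (B.lo (-x)) else P (I.hi x))"
definition "QL x = (if x \<le> x0 then - Pb (B.hi (-x)) else P (I.lo x))"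

lemma Blo_le_t: "0 \<le> x \<Longrightarrow> B.lo (-x) \<le> t"
  using B.lo_le_hi[of "-x"] B.hi_le_R[of "-x"] by simp
lemma Bhi_le_t: "0 \<le> x \<Longrightarrow> B.hi (-x) \<le> t"
  using B.hi_le_R[of "-x"] by simp

lemma rc: assumes x: "0 \<le> x" and e: "0 < e"
  shows "\<exists>d>0. \<forall>z. x < z \<and> z < x + d \<longrightarrow>
    \<bar>Fr0 z - Fr0 x\<bar> < e \<and> \<bar>mass u0 ub r0 rb z t - Fr0 x\<bar> < e \<and> \<bar>Q z - Q x\<bar> < e"
proof (cases "x0 \<le> x")
  case True
  obtain h where h: "h > 0" "\<forall>y1\<in>{0..I.hi x + 1}. \<forall>y2\<in>{0..I.hi x + 1}. \<bar>y1 - y2\<bar> < h \<longrightarrow>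
     \<bar>M y1 - M y2\<bar> < e \<and> \<bar>Mb y1 - Mb y2\<bar> < e \<and> \<bar>P y1 - P y2\<bar> < e \<and> \<bar>Pb y1 - Pb y2\<bar> < e"
    using uc4[OF e] by blast
  obtain d where d: "d > 0" "\<forall>x2\<in>{0..}. x < x2 \<and> x2 < x + d \<longrightarrow> I.hi x2 < I.hi x + min h 1"
    using I.right_lim[of x "min h 1"] x h by auto
  show ?thesis
  proof (intro exI[of _ d] conjI allI impI)
    show "0 < d" by fact
    fix z assume z: "x < z \<and> z < x + d"
    have zD: "z \<in> {0..}" using z x by auto
    have hx: "0 \<le> I.hi x" using I.lo_nn[of x] I.lo_le_hi[of x] x by simp
    have a: "I.hi x \<le> I.lo z" using I.hi_le_lo[of x z] x z by simp
    have b: "I.lo z \<le> I.hi z" using I.lo_le_hi[OF zD] .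
    have c: "I.hi z < I.hi x + min h 1" using d zD z by blast
    have r1: "\<bar>I.hi z - I.hi x\<bar> < h" "\<bar>I.lo z - I.hi x\<bar> < h" using a b c by auto
    have in1: "I.hi z \<in> {0..I.hi x + 1}" "I.lo z \<in> {0..I.hi x + 1}" "I.hi x \<in> {0..I.hi x + 1}"
      using a b c hx by auto
    have Fz: "Fr0 z = M (I.hi z)" "Fr0 x = M (I.hi x)" "Q z = P (I.hi z)" "Q x = P (I.hi x)"
      using True z by (auto simp: Fr0_def Q_def)
    have mz: "mass u0 ub r0 rb z t = M (I.lo z)" using mass_pos[of z] True z x by auto
    have h1: "\<bar>M (I.hi z) - M (I.hi x)\<bar> < e \<and> \<bar>P (I.hi z) - P (I.hi x)\<bar> < e"
      using h(2)[rule_format, OF in1(1) in1(3) r1(1)] by simp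
    have h2: "\<bar>M (I.lo z) - M (I.hi x)\<bar> < e"
      using h(2)[rule_format, OF in1(2) in1(3) r1(2)] by simp
    show "\<bar>Fr0 z - Fr0 x\<bar> < e" using h1 Fz by simp
    show "\<bar>mass u0 ub r0 rb z t - Fr0 x\<bar> < e" using h2 Fz mz by simp
    show "\<bar>Q z - Q x\<bar> < e" using h1 Fz by simp
  qed
next
  case False
  then have xx0: "x < x0" by simp
  obtain h where h: "h > 0" "\<forall>y1\<in>{0..t}. \<forall>y2\<in>{0..t}. \<bar>y1 - y2\<bar> < h \<longrightarrow>
     \<bar>M y1 - M y2\<bar> < e \<and> \<bar>Mb y1 - Mb y2\<bar> < e \<and> \<bar>P y1 - P y2\<bar> < e \<and> \<bar>Pb y1 - Pb y2\<bar> < e"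
    using uc4[OF e] by blast
  obtain d where d: "d > 0" "\<forall>x1\<in>{..0}. -x - d < x1 \<and> x1 < -x \<longrightarrow> B.lo (-x) - h < B.lo x1"
    using B.left_lim[of "-x" h] x h by auto
  show ?thesis
  proof (intro exI[of _ "min d (x0 - x)"] conjI allI impI)
    show "0 < min d (x0 - x)" using d xx0 by simp
    fix z assume z: "x < z \<and> z < x + min d (x0 - x)"
    have zz: "x < z" "z < x0" "z < x + d" using z by linarith+
    have zD: "-z \<in> {..0}" using zz x by auto
    have "-x - d < -z \<and> -z < -x" using zz by linarith
    then have a: "B.lo (-x) - h < B.lo (-z)" using d(2) zD by blast
    have b: "B.lo (-z) \<le> B.lo (-x)" using B.lo_mono[of "-z" "-x"] z x by simp
    have in1: "B.lo (-z) \<in> {0..t}" "B.lo (-x) \<in> {0..t}"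
      using B.lo_nn[OF zD] B.lo_nn[of "-x"] x zz Blo_le_t[of z] Blo_le_t[of x] by auto
    have r1: "\<bar>B.lo (-z) - B.lo (-x)\<bar> < h" using a b by linarith
    have Fz: "Fr0 z = - Mb (B.lo (-z))" "Fr0 x = - Mb (B.lo (-x))" "Q z = - Pb (B.lo (-z))" "Q x = - Pb (B.lo (-x))"
      using xx0 zz by (simp_all add: Fr0_def Q_def)
    have "0 < z" using zz x by linarith
    then have mz: "mass u0 ub r0 rb z t = - Mb (B.lo (-z))" using mass_pos[of z] zz by simp
    have "\<bar>Mb (B.lo (-z)) - Mb (B.lo (-x))\<bar> < e" "\<bar>Pb (B.lo (-z)) - Pb (B.lo (-x))\<bar> < e"
      using h(2)[rule_format, OF in1(1) in1(2) r1] by simp_all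
    then show "\<bar>Fr0 z - Fr0 x\<bar> < e" "\<bar>mass u0 ub r0 rb z t - Fr0 x\<bar> < e" "\<bar>Q z - Q x\<bar> < e"
      using Fz mz by auto
  qed
qed

lemma lc: assumes x: "0 < x" and e: "0 < e"
  shows "\<exists>d>0. d \<le> x \<and> (\<forall>z. x - d < z \<and> z < x \<longrightarrow> \<bar>Fr0 z - FrL x\<bar> < e \<and> \<bar>Q z - QL x\<bar> < e)"
proof (cases "x0 < x")
  case True
  obtain h where h: "h > 0" "\<forall>y1\<in>{0..I.lo x + 1}. \<forall>y2\<in>{0..I.lo x + 1}. \<bar>y1 - y2\<bar> < h \<longrightarrow>
     \<bar>M y1 - M y2\<bar> < e \<and> \<bar>Mb y1 - Mb y2\<bar> < e \<and> \<bar>P y1 - P y2\<bar> < e \<and> \<bar>Pb y1 - Pb y2\<bar> < e"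
    using uc4[OF e] by blast
  obtain d where d: "d > 0" "\<forall>x1\<in>{0..}. x - d < x1 \<and> x1 < x \<longrightarrow> I.lo x - min h 1 < I.lo x1"
    using I.left_lim[of x "min h 1"] x h by auto
  define d' where "d' = min d (min (x - x0) x)"
  show ?thesis
  proof (intro exI[of _ d'] conjI allI impI)
    show "0 < d'" using d True x unfolding d'_def by simp
    show "d' \<le> x" unfolding d'_def by linarith
    fix z assume z: "x - d' < z \<and> z < x"
    have dd: "d' \<le> d" "d' \<le> x - x0" "d' \<le> x" unfolding d'_def by linarith+
    have zz: "x - d < z" "x0 < z" "0 < z" "z < x" using z dd by linarith+
    have zD: "z \<in> {0..}" "x0 < z" using zz by auto
    have a: "I.hi z \<le> I.lo x" using I.hi_le_lo[of z x] x zz by simp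
    have b: "I.lo z \<le> I.hi z" using I.lo_le_hi zD by simp
    have c: "I.lo x - min h 1 < I.lo z" using d(2) zD zz by blast
    have r1: "\<bar>I.hi z - I.lo x\<bar> < h" using a b c by auto
    have in1: "I.hi z \<in> {0..I.lo x + 1}" "I.lo x \<in> {0..I.lo x + 1}"
      using a b I.lo_nn[OF zD(1)] I.lo_nn[of x] x by auto
    have Fz: "Fr0 z = M (I.hi z)" "FrL x = M (I.lo x)" "Q z = P (I.hi z)" "QL x = P (I.lo x)"
      using True zD by (simp_all add: Fr0_def FrL_def Q_def QL_def)
    have "\<bar>M (I.hi z) - M (I.lo x)\<bar> < e" "\<bar>P (I.hi z) - P (I.lo x)\<bar> < e"
      using h(2)[rule_format, OF in1(1) in1(2) r1] by simp_all
    then show "\<bar>Fr0 z - FrL x\<bar> < e" "\<bar>Q z - QL x\<bar> < e" using Fz by simp_all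
  qed
next
  case False
  then have xx0: "x \<le> x0" by simp
  obtain h where h: "h > 0" "\<forall>y1\<in>{0..t}. \<forall>y2\<in>{0..t}. \<bar>y1 - y2\<bar> < h \<longrightarrow>
     \<bar>M y1 - M y2\<bar> < e \<and> \<bar>Mb y1 - Mb y2\<bar> < e \<and> \<bar>P y1 - P y2\<bar> < e \<and> \<bar>Pb y1 - Pb y2\<bar> < e"
    using uc4[OF e] by blast
  obtain d where d: "d > 0" "\<forall>x2\<in>{..0}. -x < x2 \<and> x2 < -x + d \<longrightarrow> B.hi x2 < B.hi (-x) + h"
    using B.right_lim[of "-x" h] x h by auto
  define d' where "d' = min d x"
  show ?thesis
  proof (intro exI[of _ d'] conjI allI impI)
    show "0 < d'" using d x unfolding d'_def by simp
    show "d' \<le> x" unfolding d'_def by linarith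
    fix z assume z: "x - d' < z \<and> z < x"
    have dd: "d' \<le> d" "d' \<le> x" unfolding d'_def by linarith+
    have zz: "x - d < z" "0 < z" "z < x" using z dd by linarith+
    have z0: "0 < z" using zz by simp
    have zD: "-z \<in> {..0}" using z0 by auto
    have "-x < -z \<and> -z < -x + d" using zz by linarith
    then have a: "B.hi (-z) < B.hi (-x) + h" using d(2) zD by blast
    have b: "B.hi (-x) \<le> B.lo (-z)" using B.hi_le_lo[of "-x" "-z"] zz x by simp
    have c: "B.lo (-z) \<le> B.hi (-z)" using B.lo_le_hi zD by simp
    have in1: "B.lo (-z) \<in> {0..t}" "B.hi (-x) \<in> {0..t}"
      using B.lo_nn[OF zD] Blo_le_t[of z] Bhi_le_t[of x] b z0 x B.lo_nn[of "-x"] B.lo_le_hi[of "-x"] by auto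
    have r1: "\<bar>B.lo (-z) - B.hi (-x)\<bar> < h" using a b c by auto
    have Fz: "Fr0 z = - Mb (B.lo (-z))" "FrL x = - Mb (B.hi (-x))" "Q z = - Pb (B.lo (-z))" "QL x = - Pb (B.hi (-x))"
      using xx0 zz by (simp_all add: Fr0_def FrL_def Q_def QL_def)
    have "\<bar>Mb (B.lo (-z)) - Mb (B.hi (-x))\<bar> < e" "\<bar>Pb (B.lo (-z)) - Pb (B.hi (-x))\<bar> < e"
      using h(2)[rule_format, OF in1(1) in1(2) r1] by simp_all
    then show "\<bar>Fr0 z - FrL x\<bar> < e" "\<bar>Q z - QL x\<bar> < e" using Fz by auto
  qed
qed

lemma massR_eq: assumes "0 \<le> x" shows "massR u0 ub r0 rb x t = Fr0 x"
  unfolding massR_def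
proof (rule tendsto_Lim[OF trivial_limit_at_right_real])
  show "((\<lambda>z. mass u0 ub r0 rb z t) \<longlongrightarrow> Fr0 x) (at_right x)"
  proof (rule tendstoI)
    fix e :: real assume "0 < e"
    then obtain d where d: "d > 0" "\<forall>z. x < z \<and> z < x + d \<longrightarrow> \<bar>mass u0 ub r0 rb z t - Fr0 x\<bar> < e"
      using rc[OF assms] by blast
    show "\<forall>\<^sub>F z in at_right x. dist (mass u0 ub r0 rb z t) (Fr0 x) < e"
      unfolding eventually_at_right_field using d by (intro exI[of _ "x + d"]) (auto simp: dist_real_def)
  qed
qed

lemma Fr0_mono: assumes "0 \<le> x1" "x1 \<le> x2" shows "Fr0 x1 \<le> Fr0 x2"
proof -
  have a: "- Mb (B.lo (-x)) \<le> 0" if "0 \<le> x" for x using B.M_nonneg[OF B.lo_nn[of "-x"]] that by simp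
  have b: "0 \<le> M (I.hi x)" if "0 \<le> x" for x using I.M_nonneg[of "I.hi x"] I.lo_nn[of x] I.lo_le_hi[of x] that by simp
  show ?thesis
  proof (cases "x2 < x0")
    case True
    then have "x1 < x0" using assms by simp
    have "B.lo (-x2) \<le> B.lo (-x1)" using B.lo_mono[of "-x2" "-x1"] assms by simp
    then have "Mb (B.lo (-x2)) \<le> Mb (B.lo (-x1))" using B.M_mono B.lo_nn[of "-x2"] assms by simp
    then show ?thesis using True \<open>x1 < x0\<close> by (simp add: Fr0_def)
  next
    case False
    show ?thesis
    proof (cases "x1 < x0")
      case True then show ?thesis using False a[of x1] b[of x2] assms by (simp add: Fr0_def)
    next
      case False2: False
      have "I.hi x1 \<le> I.hi x2" using I.hi_mono[of x1 x2] assms by simp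
      then have "M (I.hi x1) \<le> M (I.hi x2)" using I.M_mono I.lo_nn[of x1] I.lo_le_hi[of x1] assms by simp
      then show ?thesis using False False2 by (simp add: Fr0_def)
    qed
  qed
qed

definition "Fr x = massR u0 ub r0 rb (max x 0) t"

lemma Fr_eq: "Fr x = Fr0 (max x 0)" unfolding Fr_def by (simp add: massR_eq)

lemma Fr_mono: "x \<le> y \<Longrightarrow> Fr x \<le> Fr y"
  unfolding Fr_eq by (intro Fr0_mono) auto

lemma Fr_rc: "continuous (at_right a) Fr"
  unfolding continuous_within
proof (rule tendstoI)
  fix e :: real assume e: "0 < e"
  show "\<forall>\<^sub>F z in at_right a. dist (Fr z) (Fr a) < e"
  proof (cases "a < 0")
    case True
    show ?thesis unfolding eventually_at_right_field using True e
      by (intro exI[of _ 0]) (auto simp: Fr_eq)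
  next
    case False
    then obtain d where d: "d > 0" "\<forall>z. a < z \<and> z < a + d \<longrightarrow> \<bar>Fr0 z - Fr0 a\<bar> < e"
      using rc[of a e] e by auto
    show ?thesis unfolding eventually_at_right_field using d False
      by (intro exI[of _ "a + d"]) (auto simp: Fr_eq dist_real_def)
  qed
qed

lemma rhoLS_eq: "rhoLS u0 ub r0 rb t = interval_measure Fr"
  unfolding rhoLS_def Fr_def ..

end


locale imF =
  fixes F :: "real \<Rightarrow> real"
  assumes Fmono: "\<And>x y. x \<le> y \<Longrightarrow> F x \<le> F y"
  and Frc: "\<And>a. continuous (at_right a) F"
begin

abbreviation "mu \<equiv> interval_measure F"

lemma em_Ioc: "a \<le> b \<Longrightarrow> emeasure mu {a<..b} = ennreal (F b - F a)"
  by (rule emeasure_interval_measure_Ioc) (auto intro: Fmono Frc)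

lemma m_Ioc: "a \<le> b \<Longrightarrow> measure mu {a<..b} = F b - F a"
  using em_Ioc[of a b] Fmono[of a b] by (simp add: measure_def)

lemma fin_Ioc: "emeasure mu {a<..b} \<noteq> \<infinity>"
  by (cases "a \<le> b") (auto simp: em_Ioc)

lemma fin_sub: assumes "A \<subseteq> {a<..b}" "A \<in> sets borel" shows "emeasure mu A \<noteq> \<infinity>"
proof -
  have "emeasure mu A \<le> emeasure mu {a<..b}" by (rule emeasure_mono) (use assms in auto)
  then show ?thesis using fin_Ioc[of a b] by (auto simp: top_unique)
qed

lemma left_bounds: assumes "(F \<longlongrightarrow> L) (at_left x)" shows "L \<le> F x" "c < x \<Longrightarrow> F c \<le> L"
proof -
  show "L \<le> F x"
    by (rule tendsto_upperbound[OF assms]) (auto simp: eventually_at_left_field intro!: exI[of _ "x - 1"] Fmono)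
  assume "c < x"
  show "F c \<le> L"
    by (rule tendsto_lowerbound[OF assms]) (use \<open>c < x\<close> in \<open>auto simp: eventually_at_left_field intro!: exI[of _ c] Fmono\<close>)
qed

lemma em_Ioo: assumes L: "(F \<longlongrightarrow> L) (at_left x)" and cx: "c < x"
  shows "emeasure mu {c<..<x} = ennreal (L - F c)"
proof -
  define s where "s n = x - (x - c) / (real n + 2)" for n
  have s_lt: "s n < x" for n using cx by (simp add: s_def)
  have s_gt: "c < s n" for n
  proof -
    have "(x - c) / (real n + 2) < (x - c) / 1" by (rule divide_strict_left_mono) (use cx in auto)
    then show ?thesis by (simp add: s_def)
  qed
  have s_mono: "s n \<le> s m" if "n \<le> m" for n m
  proof -
    have "(x - c) / (real m + 2) \<le> (x - c) / (real n + 2)"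
      using cx that by (intro divide_left_mono) auto
    then show ?thesis by (simp add: s_def)
  qed
  have s_lim: "s \<longlonglongrightarrow> x" unfolding s_def by real_asymp
  define A where "A n = {c<..s n}" for n
  have incA: "incseq A"
  proof (rule incseq_SucI)
    fix n show "A n \<subseteq> A (Suc n)" using s_mono[of n "Suc n"] by (auto simp: A_def)
  qed
  have UA: "(\<Union>n. A n) = {c<..<x}"
  proof
    show "(\<Union>n. A n) \<subseteq> {c<..<x}"
    proof
      fix z assume "z \<in> (\<Union>n. A n)"
      then obtain n where "z \<in> A n" by blast
      then show "z \<in> {c<..<x}" using s_lt[of n] by (auto simp: A_def)
    qed
    show "{c<..<x} \<subseteq> (\<Union>n. A n)"
    proof
      fix z assume z: "z \<in> {c<..<x}"
      have "\<forall>\<^sub>F n in sequentially. z < s n" using s_lim z by (auto simp: order_tendsto_iff)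
      then obtain n where "z < s n" by (meson eventually_sequentially order.refl)
      then have "z \<in> A n" using z by (auto simp: A_def)
      then show "z \<in> (\<Union>n. A n)" by blast
    qed
  qed
  have "(\<lambda>n. emeasure mu (A n)) \<longlonglongrightarrow> emeasure mu (\<Union>n. A n)"
    by (rule Lim_emeasure_incseq[OF _ incA]) (auto simp: A_def)
  moreover have "(\<lambda>n. emeasure mu (A n)) \<longlonglongrightarrow> ennreal (L - F c)"
  proof -
    have "filterlim s (at_left x) sequentially"
      by (rule tendsto_imp_filterlim_at_left[OF s_lim]) (simp add: s_lt)
    then have "(\<lambda>n. F (s n)) \<longlonglongrightarrow> L" by (rule filterlim_compose[OF L])
    then have "(\<lambda>n. ennreal (F (s n) - F c)) \<longlonglongrightarrow> ennreal (L - F c)"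
      by (intro tendsto_ennrealI tendsto_diff tendsto_const)
    moreover have "emeasure mu (A n) = ennreal (F (s n) - F c)" for n
      unfolding A_def using s_gt[of n] by (intro em_Ioc) simp
    ultimately show ?thesis by simp
  qed
  ultimately show ?thesis using UA LIMSEQ_unique by metis
qed

lemma m_Ioo: assumes "(F \<longlongrightarrow> L) (at_left x)" "c < x" shows "measure mu {c<..<x} = L - F c"
  using em_Ioo[OF assms] left_bounds[OF assms(1)] assms(2) by (simp add: measure_def)

lemma m_sing: assumes L: "(F \<longlongrightarrow> L) (at_left x)" shows "measure mu {x} = F x - L"
proof -
  have eq: "{x - 1<..x} - {x - 1<..<x} = {x}" by auto
  have "measure mu ({x - 1<..x} - {x - 1<..<x}) = measure mu {x - 1<..x} - measure mu {x - 1<..<x}"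
    by (rule measure_Diff[OF fin_Ioc]) auto
  then have "measure mu {x} = measure mu {x - 1<..x} - measure mu {x - 1<..<x}"
    unfolding eq .
  also have "\<dots> = F x - L" using m_Ioc[of "x - 1" x] m_Ioo[OF L, of "x - 1"] by simp
  finally show ?thesis .
qed

lemma em_Ioi: assumes T: "(F \<longlongrightarrow> T) at_top" shows "emeasure mu {a<..} = ennreal (T - F a)"
proof -
  define A where "A n = {a<..a + real n}" for n
  have incA: "incseq A"
  proof (rule incseq_SucI)
    fix n show "A n \<subseteq> A (Suc n)" by (auto simp: A_def)
  qed
  have UA: "(\<Union>n. A n) = {a<..}"
  proof
    show "(\<Union>n. A n) \<subseteq> {a<..}" by (auto simp: A_def)
    show "{a<..} \<subseteq> (\<Union>n. A n)"
    proof
      fix z assume z: "z \<in> {a<..}"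
      obtain n where "z - a \<le> real n" using real_nat_ceiling_ge by blast
      then have "z \<in> A n" using z by (simp add: A_def)
      then show "z \<in> (\<Union>n. A n)" by blast
    qed
  qed
  have "(\<lambda>n. emeasure mu (A n)) \<longlonglongrightarrow> emeasure mu (\<Union>n. A n)"
    by (rule Lim_emeasure_incseq[OF _ incA]) (auto simp: A_def)
  moreover have "(\<lambda>n. emeasure mu (A n)) \<longlonglongrightarrow> ennreal (T - F a)"
  proof -
    have "filterlim (\<lambda>n. a + real n) at_top sequentially" by real_asymp
    then have "(\<lambda>n. F (a + real n)) \<longlonglongrightarrow> T" by (rule filterlim_compose[OF T])
    then have "(\<lambda>n. ennreal (F (a + real n) - F a)) \<longlonglongrightarrow> ennreal (T - F a)"
      by (intro tendsto_ennrealI tendsto_diff tendsto_const)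
    moreover have "emeasure mu (A n) = ennreal (F (a + real n) - F a)" for n
      unfolding A_def by (intro em_Ioc) simp
    ultimately show ?thesis by simp
  qed
  ultimately show ?thesis using UA LIMSEQ_unique by metis
qed

lemma sandwich:
  assumes fi: "set_integrable mu S f" and S: "S \<in> sets borel" "emeasure mu S \<noteq> \<infinity>"
    and b: "\<And>z. z \<in> S \<Longrightarrow> l \<le> f z \<and> f z \<le> h"
    and q: "l * measure mu S \<le> q" "q \<le> h * measure mu S"
  shows "\<bar>(LINT z:S|mu. f z) - q\<bar> \<le> (h - l) * measure mu S"
proof -
  have ci: "set_integrable mu S (\<lambda>_. c)" for c :: real
  proof -
    have "integrable mu (\<lambda>z. indicator S z * c)"
      using S by (intro integrable_mult_left integrable_real_indicator) (auto simp: top.not_eq_extremum)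
    then show ?thesis unfolding set_integrable_def by simp
  qed
  have "(LINT z:S|mu. f z) \<le> (LINT z:S|mu. h)"
    by (rule set_integral_mono[OF fi ci]) (use b in auto)
  also have "\<dots> = h * measure mu S" using S by (simp add: set_integral_const)
  finally have u: "(LINT z:S|mu. f z) \<le> h * measure mu S" .
  have "l * measure mu S = (LINT z:S|mu. l)" using S by (simp add: set_integral_const)
  also have "\<dots> \<le> (LINT z:S|mu. f z)"
    by (rule set_integral_mono[OF ci fi]) (use b in auto)
  finally have lo: "l * measure mu S \<le> (LINT z:S|mu. f z)" .
  show ?thesis using u lo q by (auto simp: abs_le_iff algebra_simps)
qed

end

lemma cousin:
  fixes phi G :: "real \<Rightarrow> real" and a b eps :: real
  assumes ab: "a \<le> b"
    and loc: "\<And>x. x \<in> {a..b} \<Longrightarrow> \<exists>d>0. \<forall>c e. c \<le> x \<and> x \<le> e \<and> x - d < c \<and> e < x + d \<and> a \<le> c \<and> e \<le> b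
       \<longrightarrow> \<bar>phi e - phi c\<bar> \<le> eps * (G e - G c)"
  shows "\<bar>phi b - phi a\<bar> \<le> eps * (G b - G a)"
proof -
  define dl where "dl x = (if x \<in> {a..b} then (SOME d. d > 0 \<and> (\<forall>c e. c \<le> x \<and> x \<le> e \<and> x - d < c \<and> e < x + d \<and> a \<le> c \<and> e \<le> b
       \<longrightarrow> \<bar>phi e - phi c\<bar> \<le> eps * (G e - G c))) else 1)" for x
  have dl: "dl x > 0 \<and> (\<forall>c e. c \<le> x \<and> x \<le> e \<and> x - dl x < c \<and> e < x + dl x \<and> a \<le> c \<and> e \<le> b
       \<longrightarrow> \<bar>phi e - phi c\<bar> \<le> eps * (G e - G c))" if "x \<in> {a..b}" for x
    unfolding dl_def if_P[OF that] by (rule someI_ex[OF loc[OF that]])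
  have dpos: "dl x > 0" for x
  proof (cases "x \<in> {a..b}")
    case True then show ?thesis using dl[OF True] by blast
  next
    case False then show ?thesis unfolding dl_def if_not_P[OF False] by simp
  qed
  have "gauge (\<lambda>x. ball x (dl x))" using dpos by (auto simp: gauge_def)
  then obtain p where p: "p tagged_division_of {a..b}" "(\<lambda>x. ball x (dl x)) fine p"
    using fine_division_exists_real by blast
  have each: "\<bar>phi (Sup K) - phi (Inf K)\<bar> \<le> eps * (G (Sup K) - G (Inf K))" if xK: "(x, K) \<in> p" for x K
  proof -
    obtain c e where K: "K = cbox c e" using tagged_division_ofD(4)[OF p(1) xK] by blast
    have xin: "x \<in> K" using tagged_division_ofD(2)[OF p(1) xK] .
    have Ksub: "K \<subseteq> {a..b}" using tagged_division_ofD(3)[OF p(1) xK] .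
    have Kball: "K \<subseteq> ball x (dl x)" using p(2) xK by (auto simp: fine_def)
    have ce: "c \<le> x" "x \<le> e" using xin K by auto
    have K': "K = {c..e}" using K by simp
    have sup: "Sup K = e" "Inf K = c" using ce K' by auto
    have ends: "c \<in> K" "e \<in> K" using ce K' by auto
    have "c \<in> ball x (dl x)" "e \<in> ball x (dl x)" using ends Kball by auto
    then have "x - dl x < c" "e < x + dl x" by (auto simp: dist_real_def)
    moreover have "a \<le> c" "e \<le> b" using ends Ksub by auto
    moreover have "x \<in> {a..b}" using xin Ksub by auto
    ultimately have "\<bar>phi e - phi c\<bar> \<le> eps * (G e - G c)"
      using dl[of x, THEN conjunct2, rule_format, of c e] ce by blast
    then show ?thesis using sup by simp
  qed
  define g where "g = (\<lambda>xK::real \<times> real set. phi (Sup (snd xK)) - phi (Inf (snd xK)))"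
  define h where "h = (\<lambda>xK::real \<times> real set. G (Sup (snd xK)) - G (Inf (snd xK)))"
  have "phi b - phi a = sum g p"
    using additive_tagged_division_1[OF ab p(1), of phi] unfolding g_def by (simp add: split_def)
  then have "\<bar>phi b - phi a\<bar> \<le> sum (\<lambda>i. \<bar>g i\<bar>) p"
    using sum_abs[of g p] by simp
  also have "\<dots> \<le> sum (\<lambda>i. eps * h i) p"
  proof (rule sum_mono)
    fix i assume "i \<in> p"
    then have "(fst i, snd i) \<in> p" by simp
    then show "\<bar>g i\<bar> \<le> eps * h i" using each[of "fst i" "snd i"] unfolding g_def h_def by simp
  qed
  also have "\<dots> = eps * sum h p" by (simp add: sum_distrib_left)
  also have "sum h p = G b - G a"
    using additive_tagged_division_1[OF ab p(1), of G] unfolding h_def by (simp add: split_def)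
  finally show ?thesis .
qed



lemma frac_le1: "(0::real) < t \<Longrightarrow> 0 < D \<Longrightarrow> a * D \<le> t * b \<Longrightarrow> a / t \<le> b / D"
  by (simp add: field_simps)
lemma frac_le2: "(0::real) < t \<Longrightarrow> 0 < D \<Longrightarrow> t * b \<le> a * D \<Longrightarrow> b / D \<le> a / t"
  by (simp add: field_simps)

context setting begin

lemma momI: assumes x: "0 \<le> x1" "0 \<le> x2" and y: "y1 \<in> I.S x1" "y2 \<in> I.S x2" "y1 \<le> y2"
  shows "(x1 - y2) * (M y2 - M y1) \<le> t * (P y2 - P y1)" "t * (P y2 - P y1) \<le> (x2 - y1) * (M y2 - M y1)"
proof -
  have y10: "0 \<le> y1" using y(1) by (simp add: I.S_def)
  have i1: "x1 * (M y2 - M y1) \<le> AF y2 - AF y1" "AF y2 - AF y1 \<le> x2 * (M y2 - M y1)"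
    using I.ineq[of x1 x2 y1 y2] x y by auto
  have AFd: "AF y2 - AF y1 = t * (P y2 - P y1) + (N y2 - N y1)"
    using AF_eq[of y1] AF_eq[of y2] y10 y(3) by (simp add: algebra_simps)
  have Nd: "N y2 - N y1 = integral {y1..y2} (\<lambda>e. e * r0 e)"
    unfolding N_def using y10 y(3) by (rule gd_diff_int[OF gd_Ni])
  have Md: "M y2 - M y1 = integral {y1..y2} r0"
    unfolding M_def using y10 y(3) by (rule gd_diff_int[OF gd_r0])
  have "integral {y1..y2} (\<lambda>e. y1 * r0 e) \<le> integral {y1..y2} (\<lambda>e. e * r0 e)"
    using y10 r0p by (intro gd_mono gd_mult gd_basic) (auto intro!: mult_right_mono less_imp_le)
  then have n1: "y1 * (M y2 - M y1) \<le> N y2 - N y1" using Md Nd by simp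
  have "integral {y1..y2} (\<lambda>e. e * r0 e) \<le> integral {y1..y2} (\<lambda>e. y2 * r0 e)"
    using y10 r0p by (intro gd_mono gd_mult gd_basic) (auto intro!: mult_right_mono less_imp_le)
  then have n2: "N y2 - N y1 \<le> y2 * (M y2 - M y1)" using Md Nd by simp
  show "(x1 - y2) * (M y2 - M y1) \<le> t * (P y2 - P y1)" using i1 AFd n2 by (simp add: algebra_simps)
  show "t * (P y2 - P y1) \<le> (x2 - y1) * (M y2 - M y1)" using i1 AFd n1 by (simp add: algebra_simps)
qed

lemma momB: assumes x: "0 \<le> x1" "0 \<le> x2" and y: "y1 \<in> B.S (-x1)" "y2 \<in> B.S (-x2)" "y2 \<le> y1"
  shows "x1 * (Mb y1 - Mb y2) \<le> (t - y2) * (Pb y1 - Pb y2)" "(t - y1) * (Pb y1 - Pb y2) \<le> x2 * (Mb y1 - Mb y2)"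
proof -
  have y20: "0 \<le> y2" using y(2) by (simp add: B.S_def)
  have i1: "- x2 * (Mb y1 - Mb y2) \<le> AG y1 - AG y2" "AG y1 - AG y2 \<le> - x1 * (Mb y1 - Mb y2)"
    using B.ineq[of "-x2" "-x1" y2 y1] x y by auto
  have Bd: "Bq y1 - Bq y2 = integral {y2..y1} (\<lambda>e. ub e * (t - e) * rb e * ub e)"
    unfolding Bq_def using y20 y(3) by (rule gd_diff_int[OF gd_Bqi])
  have Pd: "Pb y1 - Pb y2 = integral {y2..y1} (\<lambda>e. rb e * (ub e)\<^sup>2)"
    unfolding Pb_def using y20 y(3) by (rule gd_diff_int[OF gd_Pbi])
  have eqf: "(\<lambda>e. ub e * (t - e) * rb e * ub e) = (\<lambda>e. (t - e) * (rb e * (ub e)\<^sup>2))"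
    by (auto simp: power2_eq_square algebra_simps)
  have pos: "0 \<le> rb e * (ub e)\<^sup>2" if "0 \<le> e" for e using rbp[OF that] by simp
  have "integral {y2..y1} (\<lambda>e. (t - y1) * (rb e * (ub e)\<^sup>2)) \<le> integral {y2..y1} (\<lambda>e. (t - e) * (rb e * (ub e)\<^sup>2))"
  proof (rule gd_mono)
    show "gd (\<lambda>e. (t - y1) * (rb e * (ub e)\<^sup>2))" by (intro gd_mult gd_Pbi gd_const)
    show "gd (\<lambda>e. (t - e) * (rb e * (ub e)\<^sup>2))" by (intro gd_mult gd_diff gd_Pbi gd_const gd_id)
    show "0 \<le> y2" by (fact y20)
    fix e assume "e \<in> {y2..y1}"
    then show "(t - y1) * (rb e * (ub e)\<^sup>2) \<le> (t - e) * (rb e * (ub e)\<^sup>2)"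
      using pos[of e] y20 by (intro mult_right_mono) auto
  qed
  then have b1: "(t - y1) * (Pb y1 - Pb y2) \<le> Bq y1 - Bq y2"
    using Bd Pd eqf by simp
  have "integral {y2..y1} (\<lambda>e. (t - e) * (rb e * (ub e)\<^sup>2)) \<le> integral {y2..y1} (\<lambda>e. (t - y2) * (rb e * (ub e)\<^sup>2))"
  proof (rule gd_mono)
    show "gd (\<lambda>e. (t - y2) * (rb e * (ub e)\<^sup>2))" by (intro gd_mult gd_Pbi gd_const)
    show "gd (\<lambda>e. (t - e) * (rb e * (ub e)\<^sup>2))" by (intro gd_mult gd_diff gd_Pbi gd_const gd_id)
    show "0 \<le> y2" by (fact y20)
    fix e assume "e \<in> {y2..y1}"
    then show "(t - e) * (rb e * (ub e)\<^sup>2) \<le> (t - y2) * (rb e * (ub e)\<^sup>2)"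
      using pos[of e] y20 by (intro mult_right_mono) auto
  qed
  then have b2: "Bq y1 - Bq y2 \<le> (t - y2) * (Pb y1 - Pb y2)"
    using Bd Pd eqf by simp
  show "x1 * (Mb y1 - Mb y2) \<le> (t - y2) * (Pb y1 - Pb y2)" using i1 b2 by (simp add: AG_def algebra_simps)
  show "(t - y1) * (Pb y1 - Pb y2) \<le> x2 * (Mb y1 - Mb y2)" using i1 b1 by (simp add: AG_def algebra_simps)
qed

lemma U0_bounds: assumes x: "0 \<le> x" shows "(x - I.hi x) / t \<le> U0 x" "U0 x \<le> (x - I.lo x) / t"
proof -
  have xD: "x \<in> {0..}" using x by simp
  have lh: "I.lo x \<le> I.hi x" using I.lo_le_hi[OF xD] .
  have "(x - I.hi x) / t \<le> U0 x \<and> U0 x \<le> (x - I.lo x) / t"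
  proof (cases "I.lo x = I.hi x")
    case True then show ?thesis by (simp add: U0_def)
  next
    case False
    then have lt: "I.lo x < I.hi x" using lh by simp
    have dM: "0 < M (I.hi x) - M (I.lo x)" using M_strict[OF I.lo_nn[OF xD] lt] by simp
    have m: "(x - I.hi x) * (M (I.hi x) - M (I.lo x)) \<le> t * (P (I.hi x) - P (I.lo x))"
            "t * (P (I.hi x) - P (I.lo x)) \<le> (x - I.lo x) * (M (I.hi x) - M (I.lo x))"
      using momI[of x x "I.lo x" "I.hi x"] x I.lo_in[OF xD] I.hi_in[OF xD] lh by auto
    have "U0 x = (P (I.hi x) - P (I.lo x)) / (M (I.hi x) - M (I.lo x))" using False by (simp add: U0_def)
    then show ?thesis using frac_le1[OF tp dM m(1)] frac_le2[OF tp dM m(2)] by simp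
  qed
  then show "(x - I.hi x) / t \<le> U0 x" "U0 x \<le> (x - I.lo x) / t" by auto
qed

lemma Ub_bounds: assumes x: "0 < x" shows "x / (t - B.lo (-x)) \<le> Ub x" "Ub x \<le> x / (t - B.hi (-x))"
proof -
  have xD: "-x \<in> {..0}" using x by simp
  have lh: "B.lo (-x) \<le> B.hi (-x)" using B.lo_le_hi[OF xD] .
  have ht: "B.hi (-x) < t" using B_lt_t[OF x B.hi_in[OF xD]] .
  have "x / (t - B.lo (-x)) \<le> Ub x \<and> Ub x \<le> x / (t - B.hi (-x))"
  proof (cases "B.lo (-x) = B.hi (-x)")
    case True then show ?thesis by (simp add: Ub_def)
  next
    case False
    then have lt: "B.lo (-x) < B.hi (-x)" using lh by simp
    have dM: "0 < Mb (B.hi (-x)) - Mb (B.lo (-x))" using Mb_strict[OF B.lo_nn[OF xD] lt] by simp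
    have m: "x * (Mb (B.hi (-x)) - Mb (B.lo (-x))) \<le> (t - B.lo (-x)) * (Pb (B.hi (-x)) - Pb (B.lo (-x)))"
            "(t - B.hi (-x)) * (Pb (B.hi (-x)) - Pb (B.lo (-x))) \<le> x * (Mb (B.hi (-x)) - Mb (B.lo (-x)))"
      using momB[of x x "B.hi (-x)" "B.lo (-x)"] x B.lo_in[OF xD] B.hi_in[OF xD] lh by auto
    have t1: "0 < t - B.lo (-x)" "0 < t - B.hi (-x)" using ht lh by auto
    have "Ub x = (Pb (B.hi (-x)) - Pb (B.lo (-x))) / (Mb (B.hi (-x)) - Mb (B.lo (-x)))" using False by (simp add: Ub_def)
    then show ?thesis using frac_le1[OF t1(1) dM m(1)] frac_le2[OF t1(2) dM m(2)] by simp
  qed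
  then show "x / (t - B.lo (-x)) \<le> Ub x" "Ub x \<le> x / (t - B.hi (-x))" by auto
qed

lemma U0_abs: assumes "0 \<le> x" shows "\<bar>U0 x\<bar> \<le> B0"
proof -
  have xD: "x \<in> {0..}" using assms by simp
  have "x - t * B0 \<le> I.lo x" using I_lb[OF assms I.lo_in[OF xD]] .
  moreover have "I.hi x \<le> x + t * B0" using I_ub[OF assms I.hi_in[OF xD]] .
  ultimately have h1: "- (t * B0) \<le> x - I.hi x" and h2: "x - I.lo x \<le> t * B0" by auto
  have a: "- (t * B0) / t \<le> (x - I.hi x) / t" "(x - I.lo x) / t \<le> (t * B0) / t"
    using divide_right_mono[OF h1, of t] divide_right_mono[OF h2, of t] tp by auto
  have "- (t * B0) / t = - B0" "(t * B0) / t = B0" using tp by auto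
  then show ?thesis using a U0_bounds[OF assms] by (simp add: abs_le_iff)
qed

lemma Ub_abs: assumes "0 < x" "x < x0" shows "\<bar>Ub x\<bar> \<le> Bb"
proof -
  have xD: "-x \<in> {..0}" using assms by simp
  have hp: "0 < B.hi (-x)" using R2 assms by simp
  have xb: "x \<le> Bb * (t - B.hi (-x))" using B_bound[of x "B.hi (-x)"] assms B.hi_in[OF xD] hp by simp
  have ht: "B.hi (-x) < t" using B_lt_t[OF assms(1) B.hi_in[OF xD]] .
  have lh: "B.lo (-x) \<le> B.hi (-x)" using B.lo_le_hi[OF xD] .
  have "0 \<le> x / (t - B.lo (-x))" using assms ht lh by simp
  moreover have "x / (t - B.hi (-x)) \<le> Bb" using xb ht by (simp add: field_simps)
  ultimately show ?thesis using Ub_bounds[OF assms(1)] by (simp add: abs_le_iff)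
qed


sublocale R: imF Fr
  by unfold_locales (rule Fr_mono, simp, rule Fr_rc)

lemma FrL_lim: assumes x: "0 < x" shows "(Fr \<longlongrightarrow> FrL x) (at_left x)"
proof (rule tendstoI)
  fix e :: real assume e: "0 < e"
  obtain d where d: "d > 0" "d \<le> x" "\<forall>z. x - d < z \<and> z < x \<longrightarrow> \<bar>Fr0 z - FrL x\<bar> < e \<and> \<bar>Q z - QL x\<bar> < e"
    using lc[OF x e] by blast
  show "\<forall>\<^sub>F z in at_left x. dist (Fr z) (FrL x) < e"
    unfolding eventually_at_left_field
  proof (intro exI[of _ "x - d"] conjI allI impI)
    show "x - d < x" using d by simp
    fix z assume z: "x - d < z" "z < x"
    then have "0 \<le> z" using d by simp
    then have "Fr z = Fr0 z" by (simp add: Fr_eq)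
    then show "dist (Fr z) (FrL x) < e" using d(3) z by (simp add: dist_real_def)
  qed
qed

lemma mu_Ioo: "0 \<le> c \<Longrightarrow> c < x \<Longrightarrow> measure R.mu {c<..<x} = FrL x - Fr0 c"
  using R.m_Ioo[OF FrL_lim, of x c] by (simp add: Fr_eq)
lemma mu_Ioc: "0 \<le> c \<Longrightarrow> c \<le> x \<Longrightarrow> measure R.mu {c<..x} = Fr0 x - Fr0 c"
  using R.m_Ioc[of c x] by (simp add: Fr_eq)
lemma mu_sing: "0 < x \<Longrightarrow> measure R.mu {x} = Fr0 x - FrL x"
  using R.m_sing[OF FrL_lim, of x] by (simp add: Fr_eq)

definition "Mt = (LINT x:{0..}|lborel. r0 x)"
definition "Pt = (LINT x:{0..}|lborel. r0 x * u0 x)"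

lemma sbm_gd: assumes "gd f" shows "set_borel_measurable lborel {0..} f"
proof -
  have "set_borel_measurable borel {0..} f" using assms unfolding gd_def sbm_iff by simp
  then show ?thesis unfolding set_borel_measurable_def by simp
qed

lemma Pint: "set_integrable lborel {0..} (\<lambda>x. r0 x * u0 x)"
proof (rule set_integrable_bound[OF set_integrable_mult_right[OF r0L1, of B0]])
  show "set_borel_measurable lborel {0..} (\<lambda>x. r0 x * u0 x)" by (rule sbm_gd[OF gd_Pi])
  show "AE x\<in>{0..} in lborel. norm (r0 x * u0 x) \<le> norm (B0 * r0 x)"
  proof (intro AE_I2 impI)
    fix x :: real assume "x \<in> {0..}"
    then have "\<bar>u0 x\<bar> \<le> B0" "0 < r0 x" using u0b r0p by auto
    then have "\<bar>r0 x\<bar> * \<bar>u0 x\<bar> \<le> \<bar>r0 x\<bar> * B0" by (intro mult_left_mono) auto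
    then show "norm (r0 x * u0 x) \<le> norm (B0 * r0 x)" using B0nn by (simp add: abs_mult mult.commute)
  qed
qed

lemma M_top: "(M \<longlongrightarrow> Mt) at_top"
proof -
  have "((\<lambda>b. LINT x:{0..b}|lborel. r0 x) \<longlongrightarrow> Mt) at_top"
    unfolding Mt_def by (rule tendsto_set_lebesgue_integral_at_top) (auto intro: r0L1)
  moreover have "\<forall>\<^sub>F b in at_top. (LINT x:{0..b}|lborel. r0 x) = M b"
    unfolding eventually_at_top_linorder by (intro exI[of _ 0]) (auto simp: M_def gd_LINT[OF gd_r0])
  ultimately show ?thesis by (rule Lim_transform_eventually)
qed

lemma P_top: "(P \<longlongrightarrow> Pt) at_top"
proof -
  have "((\<lambda>b. LINT x:{0..b}|lborel. r0 x * u0 x) \<longlongrightarrow> Pt) at_top"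
    unfolding Pt_def by (rule tendsto_set_lebesgue_integral_at_top) (auto intro: Pint)
  moreover have "\<forall>\<^sub>F b in at_top. (LINT x:{0..b}|lborel. r0 x * u0 x) = P b"
    unfolding eventually_at_top_linorder by (intro exI[of _ 0]) (auto simp: P_def gd_LINT[OF gd_Pi])
  ultimately show ?thesis by (rule Lim_transform_eventually)
qed

lemma hi_big: assumes "0 \<le> z" shows "z - t * B0 \<le> I.hi z"
  using I_lb[OF assms I.lo_in[of z]] I.lo_le_hi[of z] assms by simp

lemma Fr_top: "(Fr \<longlongrightarrow> Mt) at_top" and Q_top: "(Q \<longlongrightarrow> Pt) at_top"
proof -
  have *: "((\<lambda>z. f (I.hi z)) \<longlongrightarrow> L) at_top" if f: "(f \<longlongrightarrow> L) at_top" for f :: "real \<Rightarrow> real" and L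
  proof (rule tendstoI)
    fix e :: real assume e: "0 < e"
    obtain Y where Y: "\<forall>y\<ge>Y. dist (f y) L < e"
      using tendstoD[OF f e] unfolding eventually_at_top_linorder by blast
    show "\<forall>\<^sub>F z in at_top. dist (f (I.hi z)) L < e"
      unfolding eventually_at_top_linorder
    proof (intro exI[of _ "max 0 (Y + t * B0)"] allI impI)
      fix z assume "max 0 (Y + t * B0) \<le> z"
      then have "0 \<le> z" "Y \<le> I.hi z" using hi_big[of z] by auto
      then show "dist (f (I.hi z)) L < e" using Y by blast
    qed
  qed
  have ev1: "\<forall>\<^sub>F z in at_top. M (I.hi z) = Fr z"
    unfolding eventually_at_top_linorder using x0_nn
    by (intro exI[of _ x0]) (auto simp: Fr_eq Fr0_def max_def)
  have ev2: "\<forall>\<^sub>F z in at_top. P (I.hi z) = Q z"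
    unfolding eventually_at_top_linorder by (intro exI[of _ x0]) (auto simp: Q_def)
  show "(Fr \<longlongrightarrow> Mt) at_top" using Lim_transform_eventually[OF *[OF M_top] ev1] .
  show "(Q \<longlongrightarrow> Pt) at_top" using Lim_transform_eventually[OF *[OF P_top] ev2] .
qed

lemma mu_Ioi: "0 \<le> a \<Longrightarrow> emeasure R.mu {a<..} = ennreal (Mt - Fr0 a)"
  using R.em_Ioi[OF Fr_top, of a] by (simp add: Fr_eq)

lemma mu_Ioi_fin: "emeasure R.mu {a<..} \<noteq> \<infinity>"
  using R.em_Ioi[OF Fr_top, of a] by simp

lemma Fr0_le_Mt: "0 \<le> a \<Longrightarrow> Fr0 a \<le> Mt"
proof -
  assume a: "0 \<le> a"
  have "Fr a \<le> Mt"
    by (rule tendsto_lowerbound[OF Fr_top]) (auto simp: eventually_at_top_linorder intro!: exI[of _ a] Fr_mono)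
  then show ?thesis using a by (simp add: Fr_eq)
qed

lemma mu_Ioi': "0 \<le> a \<Longrightarrow> measure R.mu {a<..} = Mt - Fr0 a"
  using mu_Ioi[of a] Fr0_le_Mt[of a] by (simp add: measure_def)


lemma cont_max:
  fixes f :: "real \<Rightarrow> real"
  assumes uc: "\<And>b e. 0 < e \<Longrightarrow> \<exists>d>0. \<forall>y1\<in>{0..b}. \<forall>y2\<in>{0..b}. \<bar>y1 - y2\<bar> < d \<longrightarrow> \<bar>f y1 - f y2\<bar> < e"
  shows "(\<lambda>y. f (max y 0)) \<in> borel_measurable borel"
proof (rule borel_measurable_continuous_onI)
  show "continuous_on UNIV (\<lambda>y. f (max y 0))"
    unfolding continuous_on_iff
  proof (intro ballI allI impI)
    fix x e :: real assume e: "0 < e"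
    obtain d where d: "d > 0" "\<forall>y1\<in>{0..\<bar>x\<bar> + 1}. \<forall>y2\<in>{0..\<bar>x\<bar> + 1}. \<bar>y1 - y2\<bar> < d \<longrightarrow> \<bar>f y1 - f y2\<bar> < e"
      using uc[OF e] by blast
    show "\<exists>d>0. \<forall>x'\<in>UNIV. dist x' x < d \<longrightarrow> dist (f (max x' 0)) (f (max x 0)) < e"
    proof (intro exI[of _ "min d 1"] conjI ballI impI)
      show "0 < min d 1" using d by simp
      fix x' :: real assume "dist x' x < min d 1"
      then have xx: "\<bar>x' - x\<bar> < d" "\<bar>x' - x\<bar> < 1" by (auto simp: dist_real_def)
      have m: "max x' 0 \<in> {0..\<bar>x\<bar> + 1}" "max x 0 \<in> {0..\<bar>x\<bar> + 1}" using xx by auto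
      have "\<bar>max x' 0 - max x 0\<bar> < d" using xx by (auto simp: max_def)
      then show "dist (f (max x' 0)) (f (max x 0)) < e" using d(2) m by (simp add: dist_real_def)
    qed
  qed
qed

lemma meas_M: "(\<lambda>y. M (max y 0)) \<in> borel_measurable borel"
  by (rule cont_max) (use uc4 in blast)
lemma meas_Mb: "(\<lambda>y. Mb (max y 0)) \<in> borel_measurable borel"
  by (rule cont_max) (use uc4 in blast)
lemma meas_P: "(\<lambda>y. P (max y 0)) \<in> borel_measurable borel"
  by (rule cont_max) (use uc4 in blast)
lemma meas_Pb: "(\<lambda>y. Pb (max y 0)) \<in> borel_measurable borel"
  by (rule cont_max) (use uc4 in blast)

lemma meas_lo: "(\<lambda>z. I.lo (max z 0)) \<in> borel_measurable borel"
  by (rule borel_measurable_mono) (auto simp: mono_def intro!: I.lo_mono)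
lemma meas_hi: "(\<lambda>z. I.hi (max z 0)) \<in> borel_measurable borel"
  by (rule borel_measurable_mono) (auto simp: mono_def intro!: I.hi_mono)
lemma meas_blo: "(\<lambda>z. B.lo (- max z 0)) \<in> borel_measurable borel"
proof -
  have "(\<lambda>z. - B.lo (- max z 0)) \<in> borel_measurable borel"
    by (rule borel_measurable_mono) (auto simp: mono_def intro!: B.lo_mono)
  then have "(\<lambda>z. - (- B.lo (- max z 0))) \<in> borel_measurable borel" by measurable
  then show ?thesis by simp
qed
lemma meas_bhi: "(\<lambda>z. B.hi (- max z 0)) \<in> borel_measurable borel"
proof -
  have "(\<lambda>z. - B.hi (- max z 0)) \<in> borel_measurable borel"
    by (rule borel_measurable_mono) (auto simp: mono_def intro!: B.hi_mono)
  then have "(\<lambda>z. - (- B.hi (- max z 0))) \<in> borel_measurable borel" by measurable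
  then show ?thesis by simp
qed

definition "Vv z = vel u0 ub r0 rb z t"

definition "V' z = (if z < x0 then
   (if B.lo (- max z 0) = B.hi (- max z 0) then z / (t - B.lo (- max z 0))
    else (Pb (max (B.hi (- max z 0)) 0) - Pb (max (B.lo (- max z 0)) 0)) / (Mb (max (B.hi (- max z 0)) 0) - Mb (max (B.lo (- max z 0)) 0)))
  else if z = x0 then Vv x0
  else (if I.lo (max z 0) = I.hi (max z 0) then (z - I.lo (max z 0)) / t
    else (P (max (I.hi (max z 0)) 0) - P (max (I.lo (max z 0)) 0)) / (M (max (I.hi (max z 0)) 0) - M (max (I.lo (max z 0)) 0))))"

lemma meas_V': "V' \<in> borel_measurable borel"
proof -
  have [measurable]: "(\<lambda>y. M (max y 0)) \<in> borel_measurable borel" "(\<lambda>y. Mb (max y 0)) \<in> borel_measurable borel"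
    "(\<lambda>y. P (max y 0)) \<in> borel_measurable borel" "(\<lambda>y. Pb (max y 0)) \<in> borel_measurable borel"
    "(\<lambda>z. I.lo (max z 0)) \<in> borel_measurable borel" "(\<lambda>z. I.hi (max z 0)) \<in> borel_measurable borel"
    "(\<lambda>z. B.lo (- max z 0)) \<in> borel_measurable borel" "(\<lambda>z. B.hi (- max z 0)) \<in> borel_measurable borel"
    using meas_M meas_Mb meas_P meas_Pb meas_lo meas_hi meas_blo meas_bhi .
  show ?thesis unfolding V'_def by measurable
qed

lemma V'_eq: assumes "0 < z" shows "V' z = Vv z"
proof -
  have zD: "z \<in> {0..}" "-z \<in> {..0}" using assms by auto
  have nn: "0 \<le> I.lo z" "0 \<le> I.hi z" "0 \<le> B.lo (-z)" "0 \<le> B.hi (-z)"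
    using I.lo_nn[OF zD(1)] I.lo_le_hi[OF zD(1)] B.lo_nn[OF zD(2)] B.lo_le_hi[OF zD(2)] by auto
  show ?thesis
  proof (cases "z < x0")
    case True
    then show ?thesis using vel_bdry[OF assms True] assms nn by (simp add: V'_def Vv_def Ub_def)
  next
    case False
    show ?thesis
    proof (cases "z = x0")
      case True then show ?thesis using False by (simp add: V'_def)
    next
      case False2: False
      then have "x0 < z" using False by simp
      then show ?thesis using vel_init[OF assms] False False2 assms nn by (simp add: V'_def Vv_def U0_def)
    qed
  qed
qed

definition "KV = B0 + Bb + \<bar>Vv x0\<bar>"

lemma V_bdd: assumes "0 < z" shows "\<bar>Vv z\<bar> \<le> KV"
proof -
  have "\<bar>Vv x0\<bar> \<ge> 0" "B0 \<ge> 0" "Bb \<ge> 0" using B0nn Bbp by auto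
  show ?thesis
  proof (cases "z < x0")
    case True then show ?thesis using vel_bdry[OF assms True] Ub_abs[OF assms True] B0nn
      by (simp add: Vv_def KV_def)
  next
    case False
    show ?thesis
    proof (cases "z = x0")
      case True then show ?thesis using B0nn Bbp by (simp add: KV_def)
    next
      case False2: False
      then have "x0 < z" using False by simp
      then show ?thesis using vel_init[OF assms] U0_abs[of z] assms Bbp
        by (simp add: Vv_def KV_def)
    qed
  qed
qed

lemma V_sbm: "set_borel_measurable R.mu {0<..} Vv"
proof -
  have "(\<lambda>z. indicator {0<..} z *\<^sub>R V' z) \<in> borel_measurable borel"
    using meas_V' by measurable
  moreover have "(\<lambda>z. indicator {0<..} z *\<^sub>R V' z) = (\<lambda>z. indicator {0<..} z *\<^sub>R Vv z)"
    by (auto simp: indicator_def V'_eq)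
  ultimately show ?thesis unfolding set_borel_measurable_def
    by (simp add: measurable_cong_sets[OF sets_interval_measure refl])
qed

lemma V_int: "set_integrable R.mu {0<..} Vv"
proof -
  have "integrable R.mu (\<lambda>z. indicator {0<..} z * KV)"
    using mu_Ioi_fin[of 0] by (intro integrable_mult_left integrable_real_indicator) (auto simp: top.not_eq_extremum)
  then have ci: "set_integrable R.mu {0<..} (\<lambda>_. KV)" unfolding set_integrable_def by simp
  show ?thesis
  proof (rule set_integrable_bound[OF ci V_sbm])
    show "AE x\<in>{0<..} in R.mu. norm (Vv x) \<le> norm KV"
      using V_bdd by (intro AE_I2) (auto intro: order.trans[OF _ abs_ge_self])
  qed
qed

lemma V_int_sub: "S \<in> sets borel \<Longrightarrow> S \<subseteq> {0<..} \<Longrightarrow> set_integrable R.mu S Vv"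
  by (rule set_integrable_subset[OF V_int]) auto

end


lemma divt1: "(0::real) < t \<Longrightarrow> a * m \<le> t * q \<Longrightarrow> a / t * m \<le> q"
  by (simp add: field_simps)
lemma divt2: "(0::real) < t \<Longrightarrow> t * q \<le> a * m \<Longrightarrow> q \<le> a / t * m"
  by (simp add: field_simps)
lemma divt3: "(0::real) < w \<Longrightarrow> a * m \<le> w * q \<Longrightarrow> a / w * m \<le> q"
  by (simp add: field_simps)
lemma divt4: "(0::real) < w \<Longrightarrow> w * q \<le> a * m \<Longrightarrow> q \<le> a / w * m"
  by (simp add: field_simps)

context setting begin

lemma pLI: assumes cx: "x0 < c" "c < x"
  shows "\<bar>(LINT z:{c<..<x}|R.mu. Vv z) - (QL x - Q c)\<bar> \<le> ((x - c) + (I.lo x - I.hi c)) / t * (FrL x - Fr0 c)"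
proof -
  have c0: "0 < c" using cx x0_nn by simp
  have cD: "c \<in> {0..}" "x \<in> {0..}" using c0 cx by auto
  have m: "measure R.mu {c<..<x} = M (I.lo x) - M (I.hi c)"
    using mu_Ioo[of c x] c0 cx by (simp add: FrL_def Fr0_def)
  have FF: "FrL x - Fr0 c = M (I.lo x) - M (I.hi c)" using cx by (simp add: FrL_def Fr0_def)
  have q: "QL x - Q c = P (I.lo x) - P (I.hi c)" using cx by (simp add: QL_def Q_def)
  have hl: "I.hi c \<le> I.lo x" using I.hi_le_lo[OF cD cx(2)] .
  have mo: "(c - I.lo x) * (M (I.lo x) - M (I.hi c)) \<le> t * (P (I.lo x) - P (I.hi c))"
          "t * (P (I.lo x) - P (I.hi c)) \<le> (x - I.hi c) * (M (I.lo x) - M (I.hi c))"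
    using momI[of c x "I.hi c" "I.lo x"] cD I.hi_in I.lo_in hl by auto
  have "\<bar>(LINT z:{c<..<x}|R.mu. Vv z) - (QL x - Q c)\<bar> \<le> ((x - I.hi c) / t - (c - I.lo x) / t) * measure R.mu {c<..<x}"
  proof (rule R.sandwich)
    show "set_integrable R.mu {c<..<x} Vv" using c0 by (intro V_int_sub) auto
    show "{c<..<x} \<in> sets borel" by simp
    show "emeasure R.mu {c<..<x} \<noteq> \<infinity>" by (rule R.fin_sub[of _ c x]) auto
    fix z assume z: "z \<in> {c<..<x}"
    have zD: "z \<in> {0..}" "0 < z" "x0 < z" using z c0 cx by auto
    have v: "Vv z = U0 z" using vel_init[OF zD(2,3)] by (simp add: Vv_def)
    have a: "I.hi c \<le> I.lo z" using I.hi_le_lo[OF cD(1) zD(1)] z by simp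
    have b: "I.hi z \<le> I.lo x" using I.hi_le_lo[OF zD(1) cD(2)] z by simp
    have "c - I.lo x \<le> z - I.hi z" "z - I.lo z \<le> x - I.hi c" using a b z by auto
    then have "(c - I.lo x) / t \<le> (z - I.hi z) / t" "(z - I.lo z) / t \<le> (x - I.hi c) / t"
      using tp by (auto intro: divide_right_mono)
    then show "(c - I.lo x) / t \<le> Vv z \<and> Vv z \<le> (x - I.hi c) / t"
      using U0_bounds[of z] zD v by auto
  next
    show "(c - I.lo x) / t * measure R.mu {c<..<x} \<le> QL x - Q c"
      unfolding m q by (rule divt1[OF tp mo(1)])
    show "QL x - Q c \<le> (x - I.hi c) / t * measure R.mu {c<..<x}"
      unfolding m q by (rule divt2[OF tp mo(2)])
  qed
  also have "(x - I.hi c) / t - (c - I.lo x) / t = ((x - c) + (I.lo x - I.hi c)) / t"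
    by (simp add: diff_divide_distrib[symmetric] algebra_simps)
  finally show ?thesis using m FF by simp
qed

lemma pRI: assumes xe: "x0 \<le> x" "0 < x" "x < e"
  shows "\<bar>(LINT z:{x<..e}|R.mu. Vv z) - (Q e - Q x)\<bar> \<le> ((e - x) + (I.hi e - I.hi x)) / t * (Fr0 e - Fr0 x)"
proof -
  have cD: "x \<in> {0..}" "e \<in> {0..}" using xe by auto
  have FF: "Fr0 e - Fr0 x = M (I.hi e) - M (I.hi x)" using xe by (simp add: Fr0_def)
  have m: "measure R.mu {x<..e} = M (I.hi e) - M (I.hi x)"
    using mu_Ioc[of x e] xe FF by simp
  have q: "Q e - Q x = P (I.hi e) - P (I.hi x)" using xe by (simp add: Q_def)
  have hl: "I.hi x \<le> I.hi e" using I.hi_mono[OF cD] xe by simp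
  have mo: "(x - I.hi e) * (M (I.hi e) - M (I.hi x)) \<le> t * (P (I.hi e) - P (I.hi x))"
          "t * (P (I.hi e) - P (I.hi x)) \<le> (e - I.hi x) * (M (I.hi e) - M (I.hi x))"
    using momI[of x e "I.hi x" "I.hi e"] cD I.hi_in hl by auto
  have "\<bar>(LINT z:{x<..e}|R.mu. Vv z) - (Q e - Q x)\<bar> \<le> ((e - I.hi x) / t - (x - I.hi e) / t) * measure R.mu {x<..e}"
  proof (rule R.sandwich)
    show "set_integrable R.mu {x<..e} Vv" using xe by (intro V_int_sub) auto
    show "{x<..e} \<in> sets borel" by simp
    show "emeasure R.mu {x<..e} \<noteq> \<infinity>" by (rule R.fin_Ioc)
    fix z assume z: "z \<in> {x<..e}"
    have zD: "z \<in> {0..}" "0 < z" "x0 < z" using z xe by auto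
    have v: "Vv z = U0 z" using vel_init[OF zD(2,3)] by (simp add: Vv_def)
    have a: "I.hi x \<le> I.lo z" using I.hi_le_lo[OF cD(1) zD(1)] z by simp
    have b: "I.hi z \<le> I.hi e" using I.hi_mono[OF zD(1) cD(2)] z by simp
    have "x - I.hi e \<le> z - I.hi z" "z - I.lo z \<le> e - I.hi x" using a b z by auto
    then have "(x - I.hi e) / t \<le> (z - I.hi z) / t" "(z - I.lo z) / t \<le> (e - I.hi x) / t"
      using tp by (auto intro: divide_right_mono)
    then show "(x - I.hi e) / t \<le> Vv z \<and> Vv z \<le> (e - I.hi x) / t"
      using U0_bounds[of z] zD v by auto
  next
    show "(x - I.hi e) / t * measure R.mu {x<..e} \<le> Q e - Q x"
      unfolding m q by (rule divt1[OF tp mo(1)])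
    show "Q e - Q x \<le> (e - I.hi x) / t * measure R.mu {x<..e}"
      unfolding m q by (rule divt2[OF tp mo(2)])
  qed
  also have "(e - I.hi x) / t - (x - I.hi e) / t = ((e - x) + (I.hi e - I.hi x)) / t"
    by (simp add: diff_divide_distrib[symmetric] algebra_simps)
  finally show ?thesis using m FF by simp
qed

lemma pLB: assumes cx: "0 < c" "c < x" "x \<le> x0"
  shows "\<bar>(LINT z:{c<..<x}|R.mu. Vv z) - (QL x - Q c)\<bar> \<le> (x / (t - B.lo (-c)) - c / (t - B.hi (-x))) * (FrL x - Fr0 c)"
proof -
  have cD: "-c \<in> {..0}" "-x \<in> {..0}" using cx by auto
  define t1 where "t1 = B.lo (-c)"
  define t2 where "t2 = B.hi (-x)"
  have t1S: "t1 \<in> B.S (-c)" and t2S: "t2 \<in> B.S (-x)" using B.lo_in[OF cD(1)] B.hi_in[OF cD(2)] by (auto simp: t1_def t2_def)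
  have t21: "t2 \<le> t1" using B.hi_le_lo[OF cD(2) cD(1)] cx by (simp add: t1_def t2_def)
  have t1t: "t1 < t" using B_lt_t[OF cx(1) t1S] .
  have FF: "FrL x - Fr0 c = Mb t1 - Mb t2" using cx by (simp add: FrL_def Fr0_def t1_def t2_def)
  have m: "measure R.mu {c<..<x} = Mb t1 - Mb t2" using mu_Ioo[of c x] cx FF by simp
  have q: "QL x - Q c = Pb t1 - Pb t2" using cx by (simp add: QL_def Q_def t1_def t2_def)
  have mo: "c * (Mb t1 - Mb t2) \<le> (t - t2) * (Pb t1 - Pb t2)" "(t - t1) * (Pb t1 - Pb t2) \<le> x * (Mb t1 - Mb t2)"
    using momB[of c x t1 t2] cx t1S t2S t21 by auto
  have "\<bar>(LINT z:{c<..<x}|R.mu. Vv z) - (QL x - Q c)\<bar> \<le> (x / (t - t1) - c / (t - t2)) * measure R.mu {c<..<x}"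
  proof (rule R.sandwich)
    show "set_integrable R.mu {c<..<x} Vv" using cx by (intro V_int_sub) auto
    show "{c<..<x} \<in> sets borel" by simp
    show "emeasure R.mu {c<..<x} \<noteq> \<infinity>" by (rule R.fin_sub[of _ c x]) auto
    fix z assume z: "z \<in> {c<..<x}"
    have zD: "-z \<in> {..0}" "0 < z" "z < x0" using z cx by auto
    have v: "Vv z = Ub z" using vel_bdry[OF zD(2,3)] by (simp add: Vv_def)
    have a: "t2 \<le> B.lo (-z)" using B.hi_le_lo[OF cD(2) zD(1)] z by (simp add: t2_def)
    have b: "B.hi (-z) \<le> t1" using B.hi_le_lo[OF zD(1) cD(1)] z by (simp add: t1_def)
    have lh: "B.lo (-z) \<le> B.hi (-z)" using B.lo_le_hi[OF zD(1)] .
    have "c / (t - t2) \<le> z / (t - B.lo (-z))"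
      using a b lh t1t z cx by (intro frac_le) auto
    moreover have "z / (t - B.hi (-z)) \<le> x / (t - t1)"
      using a b lh t1t z cx by (intro frac_le) auto
    ultimately show "c / (t - t2) \<le> Vv z \<and> Vv z \<le> x / (t - t1)"
      using Ub_bounds[OF zD(2)] v by auto
  next
    show "c / (t - t2) * measure R.mu {c<..<x} \<le> QL x - Q c"
      unfolding m q using t1t t21 by (intro divt3 mo(1)) auto
    show "QL x - Q c \<le> x / (t - t1) * measure R.mu {c<..<x}"
      unfolding m q using t1t by (intro divt4 mo(2)) auto
  qed
  then show ?thesis using m FF by (simp add: t1_def t2_def)
qed

lemma pRB: assumes xe: "0 < x" "x < e" "e < x0"
  shows "\<bar>(LINT z:{x<..e}|R.mu. Vv z) - (Q e - Q x)\<bar> \<le> (e / (t - B.lo (-x)) - x / (t - B.lo (-e))) * (Fr0 e - Fr0 x)"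
proof -
  have cD: "-x \<in> {..0}" "-e \<in> {..0}" using xe by auto
  define t1 where "t1 = B.lo (-x)"
  define t2 where "t2 = B.lo (-e)"
  have t1S: "t1 \<in> B.S (-x)" and t2S: "t2 \<in> B.S (-e)" using B.lo_in[OF cD(1)] B.lo_in[OF cD(2)] by (auto simp: t1_def t2_def)
  have t21: "t2 \<le> t1" using B.lo_mono[OF cD(2) cD(1)] xe by (simp add: t1_def t2_def)
  have t1t: "t1 < t" using B_lt_t[OF xe(1) t1S] .
  have FF: "Fr0 e - Fr0 x = Mb t1 - Mb t2" using xe by (simp add: Fr0_def t1_def t2_def)
  have m: "measure R.mu {x<..e} = Mb t1 - Mb t2" using mu_Ioc[of x e] xe FF by simp
  have q: "Q e - Q x = Pb t1 - Pb t2" using xe by (simp add: Q_def t1_def t2_def)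
  have mo: "x * (Mb t1 - Mb t2) \<le> (t - t2) * (Pb t1 - Pb t2)" "(t - t1) * (Pb t1 - Pb t2) \<le> e * (Mb t1 - Mb t2)"
    using momB[of x e t1 t2] xe t1S t2S t21 by auto
  have "\<bar>(LINT z:{x<..e}|R.mu. Vv z) - (Q e - Q x)\<bar> \<le> (e / (t - t1) - x / (t - t2)) * measure R.mu {x<..e}"
  proof (rule R.sandwich)
    show "set_integrable R.mu {x<..e} Vv" using xe by (intro V_int_sub) auto
    show "{x<..e} \<in> sets borel" by simp
    show "emeasure R.mu {x<..e} \<noteq> \<infinity>" by (rule R.fin_Ioc)
    fix z assume z: "z \<in> {x<..e}"
    have zD: "-z \<in> {..0}" "0 < z" "z < x0" using z xe by auto
    have v: "Vv z = Ub z" using vel_bdry[OF zD(2,3)] by (simp add: Vv_def)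
    have a: "t2 \<le> B.lo (-z)" using B.lo_mono[OF cD(2) zD(1)] z by (simp add: t2_def)
    have b: "B.hi (-z) \<le> t1" using B.hi_le_lo[OF zD(1) cD(1)] z by (simp add: t1_def)
    have lh: "B.lo (-z) \<le> B.hi (-z)" using B.lo_le_hi[OF zD(1)] .
    have "x / (t - t2) \<le> z / (t - B.lo (-z))"
      using a b lh t1t t21 z xe by (intro frac_le) auto
    moreover have "z / (t - B.hi (-z)) \<le> e / (t - t1)"
      using a b lh t1t z xe by (intro frac_le) auto
    ultimately show "x / (t - t2) \<le> Vv z \<and> Vv z \<le> e / (t - t1)"
      using Ub_bounds[OF zD(2)] v by auto
  next
    show "x / (t - t2) * measure R.mu {x<..e} \<le> Q e - Q x"
      unfolding m q using t1t t21 by (intro divt3 mo(1)) auto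
    show "Q e - Q x \<le> e / (t - t1) * measure R.mu {x<..e}"
      unfolding m q using t1t by (intro divt4 mo(2)) auto
  qed
  then show ?thesis using m FF by (simp add: t1_def t2_def)
qed

lemma pA: assumes x: "0 < x" shows "Vv x * measure R.mu {x} = Q x - QL x"
proof -
  have xD: "x \<in> {0..}" "-x \<in> {..0}" using x by auto
  have ms: "measure R.mu {x} = Fr0 x - FrL x" using mu_sing[OF x] .
  show ?thesis
  proof (cases "x < x0")
    case True
    have v: "Vv x = Ub x" using vel_bdry[OF x True] by (simp add: Vv_def)
    have lh: "B.lo (-x) \<le> B.hi (-x)" using B.lo_le_hi[OF xD(2)] .
    have e: "Fr0 x - FrL x = Mb (B.hi (-x)) - Mb (B.lo (-x))" "Q x - QL x = Pb (B.hi (-x)) - Pb (B.lo (-x))"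
      using True by (auto simp: Fr0_def FrL_def Q_def QL_def)
    show ?thesis
    proof (cases "B.lo (-x) = B.hi (-x)")
      case True then show ?thesis using ms e by simp
    next
      case False
      then have "Mb (B.lo (-x)) < Mb (B.hi (-x))" using Mb_strict[OF B.lo_nn[OF xD(2)]] lh by simp
      then show ?thesis using ms e v False by (simp add: Ub_def)
    qed
  next
    case False
    show ?thesis
    proof (cases "x = x0")
      case True
      have "Fr0 x - FrL x = M (I.hi x0) + Mb (B.hi (-x0))" "Q x - QL x = P (I.hi x0) + Pb (B.hi (-x0))"
        using True by (auto simp: Fr0_def FrL_def Q_def QL_def)
      then show ?thesis using vel_x0[of] True x ms by (simp add: Vv_def)
    next
      case False2: False
      then have xx: "x0 < x" using False by simp
      have v: "Vv x = U0 x" using vel_init[OF x xx] by (simp add: Vv_def)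
      have lh: "I.lo x \<le> I.hi x" using I.lo_le_hi[OF xD(1)] .
      have e: "Fr0 x - FrL x = M (I.hi x) - M (I.lo x)" "Q x - QL x = P (I.hi x) - P (I.lo x)"
        using xx by (auto simp: Fr0_def FrL_def Q_def QL_def)
      show ?thesis
      proof (cases "I.lo x = I.hi x")
        case True then show ?thesis using ms e by simp
      next
        case False
        then have "M (I.lo x) < M (I.hi x)" using M_strict[OF I.lo_nn[OF xD(1)]] lh by simp
        then show ?thesis using ms e v False by (simp add: U0_def)
      qed
    qed
  qed
qed

end


lemma wb:
  fixes th T t1 t2 c x :: real
  assumes th: "0 < th" and t21: "t2 \<le> t1" and t1: "t1 \<le> T - th" and c: "0 \<le> c" "c \<le> x"
  shows "x / (T - t1) - c / (T - t2) \<le> (x - c) / th + x * (t1 - t2) / th\<^sup>2"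
proof -
  define A where "A = T - t1"
  define B where "B = T - t2"
  have A: "th \<le> A" "0 < A" using t1 th by (auto simp: A_def)
  have B: "A \<le> B" "0 < B" using t21 A by (auto simp: A_def B_def)
  have BA: "B - A = t1 - t2" by (simp add: A_def B_def)
  have eq: "x / A - c / B = (x - c) / A + c * (B - A) / (A * B)"
    using A B by (simp add: field_simps)
  have e1: "(x - c) / A \<le> (x - c) / th" using A th c by (intro divide_left_mono) auto
  have e2: "c * (B - A) / (A * B) \<le> x * (B - A) / th\<^sup>2"
  proof (rule frac_le)
    show "0 \<le> x * (B - A)" using c B by auto
    show "c * (B - A) \<le> x * (B - A)" using c B by (intro mult_right_mono) auto
    show "0 < th\<^sup>2" using th by simp
    show "th\<^sup>2 \<le> A * B" unfolding power2_eq_square using A B th by (intro mult_mono) auto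
  qed
  have "x / A - c / B \<le> (x - c) / th + x * (B - A) / th\<^sup>2" using eq e1 e2 by linarith
  then show ?thesis unfolding A_def B_def by simp
qed

context setting begin

definition "phi a z = (LINT w:{a<..z}|R.mu. Vv w) - Q z"

lemma int_split: assumes "0 \<le> a" "a \<le> c" "c \<le> e"
  shows "(LINT w:{a<..e}|R.mu. Vv w) = (LINT w:{a<..c}|R.mu. Vv w) + (LINT w:{c<..e}|R.mu. Vv w)"
proof -
  have "{a<..e} = {a<..c} \<union> {c<..e}" using assms by auto
  moreover have "(LINT w:{a<..c} \<union> {c<..e}|R.mu. Vv w) = (LINT w:{a<..c}|R.mu. Vv w) + (LINT w:{c<..e}|R.mu. Vv w)"
    by (rule set_integral_Un) (use assms in \<open>auto intro!: V_int_sub\<close>)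
  ultimately show ?thesis by simp
qed

lemma loc:
  assumes a: "0 < a" and x: "x \<in> {a..b}" and eps: "0 < eps"
  shows "\<exists>d>0. \<forall>c e. c \<le> x \<and> x \<le> e \<and> x - d < c \<and> e < x + d \<and> a \<le> c \<and> e \<le> b
       \<longrightarrow> \<bar>phi a e - phi a c\<bar> \<le> eps * (Fr e - Fr c)"
proof -
  have xa: "a \<le> x" "x \<le> b" "0 < x" using x a by auto
  have aD: "-a \<in> {..0}" using a by simp
  define th where "th = t - B.lo (-a)"
  have th: "0 < th" using B_lt_t[OF a B.lo_in[OF aD]] by (simp add: th_def)
  define K where "K = 1 / t + 1 / th + b / th\<^sup>2"
  have Kp: "0 < K" using tp th xa by (simp add: K_def add_pos_nonneg)
  define eta where "eta = eps / (2 * K)"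
  have eta: "0 < eta" using eps Kp by (simp add: eta_def)
  have xD: "x \<in> {0..}" "-x \<in> {..0}" using xa by auto
  obtain d1 where d1: "d1 > 0" "\<forall>x1\<in>{0..}. x - d1 < x1 \<and> x1 < x \<longrightarrow> I.lo x - eta < I.lo x1"
    using I.left_lim[OF xD(1) eta] by blast
  obtain d2 where d2: "d2 > 0" "\<forall>x2\<in>{0..}. x < x2 \<and> x2 < x + d2 \<longrightarrow> I.hi x2 < I.hi x + eta"
    using I.right_lim[OF xD(1) eta] by blast
  obtain d3 where d3: "d3 > 0" "\<forall>x2\<in>{..0}. -x < x2 \<and> x2 < -x + d3 \<longrightarrow> B.hi x2 < B.hi (-x) + eta"
    using B.right_lim[OF xD(2) eta] by blast
  obtain d4 where d4: "d4 > 0" "\<forall>x1\<in>{..0}. -x - d4 < x1 \<and> x1 < -x \<longrightarrow> B.lo (-x) - eta < B.lo x1"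
    using B.left_lim[OF xD(2) eta] by blast
  define d0 where "d0 = min (min d1 d2) (min d3 (min d4 eta))"
  have d0: "0 < d0" "d0 \<le> d1" "d0 \<le> d2" "d0 \<le> d3" "d0 \<le> d4" "d0 \<le> eta"
    using d1 d2 d3 d4 eta unfolding d0_def by auto
  define dd where "dd = (if x0 < x then min d0 (x - x0) else if x < x0 then min d0 (x0 - x) else d0)"
  have dd: "0 < dd" "dd \<le> d0" "x0 < x \<Longrightarrow> dd \<le> x - x0" "x < x0 \<Longrightarrow> dd \<le> x0 - x"
    using d0 unfolding dd_def by auto
  have Kt: "1 / t \<le> K" and Kb: "1 / th + b / th\<^sup>2 \<le> K"
    using tp th xa by (auto simp: K_def)
  show ?thesis
  proof (intro exI[of _ dd] conjI allI impI)
    show "0 < dd" by fact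
    fix c e assume ce: "c \<le> x \<and> x \<le> e \<and> x - dd < c \<and> e < x + dd \<and> a \<le> c \<and> e \<le> b"
    then have ce': "c \<le> x" "x \<le> e" "x - dd < c" "e < x + dd" "a \<le> c" "e \<le> b" by auto
    have c0: "0 < c" using ce' a by simp
    have phid: "phi a e - phi a c = (LINT w:{c<..e}|R.mu. Vv w) - (Q e - Q c)"
      using int_split[of a c e] a ce' by (simp add: phi_def)
    have Frd: "Fr e - Fr c = Fr0 e - Fr0 c" using c0 ce' by (simp add: Fr_eq)
    have right: "\<bar>(LINT w:{x<..e}|R.mu. Vv w) - (Q e - Q x)\<bar> \<le> eps * (Fr0 e - Fr0 x)"
    proof (cases "x = e")
      case True then show ?thesis by (simp add: set_lebesgue_integral_def)
    next
      case False
      then have xe: "x < e" using ce' by simp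
      have eD: "e \<in> {0..}" "-e \<in> {..0}" using xe xa by auto
      have mnn: "0 \<le> Fr0 e - Fr0 x" using Fr0_mono[of x e] xe xa by simp
      show ?thesis
      proof (cases "x0 \<le> x")
        case True
        have g: "I.hi e - I.hi x < eta" using d2(2) eD ce' xe d0 dd by auto
        have w: "e - x < eta" using ce' d0 dd by linarith
        have "(e - x) + (I.hi e - I.hi x) \<le> 2 * eta" using g w by linarith
        then have "((e - x) + (I.hi e - I.hi x)) / t \<le> (2 * eta) / t" using tp by (intro divide_right_mono) auto
        then have "((e - x) + (I.hi e - I.hi x)) / t \<le> (2 * eta) * (1 / t)" by simp
        also have "\<dots> \<le> (2 * eta) * K" using Kt eta by (intro mult_left_mono) auto
        also have "\<dots> = eps" using Kp by (simp add: eta_def)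
        finally have W: "((e - x) + (I.hi e - I.hi x)) / t \<le> eps" .
        show ?thesis using pRI[OF True xa(3) xe] mult_right_mono[OF W mnn] by linarith
      next
        case False
        then have xx0: "x < x0" by simp
        have ex0: "e < x0" using ce' dd(4)[OF xx0] by linarith
        have t1: "B.lo (-x) \<le> t - th"
          using B.lo_mono[of "-x" "-a"] xa a by (simp add: th_def)
        have t21: "B.lo (-e) \<le> B.lo (-x)" using B.lo_mono[OF eD(2) xD(2)] xe by simp
        have g: "B.lo (-x) - B.lo (-e) < eta"
        proof -
          have "-x - d4 < -e \<and> -e < -x" using ce' xe d0 dd by linarith
          then show ?thesis using d4(2) eD by auto
        qed
        have w: "e - x < eta" using ce' d0 dd by linarith
        have "e / (t - B.lo (-x)) - x / (t - B.lo (-e)) \<le> (e - x) / th + e * (B.lo (-x) - B.lo (-e)) / th\<^sup>2"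
          using wb[OF th t21 t1, of x e] xa xe by simp
        also have "\<dots> \<le> eta / th + b * eta / th\<^sup>2"
        proof (intro add_mono divide_right_mono)
          show "e - x \<le> eta" using w by simp
          show "e * (B.lo (-x) - B.lo (-e)) \<le> b * eta"
            using g t21 ce' xa xe by (intro mult_mono) auto
        qed (use th in auto)
        also have "\<dots> = eta * (1 / th + b / th\<^sup>2)" by (simp add: field_simps)
        also have "\<dots> \<le> eta * K" using Kb eta by (intro mult_left_mono) auto
        also have "\<dots> \<le> eps" using Kp eps by (simp add: eta_def field_simps)
        finally have W: "e / (t - B.lo (-x)) - x / (t - B.lo (-e)) \<le> eps" .
        show ?thesis using pRB[OF xa(3) xe ex0] mult_right_mono[OF W mnn] by linarith
      qed
    qed
    show "\<bar>phi a e - phi a c\<bar> \<le> eps * (Fr e - Fr c)"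
    proof (cases "c = x")
      case True
      then show ?thesis using right phid Frd by simp
    next
      case False
      then have cx: "c < x" using ce' by simp
      have cD: "c \<in> {0..}" "-c \<in> {..0}" using c0 by auto
      have mnn: "0 \<le> FrL x - Fr0 c" using mu_Ioo[of c x] c0 cx measure_nonneg[of R.mu "{c<..<x}"] by simp
      have left: "\<bar>(LINT w:{c<..<x}|R.mu. Vv w) - (QL x - Q c)\<bar> \<le> eps * (FrL x - Fr0 c)"
      proof (cases "x0 < x")
        case True
        have cx0: "x0 < c" using ce' dd(3)[OF True] by linarith
        have g: "I.lo x - I.hi c < eta"
        proof -
          have "x - d1 < c \<and> c < x" using ce' cx d0 dd by linarith
          then have "I.lo x - eta < I.lo c" using d1(2) cD by auto
          then show ?thesis using I.lo_le_hi[OF cD(1)] by linarith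
        qed
        have w: "x - c < eta" using ce' d0 dd by linarith
        have "(x - c) + (I.lo x - I.hi c) \<le> 2 * eta" using g w by linarith
        then have "((x - c) + (I.lo x - I.hi c)) / t \<le> (2 * eta) / t" using tp by (intro divide_right_mono) auto
        then have "((x - c) + (I.lo x - I.hi c)) / t \<le> (2 * eta) * (1 / t)" by simp
        also have "\<dots> \<le> (2 * eta) * K" using Kt eta by (intro mult_left_mono) auto
        also have "\<dots> = eps" using Kp by (simp add: eta_def)
        finally have W: "((x - c) + (I.lo x - I.hi c)) / t \<le> eps" .
        show ?thesis using pLI[OF cx0 cx] mult_right_mono[OF W mnn] by linarith
      next
        case False
        then have xx0: "x \<le> x0" by simp
        have t1: "B.lo (-c) \<le> t - th"
          using B.lo_mono[of "-c" "-a"] ce' a by (simp add: th_def)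
        have t21: "B.hi (-x) \<le> B.lo (-c)" using B.hi_le_lo[OF xD(2) cD(2)] cx by simp
        have g: "B.lo (-c) - B.hi (-x) < eta"
        proof -
          have "-x < -c \<and> -c < -x + d3" using ce' cx d0 dd by linarith
          then have "B.hi (-c) < B.hi (-x) + eta" using d3(2) cD by auto
          then show ?thesis using B.lo_le_hi[OF cD(2)] by linarith
        qed
        have w: "x - c < eta" using ce' d0 dd by linarith
        have "x / (t - B.lo (-c)) - c / (t - B.hi (-x)) \<le> (x - c) / th + x * (B.lo (-c) - B.hi (-x)) / th\<^sup>2"
          using wb[OF th t21 t1, of c x] c0 cx by simp
        also have "\<dots> \<le> eta / th + b * eta / th\<^sup>2"
        proof (intro add_mono divide_right_mono)
          show "x - c \<le> eta" using w by simp
          show "x * (B.lo (-c) - B.hi (-x)) \<le> b * eta"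
            using g t21 xa by (intro mult_mono) auto
        qed (use th in auto)
        also have "\<dots> = eta * (1 / th + b / th\<^sup>2)" by (simp add: field_simps)
        also have "\<dots> \<le> eta * K" using Kb eta by (intro mult_left_mono) auto
        also have "\<dots> \<le> eps" using Kp eps by (simp add: eta_def field_simps)
        finally have W: "x / (t - B.lo (-c)) - c / (t - B.hi (-x)) \<le> eps" .
        show ?thesis using pLB[OF c0 cx xx0] mult_right_mono[OF W mnn] by linarith
      qed
      have atom: "(LINT w:{x}|R.mu. Vv w) = Q x - QL x"
        using set_integral_at_point[of R.mu x Vv] V_int_sub[of "{x}"] xa pA[OF xa(3)]
          R.fin_sub[of "{x}" "x - 1" x] by (simp add: mult.commute)
      have anni: "0 \<le> Fr0 x - FrL x" using mu_sing[OF xa(3)] measure_nonneg[of R.mu "{x}"] by simp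
      have split: "(LINT w:{c<..e}|R.mu. Vv w) = (LINT w:{c<..<x}|R.mu. Vv w) + ((LINT w:{x}|R.mu. Vv w) + (LINT w:{x<..e}|R.mu. Vv w))"
      proof -
        have "{c<..e} = {c<..<x} \<union> ({x} \<union> {x<..e})" using cx ce' by auto
        moreover have "(LINT w:{x} \<union> {x<..e}|R.mu. Vv w) = (LINT w:{x}|R.mu. Vv w) + (LINT w:{x<..e}|R.mu. Vv w)"
          by (rule set_integral_Un) (use xa in \<open>auto intro!: V_int_sub\<close>)
        moreover have "(LINT w:{c<..<x} \<union> ({x} \<union> {x<..e})|R.mu. Vv w) = (LINT w:{c<..<x}|R.mu. Vv w) + (LINT w:{x} \<union> {x<..e}|R.mu. Vv w)"
          by (rule set_integral_Un) (use c0 xa in \<open>auto intro!: V_int_sub\<close>)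
        ultimately show ?thesis by simp
      qed
      have "\<bar>(LINT w:{c<..e}|R.mu. Vv w) - (Q e - Q c)\<bar>
          \<le> \<bar>(LINT w:{c<..<x}|R.mu. Vv w) - (QL x - Q c)\<bar> + \<bar>(LINT w:{x<..e}|R.mu. Vv w) - (Q e - Q x)\<bar>"
        unfolding split atom by linarith
      also have "\<dots> \<le> eps * (FrL x - Fr0 c) + eps * (Fr0 e - Fr0 x)" using left right by linarith
      also have "\<dots> \<le> eps * (Fr0 e - Fr0 c)"
        using anni eps by (simp add: algebra_simps mult_left_mono)
      finally show ?thesis using phid Frd by simp
    qed
  qed
qed

lemma int_ab: assumes "0 < a" "a \<le> b" shows "(LINT w:{a<..b}|R.mu. Vv w) = Q b - Q a"
proof -
  have "\<bar>phi a b - phi a a\<bar> \<le> eps * (Fr b - Fr a)" if "0 < eps" for eps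
    by (rule cousin[OF assms(2)]) (rule loc[OF assms(1) _ that])
  moreover have "0 \<le> Fr b - Fr a" using Fr_mono[OF assms(2)] by simp
  ultimately have "\<bar>phi a b - phi a a\<bar> \<le> 0"
  proof -
    assume h: "\<And>eps. 0 < eps \<Longrightarrow> \<bar>phi a b - phi a a\<bar> \<le> eps * (Fr b - Fr a)" and F: "0 \<le> Fr b - Fr a"
    show ?thesis
    proof (rule field_le_epsilon)
      fix k :: real assume k: "0 < k"
      have "\<bar>phi a b - phi a a\<bar> \<le> (k / (Fr b - Fr a + 1)) * (Fr b - Fr a)" using h[of "k / (Fr b - Fr a + 1)"] k F by simp
      also have "\<dots> \<le> k" using k F by (simp add: field_simps)
      finally show "\<bar>phi a b - phi a a\<bar> \<le> 0 + k" by simp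
    qed
  qed
  then show ?thesis by (simp add: phi_def set_lebesgue_integral_def)
qed

end


context setting begin

lemma KV_nn: "0 \<le> KV" unfolding KV_def using B0nn Bbp by simp

lemma small_int:
  assumes S: "S \<in> sets borel" "S \<subseteq> {0<..}" "emeasure R.mu S \<noteq> \<infinity>"
  shows "\<bar>LINT w:S|R.mu. Vv w\<bar> \<le> 2 * KV * measure R.mu S"
proof -
  have "\<bar>(LINT w:S|R.mu. Vv w) - 0\<bar> \<le> (KV - (- KV)) * measure R.mu S"
  proof (rule R.sandwich)
    show "set_integrable R.mu S Vv" using S by (intro V_int_sub) auto
    show "S \<in> sets borel" "emeasure R.mu S \<noteq> \<infinity>" using S by auto
    fix z assume "z \<in> S"
    then have "\<bar>Vv z\<bar> \<le> KV" using V_bdd S by auto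
    then show "- KV \<le> Vv z \<and> Vv z \<le> KV" by auto
  next
    show "- KV * measure R.mu S \<le> 0" "0 \<le> KV * measure R.mu S" using KV_nn by auto
  qed
  then show ?thesis by simp
qed

lemma mom_total: "(LINT w:{0<..}|R.mu. Vv w) = Pt - Q 0"
proof -
  have "\<bar>(LINT w:{0<..}|R.mu. Vv w) - (Pt - Q 0)\<bar> \<le> 0"
  proof (rule field_le_epsilon)
    fix k :: real assume k: "0 < k"
    define dl where "dl = k / (4 * (2 * KV + 1))"
    have dl: "0 < dl" using k KV_nn by (simp add: dl_def)
    obtain d where d: "d > 0" "\<forall>z. 0 < z \<and> z < 0 + d \<longrightarrow>
        \<bar>Fr0 z - Fr0 0\<bar> < dl \<and> \<bar>mass u0 ub r0 rb z t - Fr0 0\<bar> < dl \<and> \<bar>Q z - Q 0\<bar> < dl"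
      using rc[of 0 dl] dl by auto
    define a where "a = d / 2"
    have a: "0 < a" "\<bar>Fr0 a - Fr0 0\<bar> < dl" "\<bar>Q a - Q 0\<bar> < dl" using d by (auto simp: a_def)
    obtain N1 where N1: "\<forall>z\<ge>N1. dist (Fr z) Mt < dl"
      using tendstoD[OF Fr_top dl] unfolding eventually_at_top_linorder by blast
    obtain N2 where N2: "\<forall>z\<ge>N2. dist (Q z) Pt < dl"
      using tendstoD[OF Q_top dl] unfolding eventually_at_top_linorder by blast
    define b where "b = max (max N1 N2) a"
    have b: "a \<le> b" "\<bar>Fr0 b - Mt\<bar> < dl" "\<bar>Q b - Pt\<bar> < dl"
      using N1[rule_format, of b] N2[rule_format, of b] a by (auto simp: b_def Fr_eq dist_real_def)
    have m1: "measure R.mu {0<..a} = Fr0 a - Fr0 0" using mu_Ioc[of 0 a] a by simp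
    have m3: "measure R.mu {b<..} = Mt - Fr0 b" using mu_Ioi'[of b] a b by simp
    have sub1: "{0<..a} \<subseteq> {0<..}" by auto
    have i1: "\<bar>LINT w:{0<..a}|R.mu. Vv w\<bar> \<le> 2 * KV * (Fr0 a - Fr0 0)"
      using small_int[OF _ sub1 R.fin_Ioc] m1 by simp
    have i3: "\<bar>LINT w:{b<..}|R.mu. Vv w\<bar> \<le> 2 * KV * (Mt - Fr0 b)"
      using small_int[of "{b<..}"] mu_Ioi_fin m3 a b by auto
    have i2: "(LINT w:{a<..b}|R.mu. Vv w) = Q b - Q a" using int_ab a b by simp
    have split: "(LINT w:{0<..}|R.mu. Vv w) = (LINT w:{0<..a}|R.mu. Vv w) + ((LINT w:{a<..b}|R.mu. Vv w) + (LINT w:{b<..}|R.mu. Vv w))"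
    proof -
      have "{0<..} = {0<..a} \<union> ({a<..b} \<union> {b<..})" using a b by auto
      moreover have "(LINT w:{a<..b} \<union> {b<..}|R.mu. Vv w) = (LINT w:{a<..b}|R.mu. Vv w) + (LINT w:{b<..}|R.mu. Vv w)"
        by (rule set_integral_Un) (use a b in \<open>auto intro!: V_int_sub\<close>)
      moreover have "(LINT w:{0<..a} \<union> ({a<..b} \<union> {b<..})|R.mu. Vv w) = (LINT w:{0<..a}|R.mu. Vv w) + (LINT w:{a<..b} \<union> {b<..}|R.mu. Vv w)"
        by (rule set_integral_Un) (use a b in \<open>auto intro!: V_int_sub\<close>)
      ultimately show ?thesis by simp
    qed
    have F1: "0 \<le> Fr0 a - Fr0 0" using Fr0_mono[of 0 a] a by simp
    have F3: "0 \<le> Mt - Fr0 b" using Fr0_le_Mt[of b] a b by simp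
    have "\<bar>(LINT w:{0<..}|R.mu. Vv w) - (Pt - Q 0)\<bar>
        \<le> \<bar>LINT w:{0<..a}|R.mu. Vv w\<bar> + \<bar>LINT w:{b<..}|R.mu. Vv w\<bar> + \<bar>Q b - Pt\<bar> + \<bar>Q a - Q 0\<bar>"
      unfolding split i2 by linarith
    also have "\<dots> \<le> 2 * KV * dl + 2 * KV * dl + dl + dl"
    proof -
      have "2 * KV * (Fr0 a - Fr0 0) \<le> 2 * KV * dl" using a F1 KV_nn by (intro mult_left_mono) auto
      moreover have "2 * KV * (Mt - Fr0 b) \<le> 2 * KV * dl" using b F3 KV_nn by (intro mult_left_mono) auto
      ultimately show ?thesis using i1 i3 a b by linarith
    qed
    also have "\<dots> = (2 * KV + 1) * (2 * dl)" by (simp add: algebra_simps)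
    also have "\<dots> = k / 2" using KV_nn by (simp add: dl_def field_simps)
    also have "\<dots> \<le> 0 + k" using k by simp
    finally show "\<bar>(LINT w:{0<..}|R.mu. Vv w) - (Pt - Q 0)\<bar> \<le> 0 + k" .
  qed
  then show ?thesis by simp
qed

lemma N_nn: assumes "0 \<le> y" shows "0 \<le> N y"
  unfolding N_def
proof (rule integral_nonneg[OF gd_integrable[OF gd_Ni]])
  fix e assume "e \<in> {0..y}"
  then show "0 \<le> e * r0 e" using r0p[of e] by simp
qed simp

lemma Pb_nn: assumes "0 \<le> y" shows "0 \<le> Pb y"
  unfolding Pb_def
proof (rule integral_nonneg[OF gd_integrable[OF gd_Pbi]])
  fix e assume "e \<in> {0..y}"
  then show "0 \<le> rb e * (ub e)\<^sup>2" using rbp[of e] by simp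
qed simp

lemma main:
  shows "emeasure (rhoLS u0 ub r0 rb t) {0<..} < \<infinity> \<and>
         (measure (rhoLS u0 ub r0 rb t) {0<..} + atom0 u0 ub r0 rb t
           = (LINT x:{0..}|lborel. r0 x) + (LINT \<eta>:{0..t}|lborel. rb \<eta> * ub \<eta>))
       \<and> set_integrable (rhoLS u0 ub r0 rb t) {0<..} (\<lambda>x. vel u0 ub r0 rb x t)
       \<and> (Fm u0 r0 0 t \<ge> Gm ub rb 0 t \<longrightarrow>
         (LINT x:{0<..}|rhoLS u0 ub r0 rb t. vel u0 ub r0 rb x t)
           + vel u0 ub r0 rb 0 t * atom0 u0 ub r0 rb t
         = (LINT x:{0..}|lborel. r0 x * u0 x) + (LINT \<eta>:{0..t}|lborel. rb \<eta> * (ub \<eta>)\<^sup>2))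
       \<and> (Fm u0 r0 0 t < Gm ub rb 0 t \<longrightarrow>
         (LINT x:{0<..}|rhoLS u0 ub r0 rb t. vel u0 ub r0 rb x t)
           + vel u0 ub r0 rb 0 t * atom0 u0 ub r0 rb t
         \<ge> (LINT x:{0..}|lborel. r0 x * u0 x) - (LINT \<eta>:{0..t}|lborel. rb \<eta> * (ub \<eta>)\<^sup>2))"
proof -
  have rho: "rhoLS u0 ub r0 rb t = R.mu" by (rule rhoLS_eq)
  have vfun: "(\<lambda>x. vel u0 ub r0 rb x t) = Vv" by (simp add: Vv_def[abs_def])
  have FG: "Fm u0 r0 0 t - Gm ub rb 0 t = Dg 0" by (simp add: Fm_eq Gm_eq Dg_def)
  have Mbt: "(LINT \<eta>:{0..t}|lborel. rb \<eta> * ub \<eta>) = Mb t" using LI4[of 0 t] tp by (simp add: Mb0)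
  have Pbt: "(LINT \<eta>:{0..t}|lborel. rb \<eta> * (ub \<eta>)\<^sup>2) = Pb t" using LI3[of 0 t] tp by (simp add: Pb0)
  have Fr00: "Fr0 0 = (if 0 < Dg 0 then - Mb t else M (I.hi 0))"
    using x0_pos by (simp add: Fr0_def Blo0)
  have Q00: "Q 0 = (if 0 < Dg 0 then - Pb t else P (I.hi 0))"
    using x0_pos by (simp add: Q_def Blo0)
  have atom: "atom0 u0 ub r0 rb t = (if Dg 0 \<le> 0 then Fr0 0 + Mb t else 0)"
    unfolding atom0_def using FG massR_eq[of 0] mass0 by auto
  have e1: "emeasure R.mu {0<..} < \<infinity>" using mu_Ioi_fin[of 0] by (simp add: top.not_eq_extremum)
  have mes: "measure R.mu {0<..} = Mt - Fr0 0" using mu_Ioi'[of 0] by simp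
  have mass_eq: "measure R.mu {0<..} + atom0 u0 ub r0 rb t = Mt + Mb t"
    unfolding mes atom Fr00 by auto
  have mom: "(LINT x:{0<..}|R.mu. vel u0 ub r0 rb x t) = Pt - Q 0"
    using mom_total by (simp add: Vv_def)
  have c1: "(LINT x:{0<..}|R.mu. vel u0 ub r0 rb x t) + vel u0 ub r0 rb 0 t * atom0 u0 ub r0 rb t = Pt + Pb t"
    if "0 \<le> Dg 0"
  proof (cases "Dg 0 = 0")
    case True
    have "vel u0 ub r0 rb 0 t * atom0 u0 ub r0 rb t = P (I.hi 0) + Pb t"
      using vel0_eq[OF True] True unfolding atom Fr00 by simp
    then show ?thesis unfolding mom Q00 using True by simp
  next
    case False
    then have "0 < Dg 0" using that by simp
    then show ?thesis unfolding mom Q00 atom by simp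
  qed
  have c2: "Pt - Pb t \<le> (LINT x:{0<..}|R.mu. vel u0 ub r0 rb x t) + vel u0 ub r0 rb 0 t * atom0 u0 ub r0 rb t"
    if D: "Dg 0 < 0"
  proof -
    have h0: "I.hi 0 \<in> I.S 0" "0 \<le> I.hi 0" using I.hi_in[of 0] I.lo_nn[of 0] I.lo_le_hi[of 0] by auto
    have "I.Pm 0 = AF (I.hi 0)" using I.S_Pm[of 0 "I.hi 0"] h0 by (simp add: IPhi)
    also have "\<dots> = t * P (I.hi 0) + N (I.hi 0)" using AF_eq h0 by simp
    finally have "I.Pm 0 = t * P (I.hi 0) + N (I.hi 0)" .
    moreover have "B.Pm 0 \<le> 0" using B.Pm_le[of 0 0] by (simp add: B.Phi_def AG0 Mb0)
    ultimately have "t * P (I.hi 0) < 0" using D N_nn[OF h0(2)] by (simp add: Dg_def)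
    then have "P (I.hi 0) < 0" using tp by (simp add: mult_less_0_iff)
    moreover have "0 \<le> Pb t" using Pb_nn tp by simp
    ultimately show ?thesis unfolding mom Q00 using vel0_lt[OF D] D by simp
  qed
  have i: "set_integrable R.mu {0<..} (\<lambda>x. vel u0 ub r0 rb x t)" using V_int by (simp only: vfun)
  have d1: "Fm u0 r0 0 t \<ge> Gm ub rb 0 t \<longleftrightarrow> 0 \<le> Dg 0" using FG by linarith
  have d2: "Fm u0 r0 0 t < Gm ub rb 0 t \<longleftrightarrow> Dg 0 < 0" using FG by linarith
  show ?thesis
    unfolding rho d1 d2 Mbt Pbt Mt_def[symmetric] Pt_def[symmetric]
  proof (intro conjI impI)
    show "emeasure R.mu {0<..} < \<infinity>" by (rule e1)
    show "measure R.mu {0<..} + atom0 u0 ub r0 rb t = Mt + Mb t" by (rule mass_eq)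
    show "set_integrable R.mu {0<..} (\<lambda>x. vel u0 ub r0 rb x t)" by (rule i)
    show "(LINT x:{0<..}|R.mu. vel u0 ub r0 rb x t) + vel u0 ub r0 rb 0 t * atom0 u0 ub r0 rb t = Pt + Pb t"
      if "0 \<le> Dg 0" using c1[OF that] .
    show "Pt - Pb t \<le> (LINT x:{0<..}|R.mu. vel u0 ub r0 rb x t) + vel u0 ub r0 rb 0 t * atom0 u0 ub r0 rb t"
      if "Dg 0 < 0" using c2[OF that] .
  qed
qed

end


theorem theorem4p4:
  fixes u0 ub r0 rb :: "real \<Rightarrow> real" and t :: real
  assumes u0_meas: "set_borel_measurable borel {0..} u0"
    and u0_bdd: "\<exists>B. \<forall>x\<ge>0. \<bar>u0 x\<bar> \<le> B"
    and ub_meas: "set_borel_measurable borel {0..} ub"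
    and ub_bdd: "\<exists>B. \<forall>x\<ge>0. \<bar>ub x\<bar> \<le> B"
    and ub_pos: "\<forall>x\<ge>0. ub x > 0"
    and r0_meas: "set_borel_measurable borel {0..} r0"
    and r0_pos: "\<forall>x\<ge>0. r0 x > 0"
    and r0_locbdd: "\<forall>b. \<exists>B. \<forall>x\<in>{0..b}. \<bar>r0 x\<bar> \<le> B"
    and rb_meas: "set_borel_measurable borel {0..} rb"
    and rb_pos: "\<forall>x\<ge>0. rb x > 0"
    and rb_locbdd: "\<forall>b. \<exists>B. \<forall>x\<in>{0..b}. \<bar>rb x\<bar> \<le> B"
    and r0_L1: "set_integrable lborel {0..} r0"
    and t_pos: "t > 0"
  shows "emeasure (rhoLS u0 ub r0 rb t) {0<..} < \<infinity> \<and>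
         (measure (rhoLS u0 ub r0 rb t) {0<..} + atom0 u0 ub r0 rb t
           = (LINT x:{0..}|lborel. r0 x) + (LINT \<eta>:{0..t}|lborel. rb \<eta> * ub \<eta>))
       \<and> set_integrable (rhoLS u0 ub r0 rb t) {0<..} (\<lambda>x. vel u0 ub r0 rb x t)
       \<and> (Fm u0 r0 0 t \<ge> Gm ub rb 0 t \<longrightarrow>
         (LINT x:{0<..}|rhoLS u0 ub r0 rb t. vel u0 ub r0 rb x t)
           + vel u0 ub r0 rb 0 t * atom0 u0 ub r0 rb t
         = (LINT x:{0..}|lborel. r0 x * u0 x) + (LINT \<eta>:{0..t}|lborel. rb \<eta> * (ub \<eta>)\<^sup>2))
       \<and> (Fm u0 r0 0 t < Gm ub rb 0 t \<longrightarrow>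
         (LINT x:{0<..}|rhoLS u0 ub r0 rb t. vel u0 ub r0 rb x t)
           + vel u0 ub r0 rb 0 t * atom0 u0 ub r0 rb t
         \<ge> (LINT x:{0..}|lborel. r0 x * u0 x) - (LINT \<eta>:{0..t}|lborel. rb \<eta> * (ub \<eta>)\<^sup>2))"
proof -
  obtain B1 where B1: "\<forall>x\<ge>0. \<bar>u0 x\<bar> \<le> B1" using u0_bdd by blast
  obtain B2 where B2: "\<forall>x\<ge>0. \<bar>ub x\<bar> \<le> B2" using ub_bdd by blast
  interpret S: setting u0 ub r0 rb t "max B1 0" "max B2 1"
  proof
    show "set_borel_measurable borel {0..} u0" by (rule u0_meas)
    show "\<bar>u0 x\<bar> \<le> max B1 0" if "0 \<le> x" for x using B1 that by force
    show "set_borel_measurable borel {0..} ub" by (rule ub_meas)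
    show "\<bar>ub x\<bar> \<le> max B2 1" if "0 \<le> x" for x using B2 that by force
    show "0 < ub x" if "0 \<le> x" for x using ub_pos that by blast
    show "set_borel_measurable borel {0..} r0" by (rule r0_meas)
    show "0 < r0 x" if "0 \<le> x" for x using r0_pos that by blast
    show "\<exists>B. \<forall>x\<in>{0..b}. \<bar>r0 x\<bar> \<le> B" for b using r0_locbdd by blast
    show "set_borel_measurable borel {0..} rb" by (rule rb_meas)
    show "0 < rb x" if "0 \<le> x" for x using rb_pos that by blast
    show "\<exists>B. \<forall>x\<in>{0..b}. \<bar>rb x\<bar> \<le> B" for b using rb_locbdd by blast
    show "set_integrable lborel {0..} r0" by (rule r0_L1)
    show "0 < t" by (rule t_pos)
    show "0 \<le> max B1 0" by simp
    show "0 < max B2 1" by simp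
  qed
  show ?thesis by (rule S.main)
qed

end
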